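(* Let $M$ be an $R$-module, $f:R\to T$ a ring morphism, and $N=M\otimes_RT$ regarded as a $T$-module. Then: (1) $\mathcal O_R(M)\subseteq f^{-1}(\mathcal O_T(N))$. (2) If moreover $f$ is injective, then $\mathcal O_R(M)=f^{-1}(\mathcal O_T(N))$ holds if $M$ is flat over $R$, or if the extension $R\subseteq T$ is pure, or if it is finite.
   Context: Rings are commutative and unital. For a ring $A$ and $A$-module $E$, $\mathcal O_A(E)=\{a\in A\mid E_a=0\}$, where $E_a$ is the localization at $\{a^n\mid n\in\mathbb N\}$. A ring extension $R\subseteq T$ is pure if $R\to T$ remains injective after tensoring over $R$ with any $R$-module; it is finite if $T$ is a finitely generated $R$-module. *)

theory Defs
  imports "HOL-Algebra.Algebra"
begin

(* Localization of a module at the powers of a single element, and     *)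
(* the set O_A(E) = {a \<in> A. E_a = 0}.                                *)
(* E_a is the set of fractions x / a^m, i.e. pairs (x,m) modulo        *)
(* (x,m) ~ (y,n)  iff  a^k (a^n x - a^m y) = 0 for some k.             *)

definition loc_rel :: "('r,'c) ring_scheme \<Rightarrow> ('r,'m) module \<Rightarrow> 'r \<Rightarrow> (('m \<times> nat) \<times> ('m \<times> nat)) set" where
  "loc_rel A E a = {((x,m),(y,n)). x \<in> carrier E \<and> y \<in> carrier E \<and>
     (\<exists>k::nat. (a [^]\<^bsub>A\<^esub> k) \<odot>\<^bsub>E\<^esub>
         (((a [^]\<^bsub>A\<^esub> n) \<odot>\<^bsub>E\<^esub> x) \<ominus>\<^bsub>E\<^esub> ((a [^]\<^bsub>A\<^esub> m) \<odot>\<^bsub>E\<^esub> y)) = \<zero>\<^bsub>E\<^esub>)}"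

definition loc_carrier :: "('r,'c) ring_scheme \<Rightarrow> ('r,'m) module \<Rightarrow> 'r \<Rightarrow> ('m \<times> nat) set set" where
  "loc_carrier A E a = (carrier E \<times> (UNIV :: nat set)) // loc_rel A E a"

definition loc_zero :: "('r,'c) ring_scheme \<Rightarrow> ('r,'m) module \<Rightarrow> 'r \<Rightarrow> ('m \<times> nat) set" where
  "loc_zero A E a = loc_rel A E a `` {(\<zero>\<^bsub>E\<^esub>, 0)}"

definition Ann_loc :: "('r,'c) ring_scheme \<Rightarrow> ('r,'m) module \<Rightarrow> 'r set" where
  "Ann_loc A E = {a \<in> carrier A. loc_carrier A E a = {loc_zero A E a}}"

(* Tensor products of R-modules, constructed as the free abelian group *)
(* on carrier A \<times> carrier B modulo the bilinearity relations.         *)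

definition fsupp_on :: "'x set \<Rightarrow> ('x \<Rightarrow> int) set" where
  "fsupp_on S = {g. finite {x. g x \<noteq> 0} \<and> {x. g x \<noteq> 0} \<subseteq> S}"

definition delta :: "'x \<Rightarrow> 'x \<Rightarrow> int" where
  "delta x = (\<lambda>y. if y = x then 1 else 0)"

definition push :: "('x \<Rightarrow> 'y) \<Rightarrow> ('x \<Rightarrow> int) \<Rightarrow> 'y \<Rightarrow> int" where
  "push \<phi> g = (\<lambda>y. \<Sum>x\<in>{x. g x \<noteq> 0 \<and> \<phi> x = y}. g x)"

definition tensor_gens :: "('r,'c) ring_scheme \<Rightarrow> ('r,'a) module \<Rightarrow> ('r,'b) module \<Rightarrow> ('a \<times> 'b \<Rightarrow> int) set" where
  "tensor_gens R A B =
     {(\<lambda>z. delta (a \<oplus>\<^bsub>A\<^esub> a', b) z - delta (a, b) z - delta (a', b) z) | a a' b.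
        a \<in> carrier A \<and> a' \<in> carrier A \<and> b \<in> carrier B}
   \<union> {(\<lambda>z. delta (a, b \<oplus>\<^bsub>B\<^esub> b') z - delta (a, b) z - delta (a, b') z) | a b b'.
        a \<in> carrier A \<and> b \<in> carrier B \<and> b' \<in> carrier B}
   \<union> {(\<lambda>z. delta (r \<odot>\<^bsub>A\<^esub> a, b) z - delta (a, r \<odot>\<^bsub>B\<^esub> b) z) | r a b.
        r \<in> carrier R \<and> a \<in> carrier A \<and> b \<in> carrier B}"

inductive_set zspan :: "('x \<Rightarrow> int) set \<Rightarrow> ('x \<Rightarrow> int) set" for S where
  zspan_zero: "(\<lambda>_. 0) \<in> zspan S"
| zspan_add: "g \<in> S \<Longrightarrow> h \<in> zspan S \<Longrightarrow> (\<lambda>x. h x + g x) \<in> zspan S"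
| zspan_diff: "g \<in> S \<Longrightarrow> h \<in> zspan S \<Longrightarrow> (\<lambda>x. h x - g x) \<in> zspan S"

definition tensor_rel :: "('r,'c) ring_scheme \<Rightarrow> ('r,'a) module \<Rightarrow> ('r,'b) module \<Rightarrow> (('a \<times> 'b \<Rightarrow> int) \<times> ('a \<times> 'b \<Rightarrow> int)) set" where
  "tensor_rel R A B = {(g,h). g \<in> fsupp_on (carrier A \<times> carrier B) \<and> h \<in> fsupp_on (carrier A \<times> carrier B)
      \<and> (\<lambda>z. g z - h z) \<in> zspan (tensor_gens R A B)}"

definition tensor_class :: "('r,'c) ring_scheme \<Rightarrow> ('r,'a) module \<Rightarrow> ('r,'b) module \<Rightarrow> ('a \<times> 'b \<Rightarrow> int) \<Rightarrow> ('a \<times> 'b \<Rightarrow> int) set" where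
  "tensor_class R A B g = tensor_rel R A B `` {g}"

definition pick_rep :: "'x set \<Rightarrow> 'x" where
  "pick_rep U = (Eps (\<lambda>g. g \<in> U))"

definition tensor :: "('r,'c) ring_scheme \<Rightarrow> ('r,'a) module \<Rightarrow> ('r,'b) module \<Rightarrow> ('r, ('a \<times> 'b \<Rightarrow> int) set) module" where
  "tensor R A B =
    \<lparr> carrier = fsupp_on (carrier A \<times> carrier B) // tensor_rel R A B,
      monoid.mult = undefined, monoid.one = undefined,
      ring.zero = tensor_class R A B (\<lambda>_. 0),
      ring.add = (\<lambda>U V. tensor_class R A B (\<lambda>z. pick_rep U z + pick_rep V z)),
      module.smult = (\<lambda>r U. tensor_class R A B (push (\<lambda>(a,b). (r \<odot>\<^bsub>A\<^esub> a, b)) (pick_rep U))) \<rparr>"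

definition tensor_map :: "('r,'c) ring_scheme \<Rightarrow> ('r,'a2) module \<Rightarrow> ('r,'b2) module
     \<Rightarrow> ('a \<Rightarrow> 'a2) \<Rightarrow> ('b \<Rightarrow> 'b2) \<Rightarrow> ('a \<times> 'b \<Rightarrow> int) set \<Rightarrow> ('a2 \<times> 'b2 \<Rightarrow> int) set" where
  "tensor_map R A' B' u v U = tensor_class R A' B' (push (\<lambda>(a,b). (u a, v b)) (pick_rep U))"

definition linear_map :: "('r,'c) ring_scheme \<Rightarrow> ('r,'a) module \<Rightarrow> ('r,'b) module \<Rightarrow> ('a \<Rightarrow> 'b) \<Rightarrow> bool" where
  "linear_map R P Q u \<longleftrightarrow> (\<forall>x\<in>carrier P. u x \<in> carrier Q)
     \<and> (\<forall>x\<in>carrier P. \<forall>y\<in>carrier P. u (x \<oplus>\<^bsub>P\<^esub> y) = u x \<oplus>\<^bsub>Q\<^esub> u y)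
     \<and> (\<forall>r\<in>carrier R. \<forall>x\<in>carrier P. u (r \<odot>\<^bsub>P\<^esub> x) = r \<odot>\<^bsub>Q\<^esub> u x)"

definition self_module :: "('r,'c) ring_scheme \<Rightarrow> ('r,'r) module" where
  "self_module R = \<lparr> carrier = carrier R, monoid.mult = (\<otimes>\<^bsub>R\<^esub>), monoid.one = \<one>\<^bsub>R\<^esub>,
      ring.zero = \<zero>\<^bsub>R\<^esub>, ring.add = (\<oplus>\<^bsub>R\<^esub>), module.smult = (\<otimes>\<^bsub>R\<^esub>) \<rparr>"

definition restrict_scalars :: "('r \<Rightarrow> 't) \<Rightarrow> ('t,'d) ring_scheme \<Rightarrow> ('r,'t) module" where
  "restrict_scalars f T = \<lparr> carrier = carrier T, monoid.mult = (\<otimes>\<^bsub>T\<^esub>), monoid.one = \<one>\<^bsub>T\<^esub>, ring.zero = \<zero>\<^bsub>T\<^esub>,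
      ring.add = (\<oplus>\<^bsub>T\<^esub>), module.smult = (\<lambda>r t. f r \<otimes>\<^bsub>T\<^esub> t) \<rparr>"

definition base_change :: "('r,'c) ring_scheme \<Rightarrow> ('t,'d) ring_scheme \<Rightarrow> ('r \<Rightarrow> 't)
     \<Rightarrow> ('r,'m) module \<Rightarrow> ('t, ('m \<times> 't \<Rightarrow> int) set) module" where
  "base_change R T f M =
    (let P = tensor R M (restrict_scalars f T) in
     \<lparr> carrier = carrier P, monoid.mult = undefined, monoid.one = undefined, ring.zero = \<zero>\<^bsub>P\<^esub>, ring.add = (\<oplus>\<^bsub>P\<^esub>),
       module.smult = (\<lambda>s U. tensor_class R M (restrict_scalars f T)
                  (push (\<lambda>(m,t). (m, s \<otimes>\<^bsub>T\<^esub> t)) (pick_rep U))) \<rparr>)"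

(* The test modules range over modules whose carriers live in the type 'p. *)
definition flat :: "'p itself \<Rightarrow> ('r,'c) ring_scheme \<Rightarrow> ('r,'m) module \<Rightarrow> bool" where
  "flat _ R M \<longleftrightarrow> (\<forall>(P::('r,'p) module) (Q::('r,'p) module) u.
      module R P \<and> module R Q \<and> linear_map R P Q u \<and> inj_on u (carrier P) \<longrightarrow>
      inj_on (tensor_map R Q M u id) (carrier (tensor R P M)))"

(* Purity of R \<rightarrow> T: for every R-module P, id_P \<otimes> f : P \<otimes> R \<rightarrow> P \<otimes> T is
   injective. Test modules range over modules with carriers in type 'p. *)
definition pure_ext :: "'p itself \<Rightarrow> ('r,'c) ring_scheme \<Rightarrow> ('t,'d) ring_scheme \<Rightarrow> ('r \<Rightarrow> 't) \<Rightarrow> bool" where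
  "pure_ext _ R T f \<longleftrightarrow> (\<forall>P::('r,'p) module. module R P \<longrightarrow>
      inj_on (tensor_map R P (restrict_scalars f T) id f) (carrier (tensor R P (self_module R))))"

definition finite_ext :: "('r,'c) ring_scheme \<Rightarrow> ('t,'d) ring_scheme \<Rightarrow> ('r \<Rightarrow> 't) \<Rightarrow> bool" where
  "finite_ext R T f \<longleftrightarrow> (\<exists>S. finite S \<and> S \<subseteq> carrier T \<and>
      (\<forall>t\<in>carrier T. \<exists>c. c \<in> S \<rightarrow> carrier R \<and>
          t = (\<Oplus>\<^bsub>T\<^esub> s\<in>S. f (c s) \<otimes>\<^bsub>T\<^esub> s)))"

end

theory Submission
  imports Defs
begin


lemma fsupp_onI: "finite {x. g x \<noteq> 0} \<Longrightarrow> {x. g x \<noteq> 0} \<subseteq> S \<Longrightarrow> g \<in> fsupp_on S"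
  by (simp add: fsupp_on_def)

lemma fsupp_on_fin: "g \<in> fsupp_on S \<Longrightarrow> finite {x. g x \<noteq> 0}"
  by (simp add: fsupp_on_def)

lemma fsupp_on_sub: "g \<in> fsupp_on S \<Longrightarrow> g x \<noteq> 0 \<Longrightarrow> x \<in> S"
  by (auto simp add: fsupp_on_def)

lemma fsupp_zero[simp]: "(\<lambda>_. 0) \<in> fsupp_on S"
  by (simp add: fsupp_on_def)

lemma fsupp_add: "g \<in> fsupp_on S \<Longrightarrow> h \<in> fsupp_on S \<Longrightarrow> (\<lambda>x. g x + h x) \<in> fsupp_on S"
proof -
  assume a: "g \<in> fsupp_on S" "h \<in> fsupp_on S"
  have s: "{x. g x + h x \<noteq> 0} \<subseteq> {x. g x \<noteq> 0} \<union> {x. h x \<noteq> 0}" by auto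
  have f: "finite {x. g x \<noteq> 0} \<and> {x. g x \<noteq> 0} \<subseteq> S" "finite {x. h x \<noteq> 0} \<and> {x. h x \<noteq> 0} \<subseteq> S"
    using a by (simp_all add: fsupp_on_def)
  have "finite ({x. g x \<noteq> 0} \<union> {x. h x \<noteq> 0})" using f by simp
  note fin = finite_subset[OF s this]
  have "{x. g x \<noteq> 0} \<union> {x. h x \<noteq> 0} \<subseteq> S" using f by simp
  note sub = order_trans[OF s this]
  show ?thesis unfolding fsupp_on_def mem_Collect_eq using fin sub by simp
qed

lemma fsupp_diff: "g \<in> fsupp_on S \<Longrightarrow> h \<in> fsupp_on S \<Longrightarrow> (\<lambda>x. g x - h x) \<in> fsupp_on S"
proof -
  assume a: "g \<in> fsupp_on S" "h \<in> fsupp_on S"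
  have s: "{x. g x - h x \<noteq> 0} \<subseteq> {x. g x \<noteq> 0} \<union> {x. h x \<noteq> 0}" by auto
  have f: "finite {x. g x \<noteq> 0} \<and> {x. g x \<noteq> 0} \<subseteq> S" "finite {x. h x \<noteq> 0} \<and> {x. h x \<noteq> 0} \<subseteq> S"
    using a by (simp_all add: fsupp_on_def)
  have "finite ({x. g x \<noteq> 0} \<union> {x. h x \<noteq> 0})" using f by simp
  note fin = finite_subset[OF s this]
  have "{x. g x \<noteq> 0} \<union> {x. h x \<noteq> 0} \<subseteq> S" using f by simp
  note sub = order_trans[OF s this]
  show ?thesis unfolding fsupp_on_def mem_Collect_eq using fin sub by simp
qed

lemma fsupp_neg: "g \<in> fsupp_on S \<Longrightarrow> (\<lambda>x. - g x) \<in> fsupp_on S"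
  unfolding fsupp_on_def by auto

lemma fsupp_smul: "g \<in> fsupp_on S \<Longrightarrow> (\<lambda>x. c * g x) \<in> fsupp_on S"
proof -
  assume a: "g \<in> fsupp_on S"
  have s: "{x. c * g x \<noteq> 0} \<subseteq> {x. g x \<noteq> 0}" by auto
  have f: "finite {x. g x \<noteq> 0} \<and> {x. g x \<noteq> 0} \<subseteq> S"
    using a by (simp_all add: fsupp_on_def)
  note fin = finite_subset[OF s conjunct1[OF f]]
  note sub = order_trans[OF s conjunct2[OF f]]
  show ?thesis unfolding fsupp_on_def mem_Collect_eq using fin sub by simp
qed

lemma fsupp_delta: "x \<in> S \<Longrightarrow> delta x \<in> fsupp_on S"
  unfolding fsupp_on_def delta_def by auto

lemma zspan_gen: "g \<in> S \<Longrightarrow> g \<in> zspan S"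
  using zspan_add[OF _ zspan_zero, of g S] by simp

lemma zspan_plus: "h \<in> zspan S \<Longrightarrow> g \<in> zspan S \<Longrightarrow> (\<lambda>x. g x + h x) \<in> zspan S"
proof (induction h rule: zspan.induct)
  case zspan_zero then show ?case by (simp add: zspan.zspan_zero)
next
  case (zspan_add s h)
  have "(\<lambda>x. (g x + h x) + s x) \<in> zspan S" using zspan.zspan_add[OF zspan_add(1) zspan_add(3)[OF zspan_add(4)]] .
  then show ?case by (simp add: add.assoc)
next
  case (zspan_diff s h)
  have "(\<lambda>x. (g x + h x) - s x) \<in> zspan S" using zspan.zspan_diff[OF zspan_diff(1) zspan_diff(3)[OF zspan_diff(4)]] .
  then show ?case by (simp add: algebra_simps)
qed

lemma zspan_uminus: "h \<in> zspan S \<Longrightarrow> (\<lambda>x. - h x) \<in> zspan S"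
proof (induction h rule: zspan.induct)
  case zspan_zero then show ?case by (simp add: zspan.zspan_zero)
next
  case (zspan_add s h)
  have "(\<lambda>x. (- h x) - s x) \<in> zspan S" using zspan.zspan_diff[OF zspan_add(1) zspan_add(3)] .
  then show ?case by (simp add: algebra_simps)
next
  case (zspan_diff s h)
  have "(\<lambda>x. (- h x) + s x) \<in> zspan S" using zspan.zspan_add[OF zspan_diff(1) zspan_diff(3)] .
  then show ?case by (simp add: algebra_simps)
qed

lemma zspan_minus: "g \<in> zspan S \<Longrightarrow> h \<in> zspan S \<Longrightarrow> (\<lambda>x. g x - h x) \<in> zspan S"
  using zspan_plus[OF zspan_uminus[of h S] , of g] by simp

lemma zspan_cong: assumes "g \<in> zspan S" "\<And>x. g x = h x" shows "h \<in> zspan S"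
proof -
  have "g = h" using assms(2) by (simp add: fun_eq_iff)
  then show ?thesis using assms(1) by simp
qed

lemma zspan_smul_nat: "h \<in> zspan S \<Longrightarrow> (\<lambda>x. int n * h x) \<in> zspan S"
proof (induction n)
  case 0 then show ?case using zspan_zero by simp
next
  case (Suc n)
  have "(\<lambda>x. int n * h x + h x) \<in> zspan S" using zspan_plus[OF Suc(2) Suc(1)[OF Suc(2)]] .
  then show ?case by (simp add: algebra_simps)
qed

lemma zspan_smul: "h \<in> zspan S \<Longrightarrow> (\<lambda>x. c * h x) \<in> zspan S"
proof (cases "c \<ge> 0")
  case True
  assume h: "h \<in> zspan S"
  have "(\<lambda>x. int (nat c) * h x) \<in> zspan S" by (rule zspan_smul_nat[OF h])
  then show ?thesis using True by simp
next
  case False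
  assume h: "h \<in> zspan S"
  have "(\<lambda>x. - (int (nat (-c)) * h x)) \<in> zspan S" by (rule zspan_uminus[OF zspan_smul_nat[OF h]])
  then show ?thesis using False by simp
qed

lemma zspan_sum: "finite I \<Longrightarrow> (\<And>i. i \<in> I \<Longrightarrow> h i \<in> zspan S) \<Longrightarrow> (\<lambda>x. \<Sum>i\<in>I. h i x) \<in> zspan S"
proof (induction I rule: finite_induct)
  case empty then show ?case using zspan_zero by simp
next
  case (insert i I)
  have "(\<lambda>x. (\<Sum>i\<in>I. h i x) + h i x) \<in> zspan S"
    using zspan_plus[OF _ insert(3)] insert(4) by auto
  then show ?case using insert(1,2) by (simp add: add.commute)
qed

lemma zspan_fsupp: assumes "S \<subseteq> fsupp_on XX" "g \<in> zspan S" shows "g \<in> fsupp_on XX"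
  using assms(2)
proof (induction g rule: zspan.induct)
  case zspan_zero then show ?case by (simp add: zspan.zspan_zero)
next
  case (zspan_add g h) then show ?case using fsupp_add assms(1) by blast
next
  case (zspan_diff g h) then show ?case using fsupp_diff assms(1) by blast
qed

lemma fsupp_delta_sum: "finite D \<Longrightarrow> {x. g x \<noteq> 0} \<subseteq> D \<Longrightarrow> g y = (\<Sum>x\<in>D. g x * delta x y)"
proof -
  assume D: "finite D" "{x. g x \<noteq> 0} \<subseteq> D"
  show ?thesis
  proof (cases "y \<in> D")
    case True
    have "(\<Sum>x\<in>D. g x * delta x y) = (\<Sum>x\<in>{y}. g x * delta x y)"
      by (rule sum.mono_neutral_right) (auto simp: D True delta_def)
    then show ?thesis by (simp add: delta_def)
  next
    case False
    then have "g y = 0" using D by auto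
    moreover have "(\<Sum>x\<in>D. g x * delta x y) = 0" using False by (auto simp: delta_def intro: sum.neutral)
    ultimately show ?thesis by simp
  qed
qed

lemma push_alt: "finite D \<Longrightarrow> {x. g x \<noteq> 0} \<subseteq> D \<Longrightarrow> push \<phi> g y = (\<Sum>x\<in>{x\<in>D. \<phi> x = y}. g x)"
  unfolding push_def
  by (rule sum.mono_neutral_left) auto

lemma push_delta_sum: "finite D \<Longrightarrow> {x. g x \<noteq> 0} \<subseteq> D \<Longrightarrow> push \<phi> g y = (\<Sum>x\<in>D. g x * delta (\<phi> x) y)"
proof -
  assume D: "finite D" "{x. g x \<noteq> 0} \<subseteq> D"
  have "push \<phi> g y = (\<Sum>x\<in>{x\<in>D. \<phi> x = y}. g x)" by (rule push_alt[OF D])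
  also have "\<dots> = (\<Sum>x\<in>{x\<in>D. \<phi> x = y}. g x * delta (\<phi> x) y)"
    by (rule sum.cong) (auto simp: delta_def)
  also have "\<dots> = (\<Sum>x\<in>D. g x * delta (\<phi> x) y)"
    by (rule sum.mono_neutral_left) (auto simp: D delta_def)
  finally show ?thesis .
qed

lemma push_supp: "{y. push \<phi> g y \<noteq> 0} \<subseteq> \<phi> ` {x. g x \<noteq> 0}"
proof
  fix y assume "y \<in> {y. push \<phi> g y \<noteq> 0}"
  then have "(\<Sum>x\<in>{x. g x \<noteq> 0 \<and> \<phi> x = y}. g x) \<noteq> 0" by (simp add: push_def)
  then obtain x where "x \<in> {x. g x \<noteq> 0 \<and> \<phi> x = y}" by (meson sum.not_neutral_contains_not_neutral)
  then show "y \<in> \<phi> ` {x. g x \<noteq> 0}" by auto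
qed

lemma push_fsupp: "g \<in> fsupp_on XX \<Longrightarrow> (\<And>x. x \<in> XX \<Longrightarrow> \<phi> x \<in> Y) \<Longrightarrow> push \<phi> g \<in> fsupp_on Y"
proof -
  assume g: "g \<in> fsupp_on XX" and phi: "\<And>x. x \<in> XX \<Longrightarrow> \<phi> x \<in> Y"
  have "{y. push \<phi> g y \<noteq> 0} \<subseteq> \<phi> ` {x. g x \<noteq> 0}" by (rule push_supp)
  moreover have "\<phi> ` {x. g x \<noteq> 0} \<subseteq> Y" using g phi by (auto simp: fsupp_on_def)
  ultimately show ?thesis using g by (auto simp: fsupp_on_def intro: finite_subset)
qed

lemma push_add: "finite {x. g x \<noteq> 0} \<Longrightarrow> finite {x. h x \<noteq> 0} \<Longrightarrow>
   push \<phi> (\<lambda>x. g x + h x) y = push \<phi> g y + push \<phi> h y"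
proof -
  assume fg: "finite {x. g x \<noteq> 0}" and fh: "finite {x. h x \<noteq> 0}"
  let ?D = "{x. g x \<noteq> 0} \<union> {x. h x \<noteq> 0}"
  have D: "finite ?D" using fg fh by simp
  have "push \<phi> (\<lambda>x. g x + h x) y = (\<Sum>x\<in>{x\<in>?D. \<phi> x = y}. g x + h x)"
    by (rule push_alt[OF D]) auto
  also have "\<dots> = (\<Sum>x\<in>{x\<in>?D. \<phi> x = y}. g x) + (\<Sum>x\<in>{x\<in>?D. \<phi> x = y}. h x)"
    by (simp add: sum.distrib)
  also have "\<dots> = push \<phi> g y + push \<phi> h y"
    using push_alt[OF D, of g \<phi> y] push_alt[OF D, of h \<phi> y] by auto
  finally show ?thesis .
qed

lemma push_diff: "finite {x. g x \<noteq> 0} \<Longrightarrow> finite {x. h x \<noteq> 0} \<Longrightarrow>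
   push \<phi> (\<lambda>x. g x - h x) y = push \<phi> g y - push \<phi> h y"
proof -
  assume fg: "finite {x. g x \<noteq> 0}" and fh: "finite {x. h x \<noteq> 0}"
  let ?D = "{x. g x \<noteq> 0} \<union> {x. h x \<noteq> 0}"
  have D: "finite ?D" using fg fh by simp
  have "push \<phi> (\<lambda>x. g x - h x) y = (\<Sum>x\<in>{x\<in>?D. \<phi> x = y}. g x - h x)"
    by (rule push_alt[OF D]) auto
  also have "\<dots> = (\<Sum>x\<in>{x\<in>?D. \<phi> x = y}. g x) - (\<Sum>x\<in>{x\<in>?D. \<phi> x = y}. h x)"
    by (simp add: sum_subtractf)
  also have "\<dots> = push \<phi> g y - push \<phi> h y"
    using push_alt[OF D, of g \<phi> y] push_alt[OF D, of h \<phi> y] by auto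
  finally show ?thesis .
qed

lemma push_zero: "push \<phi> (\<lambda>_. 0) = (\<lambda>_. 0)"
  unfolding push_def by auto

lemma push_delta: "push \<phi> (delta x) = delta (\<phi> x)"
proof
  fix y
  have "push \<phi> (delta x) y = (\<Sum>z\<in>{z\<in>{x}. \<phi> z = y}. delta x z)"
    by (rule push_alt) (auto simp: delta_def)
  also have "\<dots> = delta (\<phi> x) y"
  proof (cases "\<phi> x = y")
    case True
    then have "{z\<in>{x}. \<phi> z = y} = {x}" by auto
    then show ?thesis using True by (simp add: delta_def)
  next
    case False
    then have "{z\<in>{x}. \<phi> z = y} = {}" by auto
    then show ?thesis using False by (simp add: delta_def)
  qed
  finally show "push \<phi> (delta x) y = delta (\<phi> x) y" .
qed

lemma push_comp: "finite {x. g x \<noteq> 0} \<Longrightarrow> push \<phi> (push \<psi> g) = push (\<phi> \<circ> \<psi>) g"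
proof
  fix y
  assume fg: "finite {x. g x \<noteq> 0}"
  let ?D = "{x. g x \<noteq> 0}"
  have f2: "finite {z. push \<psi> g z \<noteq> 0}"
    using push_fsupp[of g UNIV \<psi> UNIV] fg by (auto simp: fsupp_on_def)
  have "push \<phi> (push \<psi> g) y = (\<Sum>z\<in>\<psi> ` ?D. push \<psi> g z * delta (\<phi> z) y)"
    by (rule push_delta_sum) (use fg push_supp[of \<psi> g] in auto)
  also have "\<dots> = (\<Sum>z\<in>\<psi> ` ?D. (\<Sum>x\<in>?D. g x * delta (\<psi> x) z) * delta (\<phi> z) y)"
    by (rule sum.cong[OF refl]) (simp add: push_delta_sum[OF fg])
  also have "\<dots> = (\<Sum>z\<in>\<psi> ` ?D. (\<Sum>x\<in>?D. g x * delta (\<psi> x) z * delta (\<phi> z) y))"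
    by (simp add: sum_distrib_right)
  also have "\<dots> = (\<Sum>x\<in>?D. (\<Sum>z\<in>\<psi> ` ?D. g x * delta (\<psi> x) z * delta (\<phi> z) y))"
    by (rule sum.swap)
  also have "\<dots> = (\<Sum>x\<in>?D. g x * delta ((\<phi> \<circ> \<psi>) x) y)"
  proof (rule sum.cong[OF refl])
    fix x assume x: "x \<in> ?D"
    have "(\<Sum>z\<in>\<psi> ` ?D. g x * delta (\<psi> x) z * delta (\<phi> z) y) = (\<Sum>z\<in>{\<psi> x}. g x * delta (\<psi> x) z * delta (\<phi> z) y)"
      by (rule sum.mono_neutral_right) (use x fg in \<open>auto simp: delta_def\<close>)
    then show "(\<Sum>z\<in>\<psi> ` ?D. g x * delta (\<psi> x) z * delta (\<phi> z) y) = g x * delta ((\<phi> \<circ> \<psi>) x) y"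
      by (simp add: delta_def)
  qed
  also have "\<dots> = push (\<phi> \<circ> \<psi>) g y" by (rule push_delta_sum[OF fg, symmetric]) simp
  finally show "push \<phi> (push \<psi> g) y = push (\<phi> \<circ> \<psi>) g y" .
qed

lemma push_zspan:
  assumes "S1 \<subseteq> fsupp_on XX" and "\<And>s. s \<in> S1 \<Longrightarrow> push \<phi> s \<in> zspan S2"
    and "g \<in> zspan S1"
  shows "push \<phi> g \<in> zspan S2"
  using assms(3)
proof (induction g rule: zspan.induct)
  case zspan_zero then show ?case by (simp add: push_zero zspan.zspan_zero)
next
  case (zspan_add s h)
  have fh: "finite {x. h x \<noteq> 0}" using zspan_fsupp[OF assms(1) zspan_add(2)] fsupp_on_fin by blast
  have fs: "finite {x. s x \<noteq> 0}" using assms(1) zspan_add(1) fsupp_on_fin by blast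
  have "(\<lambda>y. push \<phi> h y + push \<phi> s y) \<in> zspan S2"
    using zspan_plus[OF assms(2)[OF zspan_add(1)] zspan_add(3)] .
  then show ?case by (rule zspan_cong) (simp add: push_add[OF fh fs])
next
  case (zspan_diff s h)
  have fh: "finite {x. h x \<noteq> 0}" using zspan_fsupp[OF assms(1) zspan_diff(2)] fsupp_on_fin by blast
  have fs: "finite {x. s x \<noteq> 0}" using assms(1) zspan_diff(1) fsupp_on_fin by blast
  have "(\<lambda>y. push \<phi> h y - push \<phi> s y) \<in> zspan S2"
    using zspan_minus[OF zspan_diff(3) assms(2)[OF zspan_diff(1)]] .
  then show ?case by (rule zspan_cong) (simp add: push_diff[OF fh fs])
qed


abbreviation TF :: "('r,'a) module \<Rightarrow> ('r,'b) module \<Rightarrow> ('a \<times> 'b \<Rightarrow> int) set" where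
  "TF A B \<equiv> fsupp_on (carrier A \<times> carrier B)"

abbreviation TK :: "('r,'c) ring_scheme \<Rightarrow> ('r,'a) module \<Rightarrow> ('r,'b) module \<Rightarrow> ('a \<times> 'b \<Rightarrow> int) set" where
  "TK R A B \<equiv> zspan (tensor_gens R A B)"

lemma d3_fsupp: "x \<in> S \<Longrightarrow> y \<in> S \<Longrightarrow> w \<in> S \<Longrightarrow> (\<lambda>z. delta x z - delta y z - delta w z) \<in> fsupp_on S"
  by (intro fsupp_diff fsupp_delta)

lemma d2_fsupp: "x \<in> S \<Longrightarrow> y \<in> S \<Longrightarrow> (\<lambda>z. delta x z - delta y z) \<in> fsupp_on S"
  by (intro fsupp_diff fsupp_delta)

lemma delta_fin: "finite {z. delta x z \<noteq> 0}"
proof -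
  have "{z. delta x z \<noteq> 0} = {x}" by (auto simp: delta_def)
  then show ?thesis by simp
qed

lemma d2_fin: "finite {z. delta x z - delta y z \<noteq> 0}"
  using fsupp_on_fin[OF d2_fsupp[of x UNIV y]] by simp

lemma push_d3: "push \<phi> (\<lambda>z. delta x z - delta y z - delta w z) = (\<lambda>z. delta (\<phi> x) z - delta (\<phi> y) z - delta (\<phi> w) z)"
  by (rule ext) (simp add: push_diff[OF d2_fin delta_fin] push_diff[OF delta_fin delta_fin] push_delta)

lemma push_d2: "push \<phi> (\<lambda>z. delta x z - delta y z) = (\<lambda>z. delta (\<phi> x) z - delta (\<phi> y) z)"
  by (rule ext) (simp add: push_diff[OF delta_fin delta_fin] push_delta)

lemma push_cong: "(\<And>x. g x \<noteq> 0 \<Longrightarrow> \<phi> x = \<psi> x) \<Longrightarrow> push \<phi> g = push \<psi> g"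
  unfolding push_def by (rule ext) (rule sum.cong, auto)

lemma push_id: "finite {x. g x \<noteq> 0} \<Longrightarrow> (\<And>x. g x \<noteq> 0 \<Longrightarrow> \<phi> x = x) \<Longrightarrow> push \<phi> g = g"
proof -
  assume f: "finite {x. g x \<noteq> 0}" and i: "\<And>x. g x \<noteq> 0 \<Longrightarrow> \<phi> x = x"
  have "push \<phi> g = push id g" by (rule push_cong) (simp add: i)
  also have "\<dots> = g"
  proof
    fix y show "push id g y = g y"
      using push_delta_sum[OF f order_refl, of id y] fsupp_delta_sum[OF f order_refl, of y] by simp
  qed
  finally show ?thesis .
qed

context
  fixes R :: "('r,'c) ring_scheme" and A :: "('r,'a) module" and B :: "('r,'b) module"
  assumes A: "module R A" and B: "module R B"
begin

interpretation A: module R A by (rule A)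
interpretation B: module R B by (rule B)

lemma gens_fsupp: "tensor_gens R A B \<subseteq> TF A B"
  unfolding tensor_gens_def by (auto intro!: d3_fsupp d2_fsupp)

lemma K_fsupp: "g \<in> TK R A B \<Longrightarrow> g \<in> TF A B"
  by (rule zspan_fsupp[OF gens_fsupp])

lemma gen1: "a \<in> carrier A \<Longrightarrow> a' \<in> carrier A \<Longrightarrow> b \<in> carrier B \<Longrightarrow>
  (\<lambda>z. delta (a \<oplus>\<^bsub>A\<^esub> a', b) z - delta (a, b) z - delta (a', b) z) \<in> TK R A B"
  by (rule zspan_gen) (unfold tensor_gens_def, blast)

lemma gen2: "a \<in> carrier A \<Longrightarrow> b \<in> carrier B \<Longrightarrow> b' \<in> carrier B \<Longrightarrow>
  (\<lambda>z. delta (a, b \<oplus>\<^bsub>B\<^esub> b') z - delta (a, b) z - delta (a, b') z) \<in> TK R A B"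
  by (rule zspan_gen) (unfold tensor_gens_def, blast)

lemma gen3: "r \<in> carrier R \<Longrightarrow> a \<in> carrier A \<Longrightarrow> b \<in> carrier B \<Longrightarrow>
  (\<lambda>z. delta (r \<odot>\<^bsub>A\<^esub> a, b) z - delta (a, r \<odot>\<^bsub>B\<^esub> b) z) \<in> TK R A B"
  by (rule zspan_gen) (unfold tensor_gens_def, blast)

lemma delta_zero_left: "b \<in> carrier B \<Longrightarrow> delta (\<zero>\<^bsub>A\<^esub>, b) \<in> TK R A B"
proof -
  assume b: "b \<in> carrier B"
  have "(\<lambda>z. - (delta (\<zero>\<^bsub>A\<^esub> \<oplus>\<^bsub>A\<^esub> \<zero>\<^bsub>A\<^esub>, b) z - delta (\<zero>\<^bsub>A\<^esub>, b) z - delta (\<zero>\<^bsub>A\<^esub>, b) z)) \<in> TK R A B"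
    by (rule zspan_uminus[OF gen1]) (use b in auto)
  then show ?thesis by (rule zspan_cong) simp
qed

lemma delta_zero_right: "a \<in> carrier A \<Longrightarrow> delta (a, \<zero>\<^bsub>B\<^esub>) \<in> TK R A B"
proof -
  assume a: "a \<in> carrier A"
  have "(\<lambda>z. - (delta (a, \<zero>\<^bsub>B\<^esub> \<oplus>\<^bsub>B\<^esub> \<zero>\<^bsub>B\<^esub>) z - delta (a, \<zero>\<^bsub>B\<^esub>) z - delta (a, \<zero>\<^bsub>B\<^esub>) z)) \<in> TK R A B"
    by (rule zspan_uminus[OF gen2]) (use a in auto)
  then show ?thesis by (rule zspan_cong) simp
qed

lemma rel_equiv: "equiv (TF A B) (tensor_rel R A B)"
proof (rule equivI)
  show "tensor_rel R A B \<subseteq> TF A B \<times> TF A B" unfolding tensor_rel_def by auto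
  show "refl_on (TF A B) (tensor_rel R A B)"
    unfolding refl_on_def tensor_rel_def by (auto intro: zspan.zspan_zero)
  show "sym (tensor_rel R A B)"
    unfolding sym_def tensor_rel_def
    by (auto dest: zspan_uminus)
  show "trans (tensor_rel R A B)"
    unfolding trans_def tensor_rel_def
  proof (clarsimp)
    fix x y z
    assume "(\<lambda>z. x z - y z) \<in> TK R A B" "(\<lambda>za. y za - z za) \<in> TK R A B"
    from zspan_plus[OF this(2) this(1)] show "(\<lambda>za. x za - z za) \<in> TK R A B" by simp
  qed
qed

lemma sym_helper: "(\<lambda>z. x z - y z) \<in> TK R A B \<Longrightarrow> (\<lambda>z. y z - x z) \<in> TK R A B"
  using zspan_uminus by fastforce

lemma class_in: "g \<in> TF A B \<Longrightarrow> tensor_class R A B g \<in> TF A B // tensor_rel R A B"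
  unfolding tensor_class_def by (rule quotientI)

lemma class_eq: "g \<in> TF A B \<Longrightarrow> h \<in> TF A B \<Longrightarrow>
   tensor_class R A B g = tensor_class R A B h \<longleftrightarrow> (\<lambda>z. g z - h z) \<in> TK R A B"
  unfolding tensor_class_def using eq_equiv_class_iff[OF rel_equiv] by (simp add: tensor_rel_def)

lemma class_eqI: "g \<in> TF A B \<Longrightarrow> h \<in> TF A B \<Longrightarrow> (\<lambda>z. g z - h z) \<in> TK R A B \<Longrightarrow>
   tensor_class R A B g = tensor_class R A B h"
  using class_eq by blast

lemma class_zero_iff: "g \<in> TF A B \<Longrightarrow> tensor_class R A B g = tensor_class R A B (\<lambda>_. 0) \<longleftrightarrow> g \<in> TK R A B"
  using class_eq[of g "\<lambda>_. 0"] by simp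

lemma pick_props:
  assumes U: "U \<in> TF A B // tensor_rel R A B"
  shows "pick_rep U \<in> U" "pick_rep U \<in> TF A B" "tensor_class R A B (pick_rep U) = U"
proof -
  obtain g where g: "g \<in> TF A B" "U = tensor_rel R A B `` {g}" using U by (rule quotientE)
  have "g \<in> U" using g equiv_class_self[OF rel_equiv] by simp
  then show pU: "pick_rep U \<in> U" unfolding pick_rep_def by (rule someI[where P="\<lambda>g. g \<in> U"])
  then have "(g, pick_rep U) \<in> tensor_rel R A B" using g by simp
  then show "pick_rep U \<in> TF A B" by (simp add: tensor_rel_def)
  show "tensor_class R A B (pick_rep U) = U"
    using \<open>(g, pick_rep U) \<in> tensor_rel R A B\<close> g equiv_class_eq_iff[OF rel_equiv] unfolding tensor_class_def
    by metis
qed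

lemma pick_class: "g \<in> TF A B \<Longrightarrow> (\<lambda>z. pick_rep (tensor_class R A B g) z - g z) \<in> TK R A B"
proof -
  assume g: "g \<in> TF A B"
  note P = pick_props[OF class_in[OF g]]
  show ?thesis using class_eq[OF P(2) g] P(3) by simp
qed

end


lemma rs_carrier: "carrier (restrict_scalars f T) = carrier T"
  by (simp add: restrict_scalars_def)

lemma rs_simps[simp]:
  "\<zero>\<^bsub>restrict_scalars f T\<^esub> = \<zero>\<^bsub>T\<^esub>"
  "x \<oplus>\<^bsub>restrict_scalars f T\<^esub> y = x \<oplus>\<^bsub>T\<^esub> y"
  "r \<odot>\<^bsub>restrict_scalars f T\<^esub> t = f r \<otimes>\<^bsub>T\<^esub> t"
  by (simp_all add: restrict_scalars_def)

lemma rs_module: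
  assumes R: "cring R" and T: "cring T" and f: "f \<in> ring_hom R T"
  shows "module R (restrict_scalars f T)"
proof -
  interpret R: cring R by (rule R)
  interpret T: cring T by (rule T)
  interpret h: ring_hom_cring R T f by (intro ring_hom_cringI R T f)
  have ag: "abelian_group (restrict_scalars f T)"
    by (rule abelian_groupI) (auto simp: T.a_ac rs_carrier intro: T.l_neg)
  show ?thesis
    by (rule moduleI[OF R ag]) (auto simp: T.m_assoc T.l_distr T.r_distr rs_carrier)
qed

lemma tensor_simps[simp]:
  "carrier (tensor R A B) = TF A B // tensor_rel R A B"
  "\<zero>\<^bsub>tensor R A B\<^esub> = tensor_class R A B (\<lambda>_. 0)"
  "U \<oplus>\<^bsub>tensor R A B\<^esub> V = tensor_class R A B (\<lambda>z. pick_rep U z + pick_rep V z)"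
  by (simp_all add: tensor_def)

lemma bc_simps[simp]:
  "carrier (base_change R T f M) = TF M (restrict_scalars f T) // tensor_rel R M (restrict_scalars f T)"
  "\<zero>\<^bsub>base_change R T f M\<^esub> = tensor_class R M (restrict_scalars f T) (\<lambda>_. 0)"
  "U \<oplus>\<^bsub>base_change R T f M\<^esub> V = tensor_class R M (restrict_scalars f T) (\<lambda>z. pick_rep U z + pick_rep V z)"
  "s \<odot>\<^bsub>base_change R T f M\<^esub> U = tensor_class R M (restrict_scalars f T) (push (\<lambda>(m,t). (m, s \<otimes>\<^bsub>T\<^esub> t)) (pick_rep U))"
  by (simp_all add: base_change_def Let_def tensor_def)

context
  fixes R :: "'r ring" and T :: "'t ring" and f :: "'r \<Rightarrow> 't" and M :: "('r,'m) module"
  assumes R: "cring R" and T: "cring T" and f: "f \<in> ring_hom R T" and M: "module R M"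
begin

interpretation R: cring R by (rule R)
interpretation T: cring T by (rule T)
interpretation M: module R M by (rule M)
interpretation h: ring_hom_cring R T f by (intro ring_hom_cringI R T f)

abbreviation "BB \<equiv> restrict_scalars f T"
abbreviation "NN \<equiv> base_change R T f M"
abbreviation "cls \<equiv> tensor_class R M BB"
abbreviation "phi s \<equiv> (\<lambda>(m::'m,t::'t). (m, s \<otimes>\<^bsub>T\<^esub> t))"

lemma BB: "module R BB" by (rule rs_module[OF R T f])

lemmas N_pick = pick_props[OF M BB]
lemmas N_class_eqI = class_eqI[OF M BB]
lemmas N_class_in = class_in[OF M BB]
lemmas N_pick_class = pick_class[OF M BB]
lemmas N_K_fsupp = K_fsupp[OF M BB]

lemma N_add_class: "g \<in> TF M BB \<Longrightarrow> h \<in> TF M BB \<Longrightarrow> cls g \<oplus>\<^bsub>NN\<^esub> cls h = cls (\<lambda>z. g z + h z)"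
proof -
  assume g: "g \<in> TF M BB" and h: "h \<in> TF M BB"
  have pg: "pick_rep (cls g) \<in> TF M BB" and ph: "pick_rep (cls h) \<in> TF M BB"
    using N_pick(2)[OF N_class_in[OF g]] N_pick(2)[OF N_class_in[OF h]] by auto
  have "(\<lambda>z. (pick_rep (cls g) z + pick_rep (cls h) z) - (g z + h z)) \<in> TK R M BB"
    using zspan_plus[OF N_pick_class[OF h] N_pick_class[OF g]] by (simp add: algebra_simps)
  then show ?thesis using N_class_eqI[OF fsupp_add[OF pg ph] fsupp_add[OF g h]] by simp
qed

lemma phi_gens: "s \<in> carrier T \<Longrightarrow> x \<in> tensor_gens R M BB \<Longrightarrow> push (phi s) x \<in> TK R M BB"
proof -
  assume s: "s \<in> carrier T" and x: "x \<in> tensor_gens R M BB"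
  from x consider
      (g1) a a' b where "x = (\<lambda>z. delta (a \<oplus>\<^bsub>M\<^esub> a', b) z - delta (a, b) z - delta (a', b) z)"
        "a \<in> carrier M" "a' \<in> carrier M" "b \<in> carrier BB"
    | (g2) a b b' where "x = (\<lambda>z. delta (a, b \<oplus>\<^bsub>BB\<^esub> b') z - delta (a, b) z - delta (a, b') z)"
        "a \<in> carrier M" "b \<in> carrier BB" "b' \<in> carrier BB"
    | (g3) r a b where "x = (\<lambda>z. delta (r \<odot>\<^bsub>M\<^esub> a, b) z - delta (a, r \<odot>\<^bsub>BB\<^esub> b) z)"
        "r \<in> carrier R" "a \<in> carrier M" "b \<in> carrier BB"
    unfolding tensor_gens_def by blast
  then show ?thesis
  proof cases
    case (g1 a a' b)
    then show ?thesis using gen1[OF M BB, of a a' "s \<otimes>\<^bsub>T\<^esub> b"] s by (simp add: push_d3 rs_carrier)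
  next
    case (g2 a b b')
    then show ?thesis using gen2[OF M BB, of a "s \<otimes>\<^bsub>T\<^esub> b" "s \<otimes>\<^bsub>T\<^esub> b'"] s by (simp add: push_d3 T.r_distr rs_carrier)
  next
    case (g3 r a b)
    then show ?thesis using gen3[OF M BB, of r a "s \<otimes>\<^bsub>T\<^esub> b"] s
      by (simp add: push_d2 T.m_lcomm rs_carrier)
  qed
qed

lemma phi_K: "s \<in> carrier T \<Longrightarrow> g \<in> TK R M BB \<Longrightarrow> push (phi s) g \<in> TK R M BB"
  by (rule push_zspan[OF gens_fsupp[OF M BB] phi_gens])

lemma phi_fsupp: "s \<in> carrier T \<Longrightarrow> g \<in> TF M BB \<Longrightarrow> push (phi s) g \<in> TF M BB"
  by (rule push_fsupp) (auto simp: rs_carrier)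

lemma N_smult_class: "s \<in> carrier T \<Longrightarrow> g \<in> TF M BB \<Longrightarrow> s \<odot>\<^bsub>NN\<^esub> cls g = cls (push (phi s) g)"
proof -
  assume s: "s \<in> carrier T" and g: "g \<in> TF M BB"
  have pg: "pick_rep (cls g) \<in> TF M BB" using N_pick(2)[OF N_class_in[OF g]] by auto
  have "push (phi s) (\<lambda>z. pick_rep (cls g) z - g z) \<in> TK R M BB"
    by (rule phi_K[OF s N_pick_class[OF g]])
  then have "(\<lambda>z. push (phi s) (pick_rep (cls g)) z - push (phi s) g z) \<in> TK R M BB"
    by (rule zspan_cong) (simp add: push_diff[OF fsupp_on_fin[OF pg] fsupp_on_fin[OF g]])
  then show ?thesis using N_class_eqI[OF phi_fsupp[OF s pg] phi_fsupp[OF s g]] by simp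
qed

lemma N_cases: "U \<in> carrier NN \<Longrightarrow> (\<And>g. g \<in> TF M BB \<Longrightarrow> U = cls g \<Longrightarrow> P) \<Longrightarrow> P"
  using N_pick by (metis bc_simps(1))

lemma N_module: "module T NN"
proof -
  have ag: "abelian_group NN"
  proof (rule abelian_groupI)
    fix x y assume "x \<in> carrier NN" "y \<in> carrier NN"
    then show "x \<oplus>\<^bsub>NN\<^esub> y \<in> carrier NN"
      by (auto intro!: N_class_in fsupp_add dest: N_pick(2))
  next
    show "\<zero>\<^bsub>NN\<^esub> \<in> carrier NN" by (auto intro!: N_class_in)
  next
    fix x y z assume "x \<in> carrier NN" "y \<in> carrier NN" "z \<in> carrier NN"
    then show "x \<oplus>\<^bsub>NN\<^esub> y \<oplus>\<^bsub>NN\<^esub> z = x \<oplus>\<^bsub>NN\<^esub> (y \<oplus>\<^bsub>NN\<^esub> z)"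
      by (elim N_cases) (simp only: N_add_class fsupp_add add.assoc)
  next
    fix x y assume "x \<in> carrier NN" "y \<in> carrier NN"
    then show "x \<oplus>\<^bsub>NN\<^esub> y = y \<oplus>\<^bsub>NN\<^esub> x"
      by (elim N_cases) (simp only: N_add_class add.commute)
  next
    fix x assume "x \<in> carrier NN"
    then show "\<zero>\<^bsub>NN\<^esub> \<oplus>\<^bsub>NN\<^esub> x = x"
    proof (elim N_cases)
      fix g assume g: "g \<in> TF M BB" "x = cls g"
      have "\<zero>\<^bsub>NN\<^esub> = cls (\<lambda>_. 0)" by simp
      then show ?thesis using N_add_class[OF fsupp_zero g(1)] g(2) by simp
    qed
  next
    fix x assume "x \<in> carrier NN"
    then show "\<exists>y\<in>carrier NN. y \<oplus>\<^bsub>NN\<^esub> x = \<zero>\<^bsub>NN\<^esub>"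
    proof (elim N_cases)
      fix g assume g: "g \<in> TF M BB" "x = cls g"
      have ng: "(\<lambda>z. - g z) \<in> TF M BB" by (rule fsupp_neg[OF g(1)])
      have "cls (\<lambda>z. - g z) \<oplus>\<^bsub>NN\<^esub> x = \<zero>\<^bsub>NN\<^esub>"
        using N_add_class[OF ng g(1)] g(2) by simp
      then show ?thesis using N_class_in[OF ng] by auto
    qed
  qed
  show ?thesis
  proof (rule moduleI[OF T ag])
    fix a x assume a: "a \<in> carrier T" and x: "x \<in> carrier NN"
    then show "a \<odot>\<^bsub>NN\<^esub> x \<in> carrier NN"
      by (elim N_cases) (simp only: N_smult_class, auto intro!: N_class_in phi_fsupp)
  next
    fix a b x assume a: "a \<in> carrier T" and b: "b \<in> carrier T" and x: "x \<in> carrier NN"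
    from x show "(a \<oplus>\<^bsub>T\<^esub> b) \<odot>\<^bsub>NN\<^esub> x = a \<odot>\<^bsub>NN\<^esub> x \<oplus>\<^bsub>NN\<^esub> b \<odot>\<^bsub>NN\<^esub> x"
    proof (elim N_cases)
      fix g assume g: "g \<in> TF M BB" and xg: "x = cls g"
      let ?D = "{z. g z \<noteq> 0}"
      have fD: "finite ?D" by (rule fsupp_on_fin[OF g])
      have "(\<lambda>y. \<Sum>z\<in>?D. g z * (delta (phi (a \<oplus>\<^bsub>T\<^esub> b) z) y - delta (phi a z) y - delta (phi b z) y)) \<in> TK R M BB"
      proof (rule zspan_sum[OF fD])
        fix z assume z: "z \<in> ?D"
        obtain m t where zz: "z = (m, t)" by fastforce
        have mt: "m \<in> carrier M" "t \<in> carrier T" using fsupp_on_sub[OF g] z zz by (auto simp: rs_carrier)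
        have "(\<lambda>y. delta (m, (a \<otimes>\<^bsub>T\<^esub> t) \<oplus>\<^bsub>BB\<^esub> (b \<otimes>\<^bsub>T\<^esub> t)) y - delta (m, a \<otimes>\<^bsub>T\<^esub> t) y - delta (m, b \<otimes>\<^bsub>T\<^esub> t) y) \<in> TK R M BB"
          by (rule gen2[OF M BB]) (use mt a b in \<open>auto simp: rs_carrier\<close>)
        then have "(\<lambda>y. g z * (delta (m, (a \<otimes>\<^bsub>T\<^esub> t) \<oplus>\<^bsub>BB\<^esub> (b \<otimes>\<^bsub>T\<^esub> t)) y - delta (m, a \<otimes>\<^bsub>T\<^esub> t) y - delta (m, b \<otimes>\<^bsub>T\<^esub> t) y)) \<in> TK R M BB"
          by (rule zspan_smul)
        then show "(\<lambda>y. g z * (delta (phi (a \<oplus>\<^bsub>T\<^esub> b) z) y - delta (phi a z) y - delta (phi b z) y)) \<in> TK R M BB"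
          using mt a b zz by (simp add: T.l_distr)
      qed
      then have key: "(\<lambda>y. push (phi (a \<oplus>\<^bsub>T\<^esub> b)) g y - (push (phi a) g y + push (phi b) g y)) \<in> TK R M BB"
        by (rule zspan_cong) (simp add: push_delta_sum[OF fD order_refl] algebra_simps sum_subtractf sum.distrib)
      show ?thesis using key a b g xg
        by (simp only: N_smult_class N_add_class phi_fsupp T.add.m_closed, intro N_class_eqI phi_fsupp fsupp_add T.add.m_closed)
    qed
  next
    fix a x y assume a: "a \<in> carrier T" and x: "x \<in> carrier NN" and y: "y \<in> carrier NN"
    from x y show "a \<odot>\<^bsub>NN\<^esub> (x \<oplus>\<^bsub>NN\<^esub> y) = a \<odot>\<^bsub>NN\<^esub> x \<oplus>\<^bsub>NN\<^esub> a \<odot>\<^bsub>NN\<^esub> y"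
    proof (elim N_cases)
      fix g h assume g: "g \<in> TF M BB" "y = cls g" and h: "h \<in> TF M BB" "x = cls h"
      have "push (phi a) (\<lambda>z. h z + g z) = (\<lambda>z. push (phi a) h z + push (phi a) g z)"
        by (rule ext, rule push_add[OF fsupp_on_fin[OF h(1)] fsupp_on_fin[OF g(1)]])
      then show ?thesis using g h a
        by (simp only: N_smult_class N_add_class phi_fsupp fsupp_add)
    qed
  next
    fix a b x assume a: "a \<in> carrier T" and b: "b \<in> carrier T" and x: "x \<in> carrier NN"
    from x show "(a \<otimes>\<^bsub>T\<^esub> b) \<odot>\<^bsub>NN\<^esub> x = a \<odot>\<^bsub>NN\<^esub> (b \<odot>\<^bsub>NN\<^esub> x)"
    proof (elim N_cases)
      fix g assume g: "g \<in> TF M BB" "x = cls g"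
      have "push (phi a) (push (phi b) g) = push (phi a \<circ> phi b) g"
        by (rule push_comp[OF fsupp_on_fin[OF g(1)]])
      also have "\<dots> = push (phi (a \<otimes>\<^bsub>T\<^esub> b)) g"
      proof (rule push_cong)
        fix z assume "g z \<noteq> 0"
        then have "z \<in> carrier M \<times> carrier T" using fsupp_on_sub[OF g(1)] by (auto simp: rs_carrier)
        then show "(phi a \<circ> phi b) z = phi (a \<otimes>\<^bsub>T\<^esub> b) z" using a b by (auto simp: T.m_assoc)
      qed
      finally show ?thesis using g a b
        by (simp only: N_smult_class phi_fsupp T.m_closed)
    qed
  next
    fix x assume x: "x \<in> carrier NN"
    then show "\<one>\<^bsub>T\<^esub> \<odot>\<^bsub>NN\<^esub> x = x"
    proof (elim N_cases)
      fix g assume g: "g \<in> TF M BB" "x = cls g"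
      have "push (phi \<one>\<^bsub>T\<^esub>) g = g"
      proof (rule push_id[OF fsupp_on_fin[OF g(1)]])
        fix z assume "g z \<noteq> 0"
        then have "z \<in> carrier M \<times> carrier T" using fsupp_on_sub[OF g(1)] by (auto simp: rs_carrier)
        then show "phi \<one>\<^bsub>T\<^esub> z = z" by auto
      qed
      then show ?thesis using g by (simp only: N_smult_class T.one_closed)
    qed
  qed
qed

end


lemma Ann_loc_iff:
  assumes E: "module A E" and a: "a \<in> carrier A"
  shows "a \<in> Ann_loc A E \<longleftrightarrow> (\<forall>x\<in>carrier E. \<exists>k::nat. (a [^]\<^bsub>A\<^esub> k) \<odot>\<^bsub>E\<^esub> x = \<zero>\<^bsub>E\<^esub>)"
proof -
  interpret E: module A E by (rule E)
  let ?r = "loc_rel A E a" and ?C = "carrier E \<times> (UNIV :: nat set)"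
  show ?thesis
  proof
    assume H: "a \<in> Ann_loc A E"
    then have lc: "loc_carrier A E a = {loc_zero A E a}" by (simp add: Ann_loc_def)
    show "\<forall>x\<in>carrier E. \<exists>k::nat. (a [^]\<^bsub>A\<^esub> k) \<odot>\<^bsub>E\<^esub> x = \<zero>\<^bsub>E\<^esub>"
    proof
      fix x assume x: "x \<in> carrier E"
      have "?r `` {(x, 0)} \<in> loc_carrier A E a"
        unfolding loc_carrier_def by (rule quotientI) (use x in auto)
      then have eq: "?r `` {(x, 0)} = ?r `` {(\<zero>\<^bsub>E\<^esub>, 0)}" using lc by (simp add: loc_zero_def)
      have "((x, 0), (x, 0)) \<in> ?r"
        unfolding loc_rel_def using x by (auto intro!: exI[of _ 0] simp: E.r_neg E.minus_eq)
      then have "(x, 0) \<in> ?r `` {(\<zero>\<^bsub>E\<^esub>, 0)}" using eq by blast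
      then obtain k :: nat where k: "(a [^]\<^bsub>A\<^esub> k) \<odot>\<^bsub>E\<^esub> (\<zero>\<^bsub>E\<^esub> \<ominus>\<^bsub>E\<^esub> x) = \<zero>\<^bsub>E\<^esub>"
        unfolding loc_rel_def using x by auto
      have ak: "a [^]\<^bsub>A\<^esub> k \<in> carrier A" using a by simp
      have "\<ominus>\<^bsub>E\<^esub> ((a [^]\<^bsub>A\<^esub> k) \<odot>\<^bsub>E\<^esub> x) = \<zero>\<^bsub>E\<^esub>"
        using k E.smult_r_minus[OF ak x] x by (simp add: E.minus_eq)
      then have "(a [^]\<^bsub>A\<^esub> k) \<odot>\<^bsub>E\<^esub> x = \<zero>\<^bsub>E\<^esub>"
        using E.smult_closed[OF ak x] by (metis E.add.inv_eq_1_iff)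
      then show "\<exists>k::nat. (a [^]\<^bsub>A\<^esub> k) \<odot>\<^bsub>E\<^esub> x = \<zero>\<^bsub>E\<^esub>" by blast
    qed
  next
    assume H: "\<forall>x\<in>carrier E. \<exists>k::nat. (a [^]\<^bsub>A\<^esub> k) \<odot>\<^bsub>E\<^esub> x = \<zero>\<^bsub>E\<^esub>"
    have cl: "?r `` {p} = ?C" if p: "p \<in> ?C" for p
    proof
      show "?r `` {p} \<subseteq> ?C" unfolding loc_rel_def by auto
      show "?C \<subseteq> ?r `` {p}"
      proof
        fix q assume q: "q \<in> ?C"
        obtain x m where pp: "p = (x, m)" by fastforce
        obtain y n where qq: "q = (y, n)" by fastforce
        have xy: "x \<in> carrier E" "y \<in> carrier E" using p q pp qq by auto
        have "((a [^]\<^bsub>A\<^esub> n) \<odot>\<^bsub>E\<^esub> x) \<ominus>\<^bsub>E\<^esub> ((a [^]\<^bsub>A\<^esub> m) \<odot>\<^bsub>E\<^esub> y) \<in> carrier E"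
          using xy a by simp
        then obtain k :: nat where "(a [^]\<^bsub>A\<^esub> k) \<odot>\<^bsub>E\<^esub> (((a [^]\<^bsub>A\<^esub> n) \<odot>\<^bsub>E\<^esub> x) \<ominus>\<^bsub>E\<^esub> ((a [^]\<^bsub>A\<^esub> m) \<odot>\<^bsub>E\<^esub> y)) = \<zero>\<^bsub>E\<^esub>"
          using H by blast
        then show "q \<in> ?r `` {p}" unfolding loc_rel_def using pp qq xy by auto
      qed
    qed
    have z: "(\<zero>\<^bsub>E\<^esub>, 0::nat) \<in> ?C" by simp
    have "loc_carrier A E a = {?C}"
    proof
      show "loc_carrier A E a \<subseteq> {?C}" unfolding loc_carrier_def using cl by (auto elim!: quotientE)
      show "{?C} \<subseteq> loc_carrier A E a" unfolding loc_carrier_def using cl[OF z] quotientI[OF z, of ?r] by auto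
    qed
    moreover have "loc_zero A E a = ?C" unfolding loc_zero_def using cl[OF z] .
    ultimately show "a \<in> Ann_loc A E" using a by (simp add: Ann_loc_def)
  qed
qed

definition ev :: "('e,'x) ring_scheme \<Rightarrow> ('p \<Rightarrow> 'e) \<Rightarrow> ('p \<Rightarrow> int) \<Rightarrow> 'e" where
  "ev E \<beta> g = finsum E (\<lambda>z. add_pow E (g z) (\<beta> z)) {z. g z \<noteq> 0}"

context
  fixes E :: "('e,'x) ring_scheme" and \<beta> :: "'p \<Rightarrow> 'e" and CC :: "'p set"
  assumes E: "abelian_group E" and bc: "\<And>z. z \<in> CC \<Longrightarrow> \<beta> z \<in> carrier E"
begin

interpretation E: abelian_group E by (rule E)

lemma add_pow_int0[simp]: "add_pow E (0::int) x = \<zero>\<^bsub>E\<^esub>"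
  by (simp add: add_pow_def)

lemma ev_on: "finite D \<Longrightarrow> {z. g z \<noteq> 0} \<subseteq> D \<Longrightarrow> D \<subseteq> CC \<Longrightarrow>
   ev E \<beta> g = finsum E (\<lambda>z. add_pow E (g z) (\<beta> z)) D"
  unfolding ev_def
  by (rule E.add.finprod_mono_neutral_cong_left) (auto intro!: bc)

lemma ev_closed: "g \<in> fsupp_on CC \<Longrightarrow> ev E \<beta> g \<in> carrier E"
  unfolding ev_def by (rule E.finsum_closed) (auto intro!: bc dest: fsupp_on_sub)

lemma ev_add: "g \<in> fsupp_on CC \<Longrightarrow> h \<in> fsupp_on CC \<Longrightarrow> ev E \<beta> (\<lambda>z. g z + h z) = ev E \<beta> g \<oplus>\<^bsub>E\<^esub> ev E \<beta> h"
proof -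
  assume g: "g \<in> fsupp_on CC" and h: "h \<in> fsupp_on CC"
  let ?D = "{z. g z \<noteq> 0} \<union> {z. h z \<noteq> 0}"
  have fD: "finite ?D" using fsupp_on_fin[OF g] fsupp_on_fin[OF h] by simp
  have DC: "?D \<subseteq> CC" using fsupp_on_sub[OF g] fsupp_on_sub[OF h] by auto
  have "ev E \<beta> (\<lambda>z. g z + h z) = finsum E (\<lambda>z. add_pow E (g z + h z) (\<beta> z)) ?D"
    by (rule ev_on[OF fD _ DC]) auto
  also have "\<dots> = finsum E (\<lambda>z. add_pow E (g z) (\<beta> z) \<oplus>\<^bsub>E\<^esub> add_pow E (h z) (\<beta> z)) ?D"
  proof (rule E.finsum_cong'[OF refl])
    have bD: "\<And>z. z \<in> ?D \<Longrightarrow> \<beta> z \<in> carrier E" using DC bc by auto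
    show "(\<lambda>z. add_pow E (g z) (\<beta> z) \<oplus>\<^bsub>E\<^esub> add_pow E (h z) (\<beta> z)) \<in> ?D \<rightarrow> carrier E"
      using bD by auto
    fix i assume "i \<in> ?D"
    then show "add_pow E (g i + h i) (\<beta> i) = add_pow E (g i) (\<beta> i) \<oplus>\<^bsub>E\<^esub> add_pow E (h i) (\<beta> i)"
      using bD E.add.int_pow_mult by blast
  qed
  also have "\<dots> = finsum E (\<lambda>z. add_pow E (g z) (\<beta> z)) ?D \<oplus>\<^bsub>E\<^esub> finsum E (\<lambda>z. add_pow E (h z) (\<beta> z)) ?D"
    by (rule E.finsum_addf) (use DC in \<open>auto intro!: bc\<close>)
  also have "\<dots> = ev E \<beta> g \<oplus>\<^bsub>E\<^esub> ev E \<beta> h"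
    using ev_on[OF fD _ DC, of g] ev_on[OF fD _ DC, of h] by auto
  finally show ?thesis .
qed

lemma ev_zero: "ev E \<beta> (\<lambda>_. 0) = \<zero>\<^bsub>E\<^esub>"
  unfolding ev_def by simp

lemma ev_diff: "g \<in> fsupp_on CC \<Longrightarrow> h \<in> fsupp_on CC \<Longrightarrow> ev E \<beta> (\<lambda>z. g z - h z) = ev E \<beta> g \<ominus>\<^bsub>E\<^esub> ev E \<beta> h"
proof -
  assume g: "g \<in> fsupp_on CC" and h: "h \<in> fsupp_on CC"
  have gh: "(\<lambda>z. g z - h z) \<in> fsupp_on CC" by (rule fsupp_diff[OF g h])
  have "ev E \<beta> g = ev E \<beta> (\<lambda>z. (g z - h z) + h z)" by simp
  also have "\<dots> = ev E \<beta> (\<lambda>z. g z - h z) \<oplus>\<^bsub>E\<^esub> ev E \<beta> h" by (rule ev_add[OF gh h])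
  finally have "ev E \<beta> g = ev E \<beta> (\<lambda>z. g z - h z) \<oplus>\<^bsub>E\<^esub> ev E \<beta> h" .
  then show ?thesis using ev_closed[OF gh] ev_closed[OF h]
    by (simp add: E.minus_eq E.add.m_assoc E.r_neg)
qed

lemma ev_delta: "x \<in> CC \<Longrightarrow> ev E \<beta> (delta x) = \<beta> x"
proof -
  assume x: "x \<in> CC"
  have "{z. delta x z \<noteq> 0} = {x}" by (auto simp: delta_def)
  then show ?thesis unfolding ev_def using bc[OF x] by (simp add: delta_def)
qed

end

context
  fixes R :: "('r,'c) ring_scheme" and A :: "('r,'a) module" and B :: "('r,'b) module"
    and E :: "('e,'x) ring_scheme" and \<beta> :: "'a \<times> 'b \<Rightarrow> 'e" and Sub :: "'e set"
  assumes A: "module R A" and B: "module R B" and E: "abelian_group E"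
    and bc: "\<And>z. z \<in> carrier A \<times> carrier B \<Longrightarrow> \<beta> z \<in> carrier E"
    and Sub: "Sub \<subseteq> carrier E" "\<zero>\<^bsub>E\<^esub> \<in> Sub" "\<And>x y. x \<in> Sub \<Longrightarrow> y \<in> Sub \<Longrightarrow> x \<oplus>\<^bsub>E\<^esub> y \<in> Sub"
      "\<And>x y. x \<in> Sub \<Longrightarrow> y \<in> Sub \<Longrightarrow> x \<ominus>\<^bsub>E\<^esub> y \<in> Sub"
    and d1: "\<And>a a' b. a \<in> carrier A \<Longrightarrow> a' \<in> carrier A \<Longrightarrow> b \<in> carrier B \<Longrightarrow>
       \<beta> (a \<oplus>\<^bsub>A\<^esub> a', b) \<ominus>\<^bsub>E\<^esub> \<beta> (a, b) \<ominus>\<^bsub>E\<^esub> \<beta> (a', b) \<in> Sub"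
    and d2: "\<And>a b b'. a \<in> carrier A \<Longrightarrow> b \<in> carrier B \<Longrightarrow> b' \<in> carrier B \<Longrightarrow>
       \<beta> (a, b \<oplus>\<^bsub>B\<^esub> b') \<ominus>\<^bsub>E\<^esub> \<beta> (a, b) \<ominus>\<^bsub>E\<^esub> \<beta> (a, b') \<in> Sub"
    and d3: "\<And>r a b. r \<in> carrier R \<Longrightarrow> a \<in> carrier A \<Longrightarrow> b \<in> carrier B \<Longrightarrow>
       \<beta> (r \<odot>\<^bsub>A\<^esub> a, b) \<ominus>\<^bsub>E\<^esub> \<beta> (a, r \<odot>\<^bsub>B\<^esub> b) \<in> Sub"
begin

interpretation A: module R A by (rule A)
interpretation B: module R B by (rule B)

lemma ev_d3: "x \<in> carrier A \<times> carrier B \<Longrightarrow> y \<in> carrier A \<times> carrier B \<Longrightarrow> w \<in> carrier A \<times> carrier B \<Longrightarrow>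
   ev E \<beta> (\<lambda>z. delta x z - delta y z - delta w z) = \<beta> x \<ominus>\<^bsub>E\<^esub> \<beta> y \<ominus>\<^bsub>E\<^esub> \<beta> w"
  by (simp add: ev_diff[OF E bc] ev_delta[OF E bc] d2_fsupp fsupp_delta)

lemma ev_d2: "x \<in> carrier A \<times> carrier B \<Longrightarrow> y \<in> carrier A \<times> carrier B \<Longrightarrow>
   ev E \<beta> (\<lambda>z. delta x z - delta y z) = \<beta> x \<ominus>\<^bsub>E\<^esub> \<beta> y"
  by (simp add: ev_diff[OF E bc] ev_delta[OF E bc] fsupp_delta)

lemma ev_gens: "s \<in> tensor_gens R A B \<Longrightarrow> ev E \<beta> s \<in> Sub"
proof -
  assume x: "s \<in> tensor_gens R A B"
  from x consider
      (g1) a a' b where "s = (\<lambda>z. delta (a \<oplus>\<^bsub>A\<^esub> a', b) z - delta (a, b) z - delta (a', b) z)"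
        "a \<in> carrier A" "a' \<in> carrier A" "b \<in> carrier B"
    | (g2) a b b' where "s = (\<lambda>z. delta (a, b \<oplus>\<^bsub>B\<^esub> b') z - delta (a, b) z - delta (a, b') z)"
        "a \<in> carrier A" "b \<in> carrier B" "b' \<in> carrier B"
    | (g3) r a b where "s = (\<lambda>z. delta (r \<odot>\<^bsub>A\<^esub> a, b) z - delta (a, r \<odot>\<^bsub>B\<^esub> b) z)"
        "r \<in> carrier R" "a \<in> carrier A" "b \<in> carrier B"
    unfolding tensor_gens_def by blast
  then show ?thesis
  proof cases
    case (g1 a a' b) then show ?thesis using d1 by (simp add: ev_d3)
  next
    case (g2 a b b') then show ?thesis using d2 by (simp add: ev_d3)
  next
    case (g3 r a b) then show ?thesis using d3 by (simp add: ev_d2)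
  qed
qed

lemma ev_K: "g \<in> TK R A B \<Longrightarrow> ev E \<beta> g \<in> Sub"
proof (induction g rule: zspan.induct)
  case zspan_zero then show ?case using Sub(2) by (simp add: ev_zero[OF E bc])
next
  case (zspan_add s h)
  have "ev E \<beta> (\<lambda>x. h x + s x) = ev E \<beta> h \<oplus>\<^bsub>E\<^esub> ev E \<beta> s"
    by (rule ev_add[OF E bc K_fsupp[OF A B zspan_add(2)] subsetD[OF gens_fsupp[OF A B] zspan_add(1)]])
  then show ?case using Sub(3)[OF zspan_add(3) ev_gens[OF zspan_add(1)]] by simp
next
  case (zspan_diff s h)
  have "ev E \<beta> (\<lambda>x. h x - s x) = ev E \<beta> h \<ominus>\<^bsub>E\<^esub> ev E \<beta> s"
    by (rule ev_diff[OF E bc K_fsupp[OF A B zspan_diff(2)] subsetD[OF gens_fsupp[OF A B] zspan_diff(1)]])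
  then show ?case using Sub(4)[OF zspan_diff(3) ev_gens[OF zspan_diff(1)]] by simp
qed

lemma ev_K_delta: "x \<in> carrier A \<times> carrier B \<Longrightarrow> delta x \<in> TK R A B \<Longrightarrow> \<beta> x \<in> Sub"
proof -
  assume x: "x \<in> carrier A \<times> carrier B" and d: "delta x \<in> TK R A B"
  have "ev E \<beta> (delta x) \<in> Sub" by (rule ev_K[OF d])
  then show ?thesis using ev_delta[OF E bc x] by simp
qed

end


lemma (in abelian_group) ag_cancel2:
  "x \<in> carrier G \<Longrightarrow> y \<in> carrier G \<Longrightarrow> x \<oplus> y \<oplus> \<ominus> x \<oplus> \<ominus> y = \<zero>"
proof -
  assume xy: "x \<in> carrier G" "y \<in> carrier G"
  have "x \<oplus> y \<oplus> \<ominus> x \<oplus> \<ominus> y = (x \<oplus> \<ominus> x) \<oplus> (y \<oplus> \<ominus> y)" using xy by (simp add: a_ac)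
  then show ?thesis using xy by (simp add: r_neg)
qed

context
  fixes R :: "('r,'c) ring_scheme" and A :: "('r,'a) module" and B :: "('r,'b) module"
    and A' :: "('r,'a2) module" and B' :: "('r,'b2) module" and u :: "'a \<Rightarrow> 'a2" and v :: "'b \<Rightarrow> 'b2"
  assumes A: "module R A" and B: "module R B" and A': "module R A'" and B': "module R B'"
    and u: "linear_map R A A' u" and v: "linear_map R B B' v"
begin

lemma uv_gens: "s \<in> tensor_gens R A B \<Longrightarrow> push (\<lambda>(a,b). (u a, v b)) s \<in> TK R A' B'"
proof -
  assume x: "s \<in> tensor_gens R A B"
  from x consider
      (g1) a a' b where "s = (\<lambda>z. delta (a \<oplus>\<^bsub>A\<^esub> a', b) z - delta (a, b) z - delta (a', b) z)"
        "a \<in> carrier A" "a' \<in> carrier A" "b \<in> carrier B"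
    | (g2) a b b' where "s = (\<lambda>z. delta (a, b \<oplus>\<^bsub>B\<^esub> b') z - delta (a, b) z - delta (a, b') z)"
        "a \<in> carrier A" "b \<in> carrier B" "b' \<in> carrier B"
    | (g3) r a b where "s = (\<lambda>z. delta (r \<odot>\<^bsub>A\<^esub> a, b) z - delta (a, r \<odot>\<^bsub>B\<^esub> b) z)"
        "r \<in> carrier R" "a \<in> carrier A" "b \<in> carrier B"
    unfolding tensor_gens_def by blast
  then show ?thesis
  proof cases
    case (g1 a a' b)
    then show ?thesis using gen1[OF A' B', of "u a" "u a'" "v b"] u v
      by (simp add: push_d3 linear_map_def)
  next
    case (g2 a b b')
    then show ?thesis using gen2[OF A' B', of "u a" "v b" "v b'"] u v
      by (simp add: push_d3 linear_map_def)
  next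
    case (g3 r a b)
    then show ?thesis using gen3[OF A' B', of r "u a" "v b"] u v
      by (simp add: push_d2 linear_map_def)
  qed
qed

lemma uv_K: "g \<in> TK R A B \<Longrightarrow> push (\<lambda>(a,b). (u a, v b)) g \<in> TK R A' B'"
  by (rule push_zspan[OF gens_fsupp[OF A B] uv_gens])

lemma uv_fsupp: "g \<in> TF A B \<Longrightarrow> push (\<lambda>(a,b). (u a, v b)) g \<in> TF A' B'"
  by (rule push_fsupp) (use u v in \<open>auto simp: linear_map_def\<close>)

lemma tmap_class: "g \<in> TF A B \<Longrightarrow>
  tensor_map R A' B' u v (tensor_class R A B g) = tensor_class R A' B' (push (\<lambda>(a,b). (u a, v b)) g)"
proof -
  assume g: "g \<in> TF A B"
  note P = pick_props[OF A B class_in[OF A B g]]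
  have "push (\<lambda>(a,b). (u a, v b)) (\<lambda>z. pick_rep (tensor_class R A B g) z - g z) \<in> TK R A' B'"
    by (rule uv_K[OF pick_class[OF A B g]])
  then have "(\<lambda>z. push (\<lambda>(a,b). (u a, v b)) (pick_rep (tensor_class R A B g)) z - push (\<lambda>(a,b). (u a, v b)) g z) \<in> TK R A' B'"
    by (rule zspan_cong) (simp add: push_diff[OF fsupp_on_fin[OF P(2)] fsupp_on_fin[OF g]])
  then show ?thesis unfolding tensor_map_def
    by (rule class_eqI[OF A' B' uv_fsupp[OF P(2)] uv_fsupp[OF g]])
qed

end

lemma swap_K:
  assumes A: "module R A" and B: "module R B" and g: "g \<in> TK R A B"
  shows "push (\<lambda>(a,b). (b,a)) g \<in> TK R B A"
proof (rule push_zspan[OF gens_fsupp[OF A B] _ g])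
  fix s assume x: "s \<in> tensor_gens R A B"
  from x consider
      (g1) a a' b where "s = (\<lambda>z. delta (a \<oplus>\<^bsub>A\<^esub> a', b) z - delta (a, b) z - delta (a', b) z)"
        "a \<in> carrier A" "a' \<in> carrier A" "b \<in> carrier B"
    | (g2) a b b' where "s = (\<lambda>z. delta (a, b \<oplus>\<^bsub>B\<^esub> b') z - delta (a, b) z - delta (a, b') z)"
        "a \<in> carrier A" "b \<in> carrier B" "b' \<in> carrier B"
    | (g3) r a b where "s = (\<lambda>z. delta (r \<odot>\<^bsub>A\<^esub> a, b) z - delta (a, r \<odot>\<^bsub>B\<^esub> b) z)"
        "r \<in> carrier R" "a \<in> carrier A" "b \<in> carrier B"
    unfolding tensor_gens_def by blast
  then show "push (\<lambda>(a,b). (b,a)) s \<in> TK R B A"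
  proof cases
    case (g1 a a' b)
    then show ?thesis using gen2[OF B A, of b a a'] by (simp add: push_d3)
  next
    case (g2 a b b')
    then show ?thesis using gen1[OF B A, of b b' a] by (simp add: push_d3)
  next
    case (g3 r a b)
    then have "(\<lambda>z. - (delta (r \<odot>\<^bsub>B\<^esub> b, a) z - delta (b, r \<odot>\<^bsub>A\<^esub> a) z)) \<in> TK R B A"
      using zspan_uminus[OF gen3[OF B A, of r b a]] by simp
    then show ?thesis using g3 by (simp add: push_d2)
  qed
qed

lemma self_module_simps[simp]:
  "carrier (self_module R) = carrier R"
  "\<zero>\<^bsub>self_module R\<^esub> = \<zero>\<^bsub>R\<^esub>"
  "x \<oplus>\<^bsub>self_module R\<^esub> y = x \<oplus>\<^bsub>R\<^esub> y"
  "r \<odot>\<^bsub>self_module R\<^esub> t = r \<otimes>\<^bsub>R\<^esub> t"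
  by (simp_all add: self_module_def)

lemma self_module: assumes R: "cring R" shows "module R (self_module R)"
proof -
  interpret R: cring R by (rule R)
  have ag: "abelian_group (self_module R)"
    by (rule abelian_groupI) (auto simp: R.a_ac intro: R.l_neg)
  show ?thesis
    by (rule moduleI[OF R ag]) (auto simp: R.m_assoc R.l_distr R.r_distr)
qed

definition img_module :: "('r \<Rightarrow> 't) \<Rightarrow> ('r,'c) ring_scheme \<Rightarrow> ('t,'d) ring_scheme \<Rightarrow> ('r,'t) module" where
  "img_module f R T = \<lparr> carrier = f ` carrier R, monoid.mult = (\<otimes>\<^bsub>T\<^esub>), monoid.one = \<one>\<^bsub>T\<^esub>, ring.zero = \<zero>\<^bsub>T\<^esub>,
      ring.add = (\<oplus>\<^bsub>T\<^esub>), module.smult = (\<lambda>r t. f r \<otimes>\<^bsub>T\<^esub> t) \<rparr>"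

lemma img_simps[simp]:
  "carrier (img_module f R T) = f ` carrier R"
  "\<zero>\<^bsub>img_module f R T\<^esub> = \<zero>\<^bsub>T\<^esub>"
  "x \<oplus>\<^bsub>img_module f R T\<^esub> y = x \<oplus>\<^bsub>T\<^esub> y"
  "r \<odot>\<^bsub>img_module f R T\<^esub> t = f r \<otimes>\<^bsub>T\<^esub> t"
  by (simp_all add: img_module_def)

lemma img_module:
  assumes R: "cring R" and T: "cring T" and f: "f \<in> ring_hom R T"
  shows "module R (img_module f R T)"
proof -
  interpret R: cring R by (rule R)
  interpret T: cring T by (rule T)
  interpret h: ring_hom_cring R T f by (intro ring_hom_cringI R T f)
  have ci: "\<And>x. x \<in> carrier (img_module f R T) \<Longrightarrow> x \<in> carrier T" by auto
  have ag: "abelian_group (img_module f R T)"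
  proof (rule abelian_groupI)
    fix x y assume "x \<in> carrier (img_module f R T)" "y \<in> carrier (img_module f R T)"
    then obtain r s where "r \<in> carrier R" "s \<in> carrier R" "x = f r" "y = f s" by auto
    then show "x \<oplus>\<^bsub>img_module f R T\<^esub> y \<in> carrier (img_module f R T)"
      by (metis R.add.m_closed h.hom_add image_eqI img_simps(1) img_simps(3))
  next
    show "\<zero>\<^bsub>img_module f R T\<^esub> \<in> carrier (img_module f R T)"
      using h.hom_zero R.zero_closed by (metis image_eqI img_simps(1) img_simps(2))
  next
    fix x y z assume "x \<in> carrier (img_module f R T)" "y \<in> carrier (img_module f R T)" "z \<in> carrier (img_module f R T)"
    then show "x \<oplus>\<^bsub>img_module f R T\<^esub> y \<oplus>\<^bsub>img_module f R T\<^esub> z = x \<oplus>\<^bsub>img_module f R T\<^esub> (y \<oplus>\<^bsub>img_module f R T\<^esub> z)"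
      using ci by (simp add: T.a_assoc)
  next
    fix x y assume "x \<in> carrier (img_module f R T)" "y \<in> carrier (img_module f R T)"
    then show "x \<oplus>\<^bsub>img_module f R T\<^esub> y = y \<oplus>\<^bsub>img_module f R T\<^esub> x"
      using ci by (simp add: T.a_comm)
  next
    fix x assume "x \<in> carrier (img_module f R T)"
    then show "\<zero>\<^bsub>img_module f R T\<^esub> \<oplus>\<^bsub>img_module f R T\<^esub> x = x" using ci by simp
  next
    fix x assume "x \<in> carrier (img_module f R T)"
    then obtain r where r: "r \<in> carrier R" "x = f r" by auto
    have "f (\<ominus>\<^bsub>R\<^esub> r) \<oplus>\<^bsub>T\<^esub> f r = \<zero>\<^bsub>T\<^esub>"
      using r by (metis R.a_inv_closed R.l_neg h.hom_add h.hom_zero)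
    moreover have "f (\<ominus>\<^bsub>R\<^esub> r) \<in> carrier (img_module f R T)"
      unfolding img_simps using r by (intro imageI R.a_inv_closed)
    ultimately show "\<exists>y\<in>carrier (img_module f R T). y \<oplus>\<^bsub>img_module f R T\<^esub> x = \<zero>\<^bsub>img_module f R T\<^esub>"
      using r(2) unfolding img_simps by blast
  qed
  show ?thesis
  proof (rule moduleI[OF R ag])
    fix a x assume "a \<in> carrier R" "x \<in> carrier (img_module f R T)"
    then obtain r where "r \<in> carrier R" "x = f r" by auto
    then show "a \<odot>\<^bsub>img_module f R T\<^esub> x \<in> carrier (img_module f R T)"
      using \<open>a \<in> carrier R\<close> by (metis R.m_closed h.hom_mult image_eqI img_simps(1) img_simps(4))
  next
    fix a b x assume "a \<in> carrier R" "b \<in> carrier R" "x \<in> carrier (img_module f R T)"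
    then show "(a \<oplus>\<^bsub>R\<^esub> b) \<odot>\<^bsub>img_module f R T\<^esub> x = a \<odot>\<^bsub>img_module f R T\<^esub> x \<oplus>\<^bsub>img_module f R T\<^esub> b \<odot>\<^bsub>img_module f R T\<^esub> x"
      using ci by (simp add: T.l_distr)
  next
    fix a x y assume "a \<in> carrier R" "x \<in> carrier (img_module f R T)" "y \<in> carrier (img_module f R T)"
    then show "a \<odot>\<^bsub>img_module f R T\<^esub> (x \<oplus>\<^bsub>img_module f R T\<^esub> y) = a \<odot>\<^bsub>img_module f R T\<^esub> x \<oplus>\<^bsub>img_module f R T\<^esub> a \<odot>\<^bsub>img_module f R T\<^esub> y"
      using ci by (simp add: T.r_distr)
  next
    fix a b x assume "a \<in> carrier R" "b \<in> carrier R" "x \<in> carrier (img_module f R T)"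
    then show "(a \<otimes>\<^bsub>R\<^esub> b) \<odot>\<^bsub>img_module f R T\<^esub> x = a \<odot>\<^bsub>img_module f R T\<^esub> (b \<odot>\<^bsub>img_module f R T\<^esub> x)"
      using ci by (simp add: T.m_assoc)
  next
    fix x assume "x \<in> carrier (img_module f R T)"
    then show "\<one>\<^bsub>R\<^esub> \<odot>\<^bsub>img_module f R T\<^esub> x = x" using ci by simp
  qed
qed

context
  fixes R :: "'r ring" and T :: "'t ring" and f :: "'r \<Rightarrow> 't" and M :: "('r,'m) module"
  assumes R: "cring R" and T: "cring T" and f: "f \<in> ring_hom R T" and M: "module R M"
begin

interpretation R: cring R by (rule R)
interpretation T: cring T by (rule T)
interpretation M: module R M by (rule M)
interpretation h: ring_hom_cring R T f by (intro ring_hom_cringI R T f)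

abbreviation "RB \<equiv> restrict_scalars f T"
abbreviation "NB \<equiv> base_change R T f M"
abbreviation "clsB \<equiv> tensor_class R M RB"
abbreviation "phiB s \<equiv> (\<lambda>(m::'m,t::'t). (m, s \<otimes>\<^bsub>T\<^esub> t))"

lemmas RBm = rs_module[OF R T f]
lemmas NM = N_module[OF R T f M]
lemmas N_smult_class' = N_smult_class[OF R T f M]

lemma MAG: "abelian_group M" using M unfolding module_def by blast

lemma part1:
  assumes a: "a \<in> carrier R" and H: "\<forall>x\<in>carrier M. \<exists>k::nat. (a [^]\<^bsub>R\<^esub> k) \<odot>\<^bsub>M\<^esub> x = \<zero>\<^bsub>M\<^esub>"
  shows "\<forall>U\<in>carrier NB. \<exists>k::nat. (f a [^]\<^bsub>T\<^esub> k) \<odot>\<^bsub>NB\<^esub> U = \<zero>\<^bsub>NB\<^esub>"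
proof
  fix U assume U: "U \<in> carrier NB"
  then obtain g where g: "g \<in> TF M RB" "U = clsB g" by (rule N_cases[OF R T f M])
  let ?D = "{z. g z \<noteq> 0}"
  have fD: "finite ?D" by (rule fsupp_on_fin[OF g(1)])
  have Dsub: "\<And>z. z \<in> ?D \<Longrightarrow> fst z \<in> carrier M \<and> snd z \<in> carrier T"
    using fsupp_on_sub[OF g(1)] by (force simp: rs_carrier)
  define kk :: "'m \<times> 't \<Rightarrow> nat" where "kk z = (SOME k::nat. (a [^]\<^bsub>R\<^esub> k) \<odot>\<^bsub>M\<^esub> fst z = \<zero>\<^bsub>M\<^esub>)" for z
  have kk: "\<And>z. z \<in> ?D \<Longrightarrow> (a [^]\<^bsub>R\<^esub> kk z) \<odot>\<^bsub>M\<^esub> fst z = \<zero>\<^bsub>M\<^esub>"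
    unfolding kk_def by (rule someI_ex) (use H Dsub in blast)
  define K where "K = (\<Sum>z\<in>?D. kk z)"
  have kill: "(a [^]\<^bsub>R\<^esub> K) \<odot>\<^bsub>M\<^esub> fst z = \<zero>\<^bsub>M\<^esub>" if z: "z \<in> ?D" for z
  proof -
    have le: "kk z \<le> K" unfolding K_def by (rule member_le_sum[OF z _ fD]) auto
    have "a [^]\<^bsub>R\<^esub> K = a [^]\<^bsub>R\<^esub> (K - kk z) \<otimes>\<^bsub>R\<^esub> a [^]\<^bsub>R\<^esub> kk z"
      using le a by (simp add: R.nat_pow_mult)
    then show ?thesis using kk[OF z] Dsub[OF z] a by (simp add: M.smult_assoc1)
  qed
  let ?s = "f a [^]\<^bsub>T\<^esub> K"
  have s: "?s \<in> carrier T" using a by simp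
  have sf: "?s = f (a [^]\<^bsub>R\<^esub> K)" using a by simp
  have "(\<lambda>y. \<Sum>z\<in>?D. g z * delta (phiB ?s z) y) \<in> TK R M RB"
  proof (rule zspan_sum[OF fD])
    fix z assume z: "z \<in> ?D"
    obtain m t where zz: "z = (m, t)" by fastforce
    have mt: "m \<in> carrier M" "t \<in> carrier T" using Dsub[OF z] zz by auto
    have aK: "a [^]\<^bsub>R\<^esub> K \<in> carrier R" using a by simp
    have g3: "(\<lambda>y. delta ((a [^]\<^bsub>R\<^esub> K) \<odot>\<^bsub>M\<^esub> m, t) y - delta (m, (a [^]\<^bsub>R\<^esub> K) \<odot>\<^bsub>RB\<^esub> t) y) \<in> TK R M RB"
      by (rule gen3[OF M RBm aK mt(1)]) (simp add: rs_carrier mt)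
    have z0: "delta (\<zero>\<^bsub>M\<^esub>, t) \<in> TK R M RB" by (rule delta_zero_left[OF M RBm]) (simp add: rs_carrier mt)
    have "(\<lambda>y. delta (\<zero>\<^bsub>M\<^esub>, t) y - (delta (\<zero>\<^bsub>M\<^esub>, t) y - delta (m, (a [^]\<^bsub>R\<^esub> K) \<odot>\<^bsub>RB\<^esub> t) y)) \<in> TK R M RB"
      using zspan_minus[OF z0 g3] kill[OF z] zz by simp
    then have "delta (phiB ?s z) \<in> TK R M RB"
      by (rule zspan_cong) (simp add: zz sf)
    then show "(\<lambda>y. g z * delta (phiB ?s z) y) \<in> TK R M RB" by (rule zspan_smul)
  qed
  then have "push (phiB ?s) g \<in> TK R M RB"
    by (rule zspan_cong) (simp add: push_delta_sum[OF fD order_refl])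
  then have "clsB (push (phiB ?s) g) = clsB (\<lambda>_. 0)"
    using class_zero_iff[OF M RBm phi_fsupp[OF R T f M s g(1)]] by simp
  then show "\<exists>k::nat. (f a [^]\<^bsub>T\<^esub> k) \<odot>\<^bsub>NB\<^esub> U = \<zero>\<^bsub>NB\<^esub>"
    using N_smult_class'[OF s g(1)] g(2) by auto
qed

lemma red:
  assumes a: "a \<in> carrier R" and H: "f a \<in> Ann_loc T NB"
    and m: "m \<in> carrier M" and t: "t \<in> carrier T"
  shows "\<exists>k::nat. delta (m, f (a [^]\<^bsub>R\<^esub> k) \<otimes>\<^bsub>T\<^esub> t) \<in> TK R M RB"
proof -
  have fa: "f a \<in> carrier T" using a by simp
  have H': "\<forall>U\<in>carrier NB. \<exists>k::nat. (f a [^]\<^bsub>T\<^esub> k) \<odot>\<^bsub>NB\<^esub> U = \<zero>\<^bsub>NB\<^esub>"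
    using Ann_loc_iff[OF NM fa] H by simp
  have d: "delta (m, t) \<in> TF M RB" by (rule fsupp_delta) (simp add: m t rs_carrier)
  have "clsB (delta (m, t)) \<in> carrier NB" using class_in[OF M RBm d] by simp
  then obtain k :: nat where k: "(f a [^]\<^bsub>T\<^esub> k) \<odot>\<^bsub>NB\<^esub> clsB (delta (m, t)) = \<zero>\<^bsub>NB\<^esub>" using H' by blast
  have s: "f a [^]\<^bsub>T\<^esub> k \<in> carrier T" using fa by simp
  have "clsB (push (phiB (f a [^]\<^bsub>T\<^esub> k)) (delta (m, t))) = clsB (\<lambda>_. 0)"
    using k N_smult_class'[OF s d] by simp
  then have "push (phiB (f a [^]\<^bsub>T\<^esub> k)) (delta (m, t)) \<in> TK R M RB"
    using class_zero_iff[OF M RBm phi_fsupp[OF R T f M s d]] by simp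
  then show ?thesis using a by (auto simp: push_delta)
qed

lemma pure_case:
  assumes P: "pure_ext TYPE('m) R T f" and x: "x \<in> carrier M" and b: "b \<in> carrier R"
    and d: "delta (x, f b) \<in> TK R M RB"
  shows "b \<odot>\<^bsub>M\<^esub> x = \<zero>\<^bsub>M\<^esub>"
proof -
  let ?S = "self_module R"
  have S: "module R ?S" by (rule self_module[OF R])
  have inj: "inj_on (tensor_map R M RB id f) (carrier (tensor R M ?S))"
    using P M unfolding pure_ext_def by blast
  have lin_id: "linear_map R M M id" unfolding linear_map_def by simp
  have lin_f: "linear_map R ?S RB f" unfolding linear_map_def
    by (auto simp: rs_carrier h.hom_mult)
  have d1: "delta (x, b) \<in> TF M ?S" by (rule fsupp_delta) (simp add: x b)
  have c1: "tensor_class R M ?S (delta (x, b)) \<in> carrier (tensor R M ?S)"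
    using class_in[OF M S d1] by simp
  have c0: "tensor_class R M ?S (\<lambda>_. 0) \<in> carrier (tensor R M ?S)"
    using class_in[OF M S fsupp_zero] by simp
  have "tensor_map R M RB id f (tensor_class R M ?S (delta (x, b))) = clsB (delta (x, f b))"
    using tmap_class[OF M S M RBm lin_id lin_f d1] by (simp add: push_delta)
  also have "\<dots> = clsB (\<lambda>_. 0)"
    using class_zero_iff[OF M RBm] d fsupp_delta[of "(x, f b)" "carrier M \<times> carrier RB"] x b by (simp add: rs_carrier)
  also have "\<dots> = tensor_map R M RB id f (tensor_class R M ?S (\<lambda>_. 0))"
    using tmap_class[OF M S M RBm lin_id lin_f fsupp_zero] by (simp add: push_zero)
  finally have "tensor_class R M ?S (delta (x, b)) = tensor_class R M ?S (\<lambda>_. 0)"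
    using inj c1 c0 by (simp add: inj_on_def)
  then have dK: "delta (x, b) \<in> TK R M ?S" using class_zero_iff[OF M S d1] by simp
  have "(\<lambda>(m, r). r \<odot>\<^bsub>M\<^esub> m) (x, b) \<in> {\<zero>\<^bsub>M\<^esub>}"
  proof (rule ev_K_delta[OF M S MAG])
    show "\<And>z. z \<in> carrier M \<times> carrier ?S \<Longrightarrow> (\<lambda>(m, r). r \<odot>\<^bsub>M\<^esub> m) z \<in> carrier M" by auto
  qed (use x b dK in \<open>auto simp: M.smult_r_distr M.smult_l_distr M.smult_assoc1[symmetric] R.m_comm M.r_neg M.minus_eq M.ag_cancel2\<close>)
  then show ?thesis by simp
qed

lemma flat_case:
  assumes F: "flat TYPE('t) R M" and inj: "inj_on f (carrier R)" and x: "x \<in> carrier M" and b: "b \<in> carrier R"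
    and d: "delta (x, f b) \<in> TK R M RB"
  shows "b \<odot>\<^bsub>M\<^esub> x = \<zero>\<^bsub>M\<^esub>"
proof -
  let ?P = "img_module f R T"
  have P: "module R ?P" by (rule img_module[OF R T f])
  have lin_id: "linear_map R ?P RB id" unfolding linear_map_def by (auto simp: rs_carrier)
  have lin_idM: "linear_map R M M id" unfolding linear_map_def by simp
  have injt: "inj_on (tensor_map R RB M id id) (carrier (tensor R ?P M))"
    using F[unfolded flat_def, rule_format, of ?P RB id] P RBm lin_id by simp
  have dsw: "delta (f b, x) \<in> TK R RB M"
    using swap_K[OF M RBm d] by (simp add: push_delta)
  have d1: "delta (f b, x) \<in> TF ?P M" by (rule fsupp_delta) (simp add: x b)
  have c1: "tensor_class R ?P M (delta (f b, x)) \<in> carrier (tensor R ?P M)"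
    using class_in[OF P M d1] by simp
  have c0: "tensor_class R ?P M (\<lambda>_. 0) \<in> carrier (tensor R ?P M)"
    using class_in[OF P M fsupp_zero] by simp
  have "tensor_map R RB M id id (tensor_class R ?P M (delta (f b, x))) = tensor_class R RB M (delta (f b, x))"
    using tmap_class[OF P M RBm M lin_id lin_idM d1] by (simp add: push_delta)
  also have "\<dots> = tensor_class R RB M (\<lambda>_. 0)"
    using class_zero_iff[OF RBm M] dsw fsupp_delta[of "(f b, x)" "carrier RB \<times> carrier M"] x b by (simp add: rs_carrier)
  also have "\<dots> = tensor_map R RB M id id (tensor_class R ?P M (\<lambda>_. 0))"
    using tmap_class[OF P M RBm M lin_id lin_idM fsupp_zero] by (simp add: push_zero)
  finally have "tensor_class R ?P M (delta (f b, x)) = tensor_class R ?P M (\<lambda>_. 0)"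
    using injt c1 c0 by (simp add: inj_on_def)
  then have dK: "delta (f b, x) \<in> TK R ?P M" using class_zero_iff[OF P M d1] by simp
  let ?g = "inv_into (carrier R) f"
  have gf: "\<And>r. r \<in> carrier R \<Longrightarrow> ?g (f r) = r" using inj by (simp add: inv_into_f_f)
  have "(\<lambda>(p, m). ?g p \<odot>\<^bsub>M\<^esub> m) (f b, x) \<in> {\<zero>\<^bsub>M\<^esub>}"
  proof (rule ev_K_delta[OF P M MAG])
    show "\<And>z. z \<in> carrier ?P \<times> carrier M \<Longrightarrow> (\<lambda>(p, m). ?g p \<odot>\<^bsub>M\<^esub> m) z \<in> carrier M"
      by (auto simp: gf)
  next
    fix a a' m assume "a \<in> carrier ?P" "a' \<in> carrier ?P" "m \<in> carrier M"
    then obtain r r' where rr: "r \<in> carrier R" "r' \<in> carrier R" "a = f r" "a' = f r'" "m \<in> carrier M" by auto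
    have e: "?g (f r \<oplus>\<^bsub>T\<^esub> f r') = r \<oplus>\<^bsub>R\<^esub> r'" using gf[of "r \<oplus>\<^bsub>R\<^esub> r'"] rr by simp
    from rr show "(\<lambda>(p, m). ?g p \<odot>\<^bsub>M\<^esub> m) (a \<oplus>\<^bsub>?P\<^esub> a', m) \<ominus>\<^bsub>M\<^esub> (\<lambda>(p, m). ?g p \<odot>\<^bsub>M\<^esub> m) (a, m) \<ominus>\<^bsub>M\<^esub> (\<lambda>(p, m). ?g p \<odot>\<^bsub>M\<^esub> m) (a', m) \<in> {\<zero>\<^bsub>M\<^esub>}"
      by (simp add: e gf M.smult_l_distr M.r_neg M.minus_eq M.ag_cancel2)
  next
    fix a m m' assume "a \<in> carrier ?P" "m \<in> carrier M" "m' \<in> carrier M"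
    then obtain r where rr: "r \<in> carrier R" "a = f r" "m \<in> carrier M" "m' \<in> carrier M" by auto
    then show "(\<lambda>(p, m). ?g p \<odot>\<^bsub>M\<^esub> m) (a, m \<oplus>\<^bsub>M\<^esub> m') \<ominus>\<^bsub>M\<^esub> (\<lambda>(p, m). ?g p \<odot>\<^bsub>M\<^esub> m) (a, m) \<ominus>\<^bsub>M\<^esub> (\<lambda>(p, m). ?g p \<odot>\<^bsub>M\<^esub> m) (a, m') \<in> {\<zero>\<^bsub>M\<^esub>}"
      by (simp add: gf M.smult_r_distr M.r_neg M.minus_eq M.ag_cancel2)
  next
    fix s a m assume "s \<in> carrier R" "a \<in> carrier ?P" "m \<in> carrier M"
    then obtain r where rr: "s \<in> carrier R" "r \<in> carrier R" "a = f r" "m \<in> carrier M" by auto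
    have e: "?g (f s \<otimes>\<^bsub>T\<^esub> f r) = s \<otimes>\<^bsub>R\<^esub> r" using gf[of "s \<otimes>\<^bsub>R\<^esub> r"] rr by simp
    from rr show "(\<lambda>(p, m). ?g p \<odot>\<^bsub>M\<^esub> m) (s \<odot>\<^bsub>?P\<^esub> a, m) \<ominus>\<^bsub>M\<^esub> (\<lambda>(p, m). ?g p \<odot>\<^bsub>M\<^esub> m) (a, s \<odot>\<^bsub>M\<^esub> m) \<in> {\<zero>\<^bsub>M\<^esub>}"
      by (simp add: e gf M.smult_assoc1 R.m_comm M.r_neg M.minus_eq)
  qed (use x b dK in \<open>auto simp: M.minus_eq\<close>)
  then show ?thesis using gf[OF b] by simp
qed

end


definition rmn :: "nat \<Rightarrow> 'x list \<Rightarrow> 'x list" where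
  "rmn p xs = take p xs @ drop (Suc p) xs"

definition swp :: "nat \<Rightarrow> 'x list \<Rightarrow> 'x list" where
  "swp i xs = xs[i := xs ! Suc i, Suc i := xs ! i]"

fun mv :: "nat \<Rightarrow> nat \<Rightarrow> 'x list \<Rightarrow> 'x list" where
  "mv i 0 xs = xs"
| "mv i (Suc m) xs = swp (i + m) (mv i m xs)"

lemma length_rmn[simp]: "p < length xs \<Longrightarrow> length (rmn p xs) = length xs - 1"
  by (simp add: rmn_def)

lemma nth_rmn: "p < length xs \<Longrightarrow> q < length xs - 1 \<Longrightarrow> rmn p xs ! q = (if q < p then xs ! q else xs ! Suc q)"
  by (cases "q < p") (simp_all add: rmn_def nth_append)

lemma set_rmn: "set (rmn p xs) \<subseteq> set xs"
  unfolding rmn_def by (auto dest: in_set_takeD in_set_dropD)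

lemma rmn_decomp: "p < length xs \<Longrightarrow> xs = take p xs @ xs ! p # drop (Suc p) xs"
  by (rule id_take_nth_drop)

lemma distinct_rmn: "distinct xs \<Longrightarrow> p < length xs \<Longrightarrow> distinct (rmn p xs)"
proof -
  assume d: "distinct xs" and p: "p < length xs"
  have "distinct (take p xs @ xs ! p # drop (Suc p) xs)" using d rmn_decomp[OF p] by simp
  then show ?thesis unfolding rmn_def by simp
qed

lemma rmn_notin: "distinct xs \<Longrightarrow> p < length xs \<Longrightarrow> xs ! p \<notin> set (rmn p xs)"
proof -
  assume d: "distinct xs" and p: "p < length xs"
  have "distinct (take p xs @ xs ! p # drop (Suc p) xs)" using d rmn_decomp[OF p] by simp
  then show ?thesis unfolding rmn_def by simp
qed

lemma in_rmn: "l \<in> set xs \<Longrightarrow> l \<noteq> xs ! p \<Longrightarrow> p < length xs \<Longrightarrow> l \<in> set (rmn p xs)"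
proof -
  assume l: "l \<in> set xs" "l \<noteq> xs ! p" and p: "p < length xs"
  have "set xs = set (take p xs) \<union> insert (xs ! p) (set (drop (Suc p) xs))"
    using arg_cong[OF rmn_decomp[OF p], of set] by simp
  then show ?thesis using l unfolding rmn_def by auto
qed

lemma length_swp[simp]: "length (swp i xs) = length xs"
  by (simp add: swp_def)

lemma nth_swp: "Suc i < length xs \<Longrightarrow> q < length xs \<Longrightarrow>
  swp i xs ! q = (if q = i then xs ! Suc i else if q = Suc i then xs ! i else xs ! q)"
  by (auto simp: swp_def nth_list_update)

lemma length_mv[simp]: "length (mv i m xs) = length xs"
  by (induction m) auto

lemma nth_mv: "i + m < length xs \<Longrightarrow> q < length xs \<Longrightarrow>
  mv i m xs ! q = (if q < i \<or> q > i + m then xs ! q else if q = i + m then xs ! i else xs ! Suc q)"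
proof (induction m arbitrary: q)
  case 0 then show ?case by auto
next
  case (Suc m)
  have "mv i (Suc m) xs ! q = swp (i + m) (mv i m xs) ! q" by simp
  also have "\<dots> = (if q = i + m then mv i m xs ! Suc (i + m) else if q = Suc (i + m) then mv i m xs ! (i + m) else mv i m xs ! q)"
    using Suc.prems by (simp add: nth_swp)
  also have "\<dots> = (if q < i \<or> q > i + Suc m then xs ! q else if q = i + Suc m then xs ! i else xs ! Suc q)"
    using Suc.prems Suc.IH by auto
  finally show ?case .
qed

lemma rmn_swp_lt: "p < i \<Longrightarrow> Suc i < length xs \<Longrightarrow> rmn p (swp i xs) = swp (i - 1) (rmn p xs)"
  by (rule nth_equalityI) (auto simp: nth_rmn nth_swp less_Suc_eq)

lemma rmn_swp_gt: "Suc i < p \<Longrightarrow> p < length xs \<Longrightarrow> rmn p (swp i xs) = swp i (rmn p xs)"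
  by (rule nth_equalityI) (auto simp: nth_rmn nth_swp less_Suc_eq)

lemma rmn_swp_i: "Suc i < length xs \<Longrightarrow> rmn i (swp i xs) = rmn (Suc i) xs"
  by (rule nth_equalityI) (auto simp: nth_rmn nth_swp less_Suc_eq)

lemma rmn_swp_Si: "Suc i < length xs \<Longrightarrow> rmn (Suc i) (swp i xs) = rmn i xs"
  by (rule nth_equalityI) (auto simp: nth_rmn nth_swp less_Suc_eq)

lemma rmn_mv: "i < j \<Longrightarrow> j < length xs \<Longrightarrow> xs ! i = xs ! j \<Longrightarrow> rmn i xs = mv i (j - Suc i) (rmn j xs)"
  by (rule nth_equalityI) (auto simp: nth_rmn nth_mv)

lemma set_swp_sub: "Suc i < length xs \<Longrightarrow> set (swp i xs) \<subseteq> set xs"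
proof
  fix x assume i: "Suc i < length xs" and "x \<in> set (swp i xs)"
  then obtain q where q: "q < length xs" "swp i xs ! q = x" by (auto simp: in_set_conv_nth)
  then show "x \<in> set xs" using i by (auto simp: nth_swp split: if_splits)
qed

lemma set_mv_sub: "i + m < length xs \<Longrightarrow> set (mv i m xs) \<subseteq> set xs"
proof (induction m)
  case 0 then show ?case by simp
next
  case (Suc m)
  then have "set (swp (i + m) (mv i m xs)) \<subseteq> set (mv i m xs)" by (intro set_swp_sub) simp
  then show ?case using Suc by auto
qed

definition sg :: "('a,'b) ring_scheme \<Rightarrow> nat \<Rightarrow> 'a \<Rightarrow> 'a" where
  "sg K p x = (if even p then x else \<ominus>\<^bsub>K\<^esub> x)"

fun dt :: "('a,'b) ring_scheme \<Rightarrow> ('l \<Rightarrow> 'a) list \<Rightarrow> 'l list \<Rightarrow> 'a" where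
  "dt K [] cs = \<one>\<^bsub>K\<^esub>"
| "dt K (w # ws) cs = finsum K (\<lambda>p. sg K p (w (cs ! p) \<otimes>\<^bsub>K\<^esub> dt K ws (rmn p cs))) {..<length cs}"

definition okr :: "('a,'b) ring_scheme \<Rightarrow> ('l \<Rightarrow> 'a) list \<Rightarrow> 'l list \<Rightarrow> bool" where
  "okr K ws cs \<longleftrightarrow> (\<forall>w\<in>set ws. \<forall>l\<in>set cs. w l \<in> carrier K)"

lemma okr_Cons: "okr K (w # ws) cs \<longleftrightarrow> (\<forall>l\<in>set cs. w l \<in> carrier K) \<and> okr K ws cs"
  by (auto simp: okr_def)

lemma okr_sub: "okr K ws cs \<Longrightarrow> set cs' \<subseteq> set cs \<Longrightarrow> okr K ws cs'"
  by (auto simp: okr_def)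

lemma okr_rmn: "okr K ws cs \<Longrightarrow> okr K ws (rmn p cs)"
  using okr_sub set_rmn by metis

context cring
begin

lemma sg_closed[simp]: "x \<in> carrier R \<Longrightarrow> sg R p x \<in> carrier R"
  by (simp add: sg_def)

lemma sg_0[simp]: "sg R 0 x = x"
  by (simp add: sg_def)

lemma sg_Suc: "x \<in> carrier R \<Longrightarrow> sg R (Suc p) x = \<ominus> sg R p x"
  by (simp add: sg_def minus_minus)

lemma sg_mult: "a \<in> carrier R \<Longrightarrow> x \<in> carrier R \<Longrightarrow> sg R p (a \<otimes> x) = a \<otimes> sg R p x"
  by (simp add: sg_def r_minus)

lemma sg_add: "x \<in> carrier R \<Longrightarrow> y \<in> carrier R \<Longrightarrow> sg R p (x \<oplus> y) = sg R p x \<oplus> sg R p y"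
  by (simp add: sg_def minus_add)

lemma sg_zero[simp]: "sg R p \<zero> = \<zero>"
  by (simp add: sg_def)

lemma sg_neg: "x \<in> carrier R \<Longrightarrow> sg R p (\<ominus> x) = \<ominus> sg R p x"
  by (simp add: sg_def)

lemma sg_sg: "x \<in> carrier R \<Longrightarrow> sg R p (sg R q x) = sg R (p + q) x"
  by (simp add: sg_def minus_minus)

lemma finsum_neg: "finite A \<Longrightarrow> f \<in> A \<rightarrow> carrier R \<Longrightarrow> finsum R (\<lambda>p. \<ominus> f p) A = \<ominus> finsum R f A"
proof (induction A rule: finite_induct)
  case empty then show ?case by simp
next
  case (insert x F)
  then show ?case by (simp add: Pi_def minus_add finsum_insert)
qed

lemma dt_closed: "okr R ws cs \<Longrightarrow> dt R ws cs \<in> carrier R"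
proof (induction ws arbitrary: cs)
  case Nil then show ?case by simp
next
  case (Cons w ws)
  have "\<And>p. p < length cs \<Longrightarrow> w (cs ! p) \<in> carrier R" using Cons.prems by (auto simp: okr_Cons)
  moreover have "\<And>p. dt R ws (rmn p cs) \<in> carrier R"
    using Cons.IH okr_rmn[of R ws cs] Cons.prems by (simp add: okr_Cons)
  ultimately show ?case by (auto intro!: finsum_closed)
qed

lemma dt_Cons_closed: "okr R (w # ws) cs \<Longrightarrow> p < length cs \<Longrightarrow> sg R p (w (cs ! p) \<otimes> dt R ws (rmn p cs)) \<in> carrier R"
  using dt_closed[of ws "rmn p cs"] okr_rmn[of R ws cs p] by (auto simp: okr_Cons)

definition tsw :: "nat \<Rightarrow> nat \<Rightarrow> nat" where
  "tsw i p = (if p = i then Suc i else if p = Suc i then i else p)"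

lemma tsw_image: "Suc i < k \<Longrightarrow> tsw i ` {..<k} = {..<k}"
proof
  assume "Suc i < k"
  then show "tsw i ` {..<k} \<subseteq> {..<k}" by (auto simp: tsw_def)
  show "{..<k} \<subseteq> tsw i ` {..<k}"
  proof
    fix p assume "p \<in> {..<k}"
    then have "tsw i (tsw i p) = p" "tsw i p \<in> {..<k}" using \<open>Suc i < k\<close> by (auto simp: tsw_def)
    then show "p \<in> tsw i ` {..<k}" by (metis imageI)
  qed
qed

lemma tsw_inj: "inj_on (tsw i) A"
  by (rule inj_onI) (auto simp: tsw_def split: if_splits)

lemma dt_swap: "length ws = length cs \<Longrightarrow> okr R ws cs \<Longrightarrow> Suc i < length cs \<Longrightarrow> dt R ws (swp i cs) = \<ominus> dt R ws cs"
proof (induction ws arbitrary: cs i)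
  case Nil then show ?case by simp
next
  case (Cons w ws)
  let ?k = "length cs"
  let ?F = "\<lambda>p. sg R p (w (cs ! p) \<otimes> dt R ws (rmn p cs))"
  let ?cs = "swp i cs"
  have ok': "okr R (w # ws) ?cs" using okr_sub[OF Cons.prems(2) set_swp_sub[OF Cons.prems(3)]] .
  have Fc: "?F \<in> {..<?k} \<rightarrow> carrier R" using dt_Cons_closed[OF Cons.prems(2)] by auto
  have key: "sg R p (w (?cs ! p) \<otimes> dt R ws (rmn p ?cs)) = \<ominus> ?F (tsw i p)" if p: "p < ?k" for p
  proof -
    have wc: "\<And>q. q < ?k \<Longrightarrow> w (cs ! q) \<in> carrier R" using Cons.prems(2) by (auto simp: okr_Cons)
    have okw: "okr R ws cs" using Cons.prems(2) by (simp add: okr_Cons)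
    have lws: "length ws = ?k - 1" using Cons.prems(1) by simp
    consider "p < i" | "p = i" | "p = Suc i" | "Suc i < p" by linarith
    then show ?thesis
    proof cases
      case 1
      have "dt R ws (rmn p ?cs) = dt R ws (swp (i - 1) (rmn p cs))" using 1 Cons.prems(3) by (simp add: rmn_swp_lt)
      also have "\<dots> = \<ominus> dt R ws (rmn p cs)"
        by (rule Cons.IH) (use 1 Cons.prems p lws okw in \<open>auto intro: okr_rmn\<close>)
      finally show ?thesis using 1 p Cons.prems(3) wc[OF p] dt_closed[OF okr_rmn[OF okw]]
        by (simp add: nth_swp tsw_def r_minus sg_neg)
    next
      case 4
      have "dt R ws (rmn p ?cs) = dt R ws (swp i (rmn p cs))" using 4 p by (simp add: rmn_swp_gt)
      also have "\<dots> = \<ominus> dt R ws (rmn p cs)"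
        by (rule Cons.IH) (use 4 Cons.prems p lws okw in \<open>auto intro: okr_rmn\<close>)
      finally show ?thesis using 4 p Cons.prems(3) wc[OF p] dt_closed[OF okr_rmn[OF okw]]
        by (simp add: nth_swp tsw_def r_minus sg_neg)
    next
      case 2
      then show ?thesis using Cons.prems(3) wc dt_closed[OF okr_rmn[OF okw]]
        by (simp add: nth_swp tsw_def rmn_swp_i sg_Suc minus_minus)
    next
      case 3
      then show ?thesis using Cons.prems(3) wc dt_closed[OF okr_rmn[OF okw]]
        by (simp add: nth_swp tsw_def rmn_swp_Si sg_Suc)
    qed
  qed
  have tk: "\<And>p. p < ?k \<Longrightarrow> tsw i p < ?k" using Cons.prems(3) by (auto simp: tsw_def)
  have "dt R (w # ws) ?cs = finsum R (\<lambda>p. sg R p (w (?cs ! p) \<otimes> dt R ws (rmn p ?cs))) {..<?k}" by simp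
  also have "\<dots> = finsum R (\<lambda>p. \<ominus> ?F (tsw i p)) {..<?k}"
  proof (rule finsum_cong'[OF refl])
    show "(\<lambda>p. \<ominus> ?F (tsw i p)) \<in> {..<?k} \<rightarrow> carrier R" using Fc tk by (auto intro!: a_inv_closed)
    fix p assume "p \<in> {..<?k}" then show "sg R p (w (?cs ! p) \<otimes> dt R ws (rmn p ?cs)) = \<ominus> ?F (tsw i p)"
      using key by simp
  qed
  also have "\<dots> = \<ominus> finsum R (\<lambda>p. ?F (tsw i p)) {..<?k}"
    by (rule finsum_neg) (use Fc tk in auto)
  also have "finsum R (\<lambda>p. ?F (tsw i p)) {..<?k} = finsum R ?F (tsw i ` {..<?k})"
    by (rule add.finprod_reindex[symmetric]) (use Fc tsw_image[OF Cons.prems(3)] tsw_inj in auto)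
  also have "\<dots> = finsum R ?F {..<?k}" using tsw_image[OF Cons.prems(3)] by simp
  finally show ?case by simp
qed

lemma dt_mv: "length ws = length cs \<Longrightarrow> okr R ws cs \<Longrightarrow> i + m < length cs \<Longrightarrow> dt R ws (mv i m cs) = sg R m (dt R ws cs)"
proof (induction m)
  case 0 then show ?case by simp
next
  case (Suc m)
  have ok: "okr R ws (mv i m cs)" using okr_sub[OF Suc.prems(2) set_mv_sub] Suc.prems(3) by simp
  have "dt R ws (mv i (Suc m) cs) = dt R ws (swp (i + m) (mv i m cs))" by simp
  also have "\<dots> = \<ominus> dt R ws (mv i m cs)" by (rule dt_swap) (use Suc.prems ok in auto)
  also have "\<dots> = \<ominus> sg R m (dt R ws cs)" using Suc by simp
  finally show ?case using dt_closed[OF Suc.prems(2)] by (simp add: sg_Suc)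
qed

lemma dt_rep: "length ws = length cs \<Longrightarrow> okr R ws cs \<Longrightarrow> i < j \<Longrightarrow> j < length cs \<Longrightarrow> cs ! i = cs ! j \<Longrightarrow> dt R ws cs = \<zero>"
proof (induction ws arbitrary: cs i j)
  case Nil then show ?case by simp
next
  case (Cons w ws)
  let ?k = "length cs"
  let ?F = "\<lambda>p. sg R p (w (cs ! p) \<otimes> dt R ws (rmn p cs))"
  have okw: "okr R ws cs" using Cons.prems(2) by (simp add: okr_Cons)
  have wc: "\<And>q. q < ?k \<Longrightarrow> w (cs ! q) \<in> carrier R" using Cons.prems(2) by (auto simp: okr_Cons)
  have lws: "length ws = ?k - 1" using Cons.prems(1) by simp
  have Fc: "?F \<in> {..<?k} \<rightarrow> carrier R" using dt_Cons_closed[OF Cons.prems(2)] by auto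
  have rest: "?F p = \<zero>" if p: "p < ?k" "p \<noteq> i" "p \<noteq> j" for p
  proof -
    have "dt R ws (rmn p cs) = \<zero>"
    proof -
      consider "p < i" | "i < p \<and> p < j" | "j < p" using p by linarith
      then show ?thesis
      proof cases
        case 1
        show ?thesis by (rule Cons.IH[of _ "i - 1" "j - 1"]) (use 1 Cons.prems p lws okw in \<open>auto simp: nth_rmn intro: okr_rmn\<close>)
      next
        case 2
        show ?thesis by (rule Cons.IH[of _ i "j - 1"]) (use 2 Cons.prems p lws okw in \<open>auto simp: nth_rmn intro: okr_rmn\<close>)
      next
        case 3
        show ?thesis by (rule Cons.IH[of _ i j]) (use 3 Cons.prems p lws okw in \<open>auto simp: nth_rmn intro: okr_rmn\<close>)
      qed
    qed
    then show ?thesis using wc[OF p(1)] by simp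
  qed
  have Di: "dt R ws (rmn i cs) = sg R (j - Suc i) (dt R ws (rmn j cs))"
  proof -
    have "rmn i cs = mv i (j - Suc i) (rmn j cs)" by (rule rmn_mv) (use Cons.prems in auto)
    moreover have "dt R ws (mv i (j - Suc i) (rmn j cs)) = sg R (j - Suc i) (dt R ws (rmn j cs))"
      by (rule dt_mv) (use Cons.prems lws okw in \<open>auto intro: okr_rmn\<close>)
    ultimately show ?thesis by simp
  qed
  let ?X = "w (cs ! j) \<otimes> dt R ws (rmn j cs)"
  have Xc: "?X \<in> carrier R" using wc Cons.prems dt_closed[OF okr_rmn[OF okw]] by auto
  have Fi: "?F i = sg R (j - 1) ?X"
  proof -
    have "?F i = sg R i (w (cs ! j) \<otimes> sg R (j - Suc i) (dt R ws (rmn j cs)))" using Di Cons.prems(5) by simp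
    also have "\<dots> = sg R i (sg R (j - Suc i) ?X)"
      using wc Cons.prems dt_closed[OF okr_rmn[OF okw]] by (simp add: sg_mult)
    also have "\<dots> = sg R (j - 1) ?X" using Xc Cons.prems(3) by (simp add: sg_sg)
    finally show ?thesis .
  qed
  have Fj: "?F j = \<ominus> sg R (j - 1) ?X"
  proof -
    have "j = Suc (j - 1)" using Cons.prems(3) by simp
    then have "sg R j ?X = sg R (Suc (j - 1)) ?X" by simp
    then show ?thesis using Xc by (simp add: sg_Suc)
  qed
  have A: "{..<?k} = insert i (insert j ({..<?k} - {i, j}))" using Cons.prems by auto
  have Fic: "?F i \<in> carrier R" by (rule funcset_mem[OF Fc]) (use Cons.prems in simp)
  have Fjc: "?F j \<in> carrier R" by (rule funcset_mem[OF Fc]) (use Cons.prems in simp)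
  have FcS: "?F \<in> insert j ({..<?k} - {i, j}) \<rightarrow> carrier R" by (rule subsetD[OF Pi_anti_mono Fc]) (use Cons.prems in auto)
  have FcS': "?F \<in> ({..<?k} - {i, j}) \<rightarrow> carrier R" using FcS by auto
  have "dt R (w # ws) cs = finsum R ?F (insert i (insert j ({..<?k} - {i, j})))" using A by simp
  also have "\<dots> = ?F i \<oplus> finsum R ?F (insert j ({..<?k} - {i, j}))"
    by (rule finsum_insert[OF _ _ FcS Fic]) (use Cons.prems in auto)
  also have "finsum R ?F (insert j ({..<?k} - {i, j})) = ?F j \<oplus> finsum R ?F ({..<?k} - {i, j})"
    by (rule finsum_insert[OF _ _ FcS' Fjc]) auto
  also have "finsum R ?F ({..<?k} - {i, j}) = \<zero>"
    by (rule add.finprod_one_eqI) (use rest in auto)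
  finally show ?case using Fi Fj Xc by (simp add: r_neg)
qed

lemma dt_pos: "length ws1 = length ws2 \<Longrightarrow> length cs1 = length cs2 \<Longrightarrow> okr R ws1 cs1 \<Longrightarrow> okr R ws2 cs2 \<Longrightarrow>
  (\<And>i q. i < length ws1 \<Longrightarrow> q < length cs1 \<Longrightarrow> (ws1 ! i) (cs1 ! q) = (ws2 ! i) (cs2 ! q)) \<Longrightarrow>
  dt R ws1 cs1 = dt R ws2 cs2"
proof (induction ws1 arbitrary: ws2 cs1 cs2)
  case Nil then show ?case by simp
next
  case (Cons w ws)
  obtain w2 ws2' where ws2: "ws2 = w2 # ws2'" using Cons.prems(1) by (cases ws2) auto
  have sub: "dt R ws (rmn p cs1) = dt R ws2' (rmn p cs2)" if p: "p < length cs1" for p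
  proof (rule Cons.IH)
    show "length ws = length ws2'" using Cons.prems ws2 by simp
    show "length (rmn p cs1) = length (rmn p cs2)" using Cons.prems p by simp
    show "okr R ws (rmn p cs1)" "okr R ws2' (rmn p cs2)" using Cons.prems ws2 by (auto simp: okr_Cons intro: okr_rmn)
    fix i q assume "i < length ws" "q < length (rmn p cs1)"
    then show "(ws ! i) (rmn p cs1 ! q) = (ws2' ! i) (rmn p cs2 ! q)"
      using Cons.prems(5)[of "Suc i"] Cons.prems(2) p ws2 by (auto simp: nth_rmn)
  qed
  have "dt R (w # ws) cs1 = finsum R (\<lambda>p. sg R p (w2 (cs2 ! p) \<otimes> dt R ws2' (rmn p cs2))) {..<length cs2}"
  proof (simp, rule finsum_cong')
    show "{..<length cs1} = {..<length cs2}" using Cons.prems by simp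
    show "(\<lambda>p. sg R p (w2 (cs2 ! p) \<otimes> dt R ws2' (rmn p cs2))) \<in> {..<length cs2} \<rightarrow> carrier R"
      using dt_Cons_closed[of w2 ws2' cs2] Cons.prems(4) ws2 by auto
    fix p assume "p \<in> {..<length cs2}"
    then show "sg R p (w (cs1 ! p) \<otimes> dt R ws (rmn p cs1)) = sg R p (w2 (cs2 ! p) \<otimes> dt R ws2' (rmn p cs2))"
      using sub Cons.prems(5)[of 0] Cons.prems(2) ws2 by simp
  qed
  then show ?case using ws2 by simp
qed

lemma okr_upd: "okr R ws cs \<Longrightarrow> (\<And>w. w \<in> set ws \<Longrightarrow> g w \<in> carrier R) \<Longrightarrow> okr R (map (\<lambda>w. w(l := g w)) ws) cs"
  by (auto simp: okr_def)

lemma dt_upd_notin: "l \<notin> set cs \<Longrightarrow> okr R ws cs \<Longrightarrow> dt R (map (\<lambda>w. w(l := g w)) ws) cs = dt R ws cs"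
proof (rule dt_pos)
  assume l: "l \<notin> set cs" and ok: "okr R ws cs"
  show "okr R (map (\<lambda>w. w(l := g w)) ws) cs" using ok l by (auto simp: okr_def)
  fix i q assume "i < length (map (\<lambda>w. w(l := g w)) ws)" "q < length cs"
  then show "(map (\<lambda>w. w(l := g w)) ws ! i) (cs ! q) = (ws ! i) (cs ! q)" using l by auto
qed auto

lemma dt_lin_add:
  assumes "length ws = length cs" "distinct cs" "l \<in> set cs" "okr R ws cs"
    "\<And>w. w \<in> set ws \<Longrightarrow> F1 w \<in> carrier R" "\<And>w. w \<in> set ws \<Longrightarrow> F2 w \<in> carrier R"
  shows "dt R (map (\<lambda>w. w(l := F1 w \<oplus> F2 w)) ws) cs = dt R (map (\<lambda>w. w(l := F1 w)) ws) cs \<oplus> dt R (map (\<lambda>w. w(l := F2 w)) ws) cs"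
  using assms
proof (induction ws arbitrary: cs)
  case Nil then show ?case by simp
next
  case (Cons w ws)
  let ?k = "length cs"
  let ?U = "\<lambda>g. map (\<lambda>w. w(l := g w)) ws"
  have okw: "okr R ws cs" using Cons.prems(4) by (simp add: okr_Cons)
  have wc: "\<And>q. q < ?k \<Longrightarrow> w (cs ! q) \<in> carrier R" using Cons.prems(4) by (auto simp: okr_Cons)
  have F1c: "\<And>v. v \<in> set ws \<Longrightarrow> F1 v \<in> carrier R" and F2c: "\<And>v. v \<in> set ws \<Longrightarrow> F2 v \<in> carrier R"
    using Cons.prems by auto
  have F1w: "F1 w \<in> carrier R" and F2w: "F2 w \<in> carrier R" using Cons.prems by auto
  have D1c: "\<And>p. dt R (?U F1) (rmn p cs) \<in> carrier R"
    by (rule dt_closed, rule okr_upd[OF okr_rmn[OF okw]]) (use F1c in auto)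
  have D2c: "\<And>p. dt R (?U F2) (rmn p cs) \<in> carrier R"
    by (rule dt_closed, rule okr_upd[OF okr_rmn[OF okw]]) (use F2c in auto)
  let ?t = "\<lambda>g p. sg R p ((w(l := g w)) (cs ! p) \<otimes> dt R (?U g) (rmn p cs))"
  have ec: "\<And>g p. g w \<in> carrier R \<Longrightarrow> p < ?k \<Longrightarrow> (w(l := g w)) (cs ! p) \<in> carrier R"
    using wc by auto
  have t1c: "?t F1 \<in> {..<?k} \<rightarrow> carrier R" using ec[of F1, OF F1w] D1c by auto
  have t2c: "?t F2 \<in> {..<?k} \<rightarrow> carrier R" using ec[of F2, OF F2w] D2c by auto
  have tmq: "?t (\<lambda>v. F1 v \<oplus> F2 v) p = ?t F1 p \<oplus> ?t F2 p" if p: "p < ?k" for p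
  proof (cases "cs ! p = l")
    case True
    have nl: "l \<notin> set (rmn p cs)" using rmn_notin[OF Cons.prems(2) p] True by simp
    have D: "\<And>g. dt R (?U g) (rmn p cs) = dt R ws (rmn p cs)"
      by (rule dt_upd_notin[OF nl okr_rmn[OF okw]])
    have Dc: "dt R ws (rmn p cs) \<in> carrier R" by (rule dt_closed[OF okr_rmn[OF okw]])
    show ?thesis using True D Dc F1w F2w by (simp add: l_distr sg_add)
  next
    case False
    have IH: "dt R (?U (\<lambda>v. F1 v \<oplus> F2 v)) (rmn p cs) = dt R (?U F1) (rmn p cs) \<oplus> dt R (?U F2) (rmn p cs)"
    proof (rule Cons.IH)
      show "length ws = length (rmn p cs)" using Cons.prems(1) p by simp
      show "distinct (rmn p cs)" by (rule distinct_rmn[OF Cons.prems(2) p])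
      show "l \<in> set (rmn p cs)" by (rule in_rmn[OF Cons.prems(3)]) (use False p in auto)
      show "okr R ws (rmn p cs)" by (rule okr_rmn[OF okw])
    qed (use F1c F2c in auto)
    show ?thesis using False IH wc[OF p] D1c D2c by (simp add: r_distr sg_add)
  qed
  have "dt R (map (\<lambda>w. w(l := F1 w \<oplus> F2 w)) (w # ws)) cs = finsum R (?t (\<lambda>v. F1 v \<oplus> F2 v)) {..<?k}" by simp
  also have "\<dots> = finsum R (\<lambda>p. ?t F1 p \<oplus> ?t F2 p) {..<?k}"
    by (rule finsum_cong'[OF refl]) (use tmq t1c t2c in auto)
  also have "\<dots> = finsum R (?t F1) {..<?k} \<oplus> finsum R (?t F2) {..<?k}"
    by (rule finsum_addf[OF t1c t2c])
  finally have X: "dt R (map (\<lambda>w. w(l := F1 w \<oplus> F2 w)) (w # ws)) cs = finsum R (?t F1) {..<?k} \<oplus> finsum R (?t F2) {..<?k}" .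
  have e1: "dt R (map (\<lambda>w. w(l := F1 w)) (w # ws)) cs = finsum R (?t F1) {..<?k}" by simp
  have e2: "dt R (map (\<lambda>w. w(l := F2 w)) (w # ws)) cs = finsum R (?t F2) {..<?k}" by simp
  show ?case by (subst e1, subst e2, rule X)
qed

lemma dt_lin_scale:
  assumes "length ws = length cs" "distinct cs" "l \<in> set cs" "okr R ws cs" "c \<in> carrier R"
    "\<And>w. w \<in> set ws \<Longrightarrow> F w \<in> carrier R"
  shows "dt R (map (\<lambda>w. w(l := c \<otimes> F w)) ws) cs = c \<otimes> dt R (map (\<lambda>w. w(l := F w)) ws) cs"
  using assms
proof (induction ws arbitrary: cs)
  case Nil then show ?case by simp
next
  case (Cons w ws)
  let ?k = "length cs"
  let ?U = "\<lambda>g. map (\<lambda>w. w(l := g w)) ws"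
  have okw: "okr R ws cs" using Cons.prems(4) by (simp add: okr_Cons)
  have wc: "\<And>q. q < ?k \<Longrightarrow> w (cs ! q) \<in> carrier R" using Cons.prems(4) by (auto simp: okr_Cons)
  have Fc: "\<And>v. v \<in> set ws \<Longrightarrow> F v \<in> carrier R" using Cons.prems by auto
  have Fw: "F w \<in> carrier R" using Cons.prems by auto
  have c: "c \<in> carrier R" by (rule Cons.prems(5))
  have DFc: "\<And>p. dt R (?U F) (rmn p cs) \<in> carrier R"
    by (rule dt_closed, rule okr_upd[OF okr_rmn[OF okw]]) (use Fc in auto)
  let ?t = "\<lambda>g p. sg R p ((w(l := g w)) (cs ! p) \<otimes> dt R (?U g) (rmn p cs))"
  have tc: "?t F \<in> {..<?k} \<rightarrow> carrier R" using wc Fw DFc by auto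
  have tmq: "?t (\<lambda>v. c \<otimes> F v) p = c \<otimes> ?t F p" if p: "p < ?k" for p
  proof (cases "cs ! p = l")
    case True
    have nl: "l \<notin> set (rmn p cs)" using rmn_notin[OF Cons.prems(2) p] True by simp
    have D: "\<And>g. dt R (?U g) (rmn p cs) = dt R ws (rmn p cs)"
      by (rule dt_upd_notin[OF nl okr_rmn[OF okw]])
    have Dc: "dt R ws (rmn p cs) \<in> carrier R" by (rule dt_closed[OF okr_rmn[OF okw]])
    show ?thesis using True D Dc Fw c by (simp add: m_assoc sg_mult)
  next
    case False
    have IH: "dt R (?U (\<lambda>v. c \<otimes> F v)) (rmn p cs) = c \<otimes> dt R (?U F) (rmn p cs)"
    proof (rule Cons.IH)
      show "length ws = length (rmn p cs)" using Cons.prems(1) p by simp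
      show "distinct (rmn p cs)" by (rule distinct_rmn[OF Cons.prems(2) p])
      show "l \<in> set (rmn p cs)" by (rule in_rmn[OF Cons.prems(3)]) (use False p in auto)
      show "okr R ws (rmn p cs)" by (rule okr_rmn[OF okw])
    qed (use Fc c in auto)
    show ?thesis using False IH wc[OF p] DFc c by (simp add: m_lcomm sg_mult)
  qed
  have "dt R (map (\<lambda>w. w(l := c \<otimes> F w)) (w # ws)) cs = finsum R (?t (\<lambda>v. c \<otimes> F v)) {..<?k}" by simp
  also have "\<dots> = finsum R (\<lambda>p. c \<otimes> ?t F p) {..<?k}"
    by (rule finsum_cong'[OF refl]) (use tmq tc c in auto)
  also have "\<dots> = c \<otimes> finsum R (?t F) {..<?k}"
    by (rule finsum_rdistr[symmetric]) (use tc c in auto)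
  finally have X: "dt R (map (\<lambda>w. w(l := c \<otimes> F w)) (w # ws)) cs = c \<otimes> finsum R (?t F) {..<?k}" .
  have e1: "dt R (map (\<lambda>w. w(l := F w)) (w # ws)) cs = finsum R (?t F) {..<?k}" by simp
  show ?case by (subst e1, rule X)
qed

lemma dt_lin_zero:
  assumes "length ws = length cs" "distinct cs" "l \<in> set cs" "okr R ws cs"
  shows "dt R (map (\<lambda>w. w(l := \<zero>)) ws) cs = \<zero>"
proof -
  have "dt R (map (\<lambda>w. w(l := \<zero> \<otimes> \<zero>)) ws) cs = \<zero> \<otimes> dt R (map (\<lambda>w. w(l := \<zero>)) ws) cs"
    by (rule dt_lin_scale[OF assms]) auto
  moreover have "dt R (map (\<lambda>w. w(l := \<zero>)) ws) cs \<in> carrier R"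
    by (rule dt_closed, rule okr_upd[OF assms(4)]) auto
  ultimately show ?thesis by simp
qed

lemma dt_lin_sum:
  assumes "length ws = length cs" "distinct cs" "l \<in> set cs" "okr R ws cs" "finite I"
    "\<And>s w. s \<in> I \<Longrightarrow> w \<in> set ws \<Longrightarrow> G s w \<in> carrier R"
  shows "dt R (map (\<lambda>w. w(l := finsum R (\<lambda>s. G s w) I)) ws) cs = finsum R (\<lambda>s. dt R (map (\<lambda>w. w(l := G s w)) ws) cs) I"
  using assms(5,6)
proof (induction I rule: finite_induct)
  case empty then show ?case by (simp only: finsum_empty dt_lin_zero[OF assms(1-4)])
next
  case (insert a I)
  have Gc: "\<And>s w. s \<in> I \<Longrightarrow> w \<in> set ws \<Longrightarrow> G s w \<in> carrier R" using insert by auto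
  have Ga: "\<And>w. w \<in> set ws \<Longrightarrow> G a w \<in> carrier R" using insert by auto
  have meq: "map (\<lambda>w. w(l := finsum R (\<lambda>s. G s w) (insert a I))) ws = map (\<lambda>w. w(l := G a w \<oplus> finsum R (\<lambda>s. G s w) I)) ws"
    by (rule map_cong[OF refl]) (use insert Gc Ga in \<open>simp add: finsum_insert Pi_def\<close>)
  have ladd: "dt R (map (\<lambda>w. w(l := G a w \<oplus> finsum R (\<lambda>s. G s w) I)) ws) cs =
      dt R (map (\<lambda>w. w(l := G a w)) ws) cs \<oplus> dt R (map (\<lambda>w. w(l := finsum R (\<lambda>s. G s w) I)) ws) cs"
    by (rule dt_lin_add[OF assms(1-4)]) (use Ga Gc in \<open>auto intro!: finsum_closed\<close>)
  have "dt R (map (\<lambda>w. w(l := finsum R (\<lambda>s. G s w) (insert a I))) ws) cs =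
      dt R (map (\<lambda>w. w(l := G a w)) ws) cs \<oplus> dt R (map (\<lambda>w. w(l := finsum R (\<lambda>s. G s w) I)) ws) cs"
    by (subst meq, rule ladd)
  also have "\<dots> = dt R (map (\<lambda>w. w(l := G a w)) ws) cs \<oplus> finsum R (\<lambda>s. dt R (map (\<lambda>w. w(l := G s w)) ws) cs) I"
  proof -
    have IH': "dt R (map (\<lambda>w. w(l := finsum R (\<lambda>s. G s w) I)) ws) cs = finsum R (\<lambda>s. dt R (map (\<lambda>w. w(l := G s w)) ws) cs) I"
      by (rule insert.IH) (use Gc in auto)
    show ?thesis by (simp only: IH')
  qed
  also have "\<dots> = finsum R (\<lambda>s. dt R (map (\<lambda>w. w(l := G s w)) ws) cs) (insert a I)"
  proof (rule finsum_insert[symmetric])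
    show "finite I" "a \<notin> I" using insert by auto
    show "(\<lambda>s. dt R (map (\<lambda>w. w(l := G s w)) ws) cs) \<in> I \<rightarrow> carrier R"
      using Gc by (auto intro!: dt_closed okr_upd[OF assms(4)])
    show "dt R (map (\<lambda>w. w(l := G a w)) ws) cs \<in> carrier R"
      using Ga by (auto intro!: dt_closed okr_upd[OF assms(4)])
  qed
  finally show ?case .
qed

lemma dt_upd_other:
  assumes len: "length ws = length cs" and d: "distinct cs" and l: "l \<in> set cs" and s: "s \<in> set cs"
    and sl: "s \<noteq> l" and ok: "okr R ws cs"
  shows "dt R (map (\<lambda>w. w(l := w s)) ws) cs = \<zero>"
proof -
  obtain q where q: "q < length cs" "cs ! q = l" using l by (auto simp: in_set_conv_nth)
  obtain q' where q': "q' < length cs" "cs ! q' = s" using s by (auto simp: in_set_conv_nth)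
  have qq: "q \<noteq> q'" using q q' sl by auto
  let ?cs = "cs[q := s]"
  have ok2: "okr R ws ?cs" by (rule okr_sub[OF ok]) (use s in \<open>auto dest: subsetD[OF set_update_subset_insert]\<close>)
  have "dt R (map (\<lambda>w. w(l := w s)) ws) cs = dt R ws ?cs"
  proof (rule dt_pos)
    show "okr R (map (\<lambda>w. w(l := w s)) ws) cs" by (rule okr_upd[OF ok]) (use ok s in \<open>auto simp: okr_def\<close>)
    fix i r assume i: "i < length (map (\<lambda>w. w(l := w s)) ws)" and r: "r < length cs"
    show "(map (\<lambda>w. w(l := w s)) ws ! i) (cs ! r) = (ws ! i) (?cs ! r)"
    proof (cases "r = q")
      case True then show ?thesis using i q by simp
    next
      case False
      then have "cs ! r \<noteq> l" using q r d by (metis nth_eq_iff_index_eq)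
      then show ?thesis using i r False by simp
    qed
  qed (use ok2 in auto)
  also have "\<dots> = \<zero>"
  proof (rule dt_rep[of _ _ "min q q'" "max q q'"])
    show "length ws = length ?cs" using len by simp
    show "okr R ws ?cs" by (rule ok2)
    show "min q q' < max q q'" using qq by simp
    show "max q q' < length ?cs" using q q' by simp
    show "?cs ! min q q' = ?cs ! max q q'" using q q' qq by (cases "q < q'") (auto simp: min_def max_def)
  qed
  finally show ?thesis .
qed

lemma dt_cramer:
  assumes len: "length ws = length cs" and d: "distinct cs" and l: "l \<in> set cs" and ok: "okr R ws cs"
    and y: "\<And>s. s \<in> set cs \<Longrightarrow> y s \<in> carrier R"
    and H: "\<And>w. w \<in> set ws \<Longrightarrow> finsum R (\<lambda>s. y s \<otimes> w s) (set cs) = \<zero>"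
  shows "y l \<otimes> dt R ws cs = \<zero>"
proof -
  have wc: "\<And>w s. w \<in> set ws \<Longrightarrow> s \<in> set cs \<Longrightarrow> w s \<in> carrier R" using ok by (auto simp: okr_def)
  have "\<zero> = dt R (map (\<lambda>w. w(l := \<zero>)) ws) cs" using dt_lin_zero[OF len d l ok] by simp
  also have "\<dots> = dt R (map (\<lambda>w. w(l := finsum R (\<lambda>s. y s \<otimes> w s) (set cs))) ws) cs"
  proof -
    have meq: "map (\<lambda>w. w(l := \<zero>)) ws = map (\<lambda>w. w(l := finsum R (\<lambda>s. y s \<otimes> w s) (set cs))) ws"
      by (rule map_cong[OF refl]) (simp add: H)
    show ?thesis by (simp only: meq)
  qed
  also have "\<dots> = finsum R (\<lambda>s. dt R (map (\<lambda>w. w(l := y s \<otimes> w s)) ws) cs) (set cs)"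
    by (rule dt_lin_sum[OF len d l ok]) (use y wc in auto)
  also have "\<dots> = finsum R (\<lambda>s. y s \<otimes> dt R (map (\<lambda>w. w(l := w s)) ws) cs) (set cs)"
  proof (rule finsum_cong'[OF refl])
    show "(\<lambda>s. y s \<otimes> dt R (map (\<lambda>w. w(l := w s)) ws) cs) \<in> set cs \<rightarrow> carrier R"
      using y wc by (auto intro!: dt_closed okr_upd[OF ok])
    fix s assume s: "s \<in> set cs"
    show "dt R (map (\<lambda>w. w(l := y s \<otimes> w s)) ws) cs = y s \<otimes> dt R (map (\<lambda>w. w(l := w s)) ws) cs"
      by (rule dt_lin_scale[OF len d l ok]) (use y wc s in auto)
  qed
  also have "\<dots> = y l \<otimes> dt R ws cs"
  proof -
    let ?h = "\<lambda>s. y s \<otimes> dt R (map (\<lambda>w. w(l := w s)) ws) cs"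
    have hc: "?h \<in> set cs \<rightarrow> carrier R" using y wc by (auto intro!: dt_closed okr_upd[OF ok])
    have sc: "set cs = insert l (set cs - {l})" using l by auto
    have hc': "?h \<in> (set cs - {l}) \<rightarrow> carrier R" using hc by auto
    have hl: "?h l \<in> carrier R" by (rule funcset_mem[OF hc l])
    have "finsum R ?h (insert l (set cs - {l})) = ?h l \<oplus> finsum R ?h (set cs - {l})"
      by (rule finsum_insert[OF _ _ hc' hl]) auto
    then have "finsum R ?h (set cs) = ?h l \<oplus> finsum R ?h (set cs - {l})" using sc by simp
    also have "finsum R ?h (set cs - {l}) = \<zero>"
      by (rule add.finprod_one_eqI) (use dt_upd_other[OF len d l _ _ ok] y in auto)
    also have "?h l \<oplus> \<zero> = ?h l" by (rule r_zero[OF hl])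
    also have "map (\<lambda>w. w(l := w l)) ws = ws" by simp
    finally show ?thesis .
  qed
  finally show ?thesis by simp
qed

end

lemma (in ring_hom_cring) dt_hom: "okr R ws cs \<Longrightarrow> h (dt R ws cs) = dt S (map (\<lambda>w l. h (w l)) ws) cs"
proof (induction ws arbitrary: cs)
  case Nil then show ?case by simp
next
  case (Cons w ws)
  have okw: "okr R ws cs" using Cons.prems by (simp add: okr_Cons)
  have wc: "\<And>q. q < length cs \<Longrightarrow> w (cs ! q) \<in> carrier R" using Cons.prems by (auto simp: okr_Cons)
  have Dc: "\<And>p. dt R ws (rmn p cs) \<in> carrier R" by (rule R.dt_closed[OF okr_rmn[OF okw]])
  have sgh: "\<And>p x. x \<in> carrier R \<Longrightarrow> h (sg R p x) = sg S p (h x)" by (simp add: sg_def)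
  have "h (dt R (w # ws) cs) = finsum S (\<lambda>p. h (sg R p (w (cs ! p) \<otimes> dt R ws (rmn p cs)))) {..<length cs}"
    using wc Dc by (simp add: Pi_def comp_def)
  also have "\<dots> = finsum S (\<lambda>p. sg S p (h (w (cs ! p)) \<otimes>\<^bsub>S\<^esub> dt S (map (\<lambda>w l. h (w l)) ws) (rmn p cs))) {..<length cs}"
  proof (rule S.finsum_cong'[OF refl])
    show "(\<lambda>p. sg S p (h (w (cs ! p)) \<otimes>\<^bsub>S\<^esub> dt S (map (\<lambda>w l. h (w l)) ws) (rmn p cs))) \<in> {..<length cs} \<rightarrow> carrier S"
    proof
      fix p assume p: "p \<in> {..<length cs}"
      have "dt S (map (\<lambda>w l. h (w l)) ws) (rmn p cs) = h (dt R ws (rmn p cs))" using Cons.IH[OF okr_rmn[OF okw]] by simp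
      then show "sg S p (h (w (cs ! p)) \<otimes>\<^bsub>S\<^esub> dt S (map (\<lambda>w l. h (w l)) ws) (rmn p cs)) \<in> carrier S"
        using wc p Dc by simp
    qed
    fix p assume p: "p \<in> {..<length cs}"
    show "h (sg R p (w (cs ! p) \<otimes> dt R ws (rmn p cs))) = sg S p (h (w (cs ! p)) \<otimes>\<^bsub>S\<^esub> dt S (map (\<lambda>w l. h (w l)) ws) (rmn p cs))"
      using wc p Dc Cons.IH[OF okr_rmn[OF okw]] sgh by simp
  qed
  finally show ?case by simp
qed


lemma (in module) smult_minus_l:
  "A \<in> carrier R \<Longrightarrow> B \<in> carrier R \<Longrightarrow> m \<in> carrier M \<Longrightarrow>
   (A \<ominus> B) \<odot>\<^bsub>M\<^esub> m = A \<odot>\<^bsub>M\<^esub> m \<ominus>\<^bsub>M\<^esub> B \<odot>\<^bsub>M\<^esub> m"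
  by (simp add: R.minus_eq smult_l_distr smult_l_minus M.minus_eq)

lemma (in abelian_group) minus3: "x \<in> carrier G \<Longrightarrow> y \<in> carrier G \<Longrightarrow> z \<in> carrier G \<Longrightarrow> x \<ominus> y \<ominus> z = x \<ominus> (y \<oplus> z)"
  by (simp add: minus_eq minus_add a_assoc)

lemma (in abelian_group) minus_minus2: "x \<in> carrier G \<Longrightarrow> y \<in> carrier G \<Longrightarrow> x \<ominus> (x \<ominus> y) = y"
proof -
  assume x: "x \<in> carrier G" and y: "y \<in> carrier G"
  have "x \<ominus> (x \<ominus> y) = (x \<oplus> \<ominus> x) \<oplus> y" using x y by (simp add: minus_eq minus_add minus_minus a_assoc)
  then show ?thesis using x y by (simp add: r_neg)
qed

lemma (in module) mid2: "U1 \<in> carrier R \<Longrightarrow> U2 \<in> carrier R \<Longrightarrow> c \<in> carrier R \<Longrightarrow> m \<in> carrier M \<Longrightarrow>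
  (U1 \<otimes> c) \<odot>\<^bsub>M\<^esub> m \<ominus>\<^bsub>M\<^esub> (U2 \<otimes> c) \<odot>\<^bsub>M\<^esub> m = ((U1 \<ominus> U2) \<otimes> c) \<odot>\<^bsub>M\<^esub> m"
proof -
  assume U1: "U1 \<in> carrier R" and U2: "U2 \<in> carrier R" and c: "c \<in> carrier R" and m: "m \<in> carrier M"
  have "(U1 \<ominus> U2) \<otimes> c = U1 \<otimes> c \<ominus> U2 \<otimes> c" using U1 U2 c by (simp add: R.minus_eq R.l_distr R.l_minus)
  then show ?thesis using U1 U2 c m by (simp add: smult_minus_l)
qed

lemma (in module) mid1: "U1 \<in> carrier R \<Longrightarrow> U2 \<in> carrier R \<Longrightarrow> U3 \<in> carrier R \<Longrightarrow> c \<in> carrier R \<Longrightarrow> m \<in> carrier M \<Longrightarrow>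
  (U1 \<otimes> c) \<odot>\<^bsub>M\<^esub> m \<ominus>\<^bsub>M\<^esub> (U2 \<otimes> c) \<odot>\<^bsub>M\<^esub> m \<ominus>\<^bsub>M\<^esub> (U3 \<otimes> c) \<odot>\<^bsub>M\<^esub> m = ((U1 \<ominus> (U2 \<oplus> U3)) \<otimes> c) \<odot>\<^bsub>M\<^esub> m"
proof -
  assume U1: "U1 \<in> carrier R" and U2: "U2 \<in> carrier R" and U3: "U3 \<in> carrier R" and c: "c \<in> carrier R" and m: "m \<in> carrier M"
  have "((U1 \<ominus> (U2 \<oplus> U3)) \<otimes> c) \<odot>\<^bsub>M\<^esub> m = (U1 \<otimes> c) \<odot>\<^bsub>M\<^esub> m \<ominus>\<^bsub>M\<^esub> ((U2 \<oplus> U3) \<otimes> c) \<odot>\<^bsub>M\<^esub> m"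
    using mid2[of U1 "U2 \<oplus> U3" c m] U1 U2 U3 c m by simp
  also have "((U2 \<oplus> U3) \<otimes> c) \<odot>\<^bsub>M\<^esub> m = (U2 \<otimes> c) \<odot>\<^bsub>M\<^esub> m \<oplus>\<^bsub>M\<^esub> (U3 \<otimes> c) \<odot>\<^bsub>M\<^esub> m"
    using U2 U3 c m by (simp add: R.l_distr smult_l_distr)
  finally show ?thesis using U1 U2 U3 c m by (simp add: M.minus3)
qed

lemma (in module) mid3: "U1 \<in> carrier R \<Longrightarrow> U2 \<in> carrier R \<Longrightarrow> c \<in> carrier R \<Longrightarrow> m \<in> carrier M \<Longrightarrow>
  (U1 \<otimes> c) \<odot>\<^bsub>M\<^esub> m \<ominus>\<^bsub>M\<^esub> ((U1 \<ominus> U2) \<otimes> c) \<odot>\<^bsub>M\<^esub> m = (U2 \<otimes> c) \<odot>\<^bsub>M\<^esub> m"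
  using mid2[symmetric] by (simp add: M.minus_minus2)

context
  fixes R :: "'r ring" and T :: "'t ring" and f :: "'r \<Rightarrow> 't" and M :: "('r,'m) module"
    and a :: 'r and S :: "'t set"
  assumes R: "cring R" and T: "cring T" and f: "f \<in> ring_hom R T" and M: "module R M"
    and a: "a \<in> carrier R" and S: "finite S" "S \<subseteq> carrier T"
    and gen: "\<And>t. t \<in> carrier T \<Longrightarrow> \<exists>c. c \<in> S \<rightarrow> carrier R \<and> t = finsum T (\<lambda>s. f (c s) \<otimes>\<^bsub>T\<^esub> s) S"
    and inj: "inj_on f (carrier R)"
begin

interpretation R: cring R by (rule R)
interpretation T: cring T by (rule T)
interpretation M: module R M by (rule M)
interpretation h: ring_hom_cring R T f by (intro ring_hom_cringI R T f)

definition "Tor = {m \<in> carrier M. \<exists>j::nat. (a [^]\<^bsub>R\<^esub> j) \<odot>\<^bsub>M\<^esub> m = \<zero>\<^bsub>M\<^esub>}"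
definition "Null c \<longleftrightarrow> (\<forall>m\<in>carrier M. c \<odot>\<^bsub>M\<^esub> m \<in> Tor)"
definition "cv w \<longleftrightarrow> (\<forall>s\<in>S. w s \<in> carrier R)"
definition "val w = finsum T (\<lambda>s. f (w s) \<otimes>\<^bsub>T\<^esub> s) S"
definition "Rel = {w. cv w \<and> val w = \<zero>\<^bsub>T\<^esub>}"
definition "crd t = (SOME w. cv w \<and> t = val w)"

lemma Tor_sub: "Tor \<subseteq> carrier M" by (auto simp: Tor_def)

lemma Tor_zero: "\<zero>\<^bsub>M\<^esub> \<in> Tor" unfolding Tor_def by (auto intro!: exI[of _ 0])

lemma apow_mult: "(a [^]\<^bsub>R\<^esub> ((i::nat) + j)) \<odot>\<^bsub>M\<^esub> m = (a [^]\<^bsub>R\<^esub> i) \<odot>\<^bsub>M\<^esub> ((a [^]\<^bsub>R\<^esub> (j::nat)) \<odot>\<^bsub>M\<^esub> m)" if "m \<in> carrier M" for i j m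
  using that a by (simp add: R.nat_pow_mult[symmetric] M.smult_assoc1)

lemma Tor_add: "x \<in> Tor \<Longrightarrow> y \<in> Tor \<Longrightarrow> x \<oplus>\<^bsub>M\<^esub> y \<in> Tor"
proof -
  assume "x \<in> Tor" "y \<in> Tor"
  then obtain i j :: nat where x: "x \<in> carrier M" "(a [^]\<^bsub>R\<^esub> i) \<odot>\<^bsub>M\<^esub> x = \<zero>\<^bsub>M\<^esub>"
    and y: "y \<in> carrier M" "(a [^]\<^bsub>R\<^esub> j) \<odot>\<^bsub>M\<^esub> y = \<zero>\<^bsub>M\<^esub>" by (auto simp: Tor_def)
  have "(a [^]\<^bsub>R\<^esub> (j + i)) \<odot>\<^bsub>M\<^esub> x = \<zero>\<^bsub>M\<^esub>" using apow_mult[OF x(1)] x a by simp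
  moreover have "(a [^]\<^bsub>R\<^esub> (i + j)) \<odot>\<^bsub>M\<^esub> y = \<zero>\<^bsub>M\<^esub>" using apow_mult[OF y(1)] y a by simp
  ultimately have "(a [^]\<^bsub>R\<^esub> (i + j)) \<odot>\<^bsub>M\<^esub> (x \<oplus>\<^bsub>M\<^esub> y) = \<zero>\<^bsub>M\<^esub>"
    using x y a by (simp add: M.smult_r_distr add.commute)
  then show ?thesis using x y by (auto simp: Tor_def)
qed

lemma Tor_smult: "r \<in> carrier R \<Longrightarrow> x \<in> Tor \<Longrightarrow> r \<odot>\<^bsub>M\<^esub> x \<in> Tor"
proof -
  assume r: "r \<in> carrier R" and "x \<in> Tor"
  then obtain i :: nat where x: "x \<in> carrier M" "(a [^]\<^bsub>R\<^esub> i) \<odot>\<^bsub>M\<^esub> x = \<zero>\<^bsub>M\<^esub>" by (auto simp: Tor_def)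
  have ai: "a [^]\<^bsub>R\<^esub> i \<in> carrier R" using a by simp
  have "(a [^]\<^bsub>R\<^esub> i) \<odot>\<^bsub>M\<^esub> (r \<odot>\<^bsub>M\<^esub> x) = (a [^]\<^bsub>R\<^esub> i \<otimes>\<^bsub>R\<^esub> r) \<odot>\<^bsub>M\<^esub> x"
    using r x ai by (simp add: M.smult_assoc1)
  also have "\<dots> = (r \<otimes>\<^bsub>R\<^esub> a [^]\<^bsub>R\<^esub> i) \<odot>\<^bsub>M\<^esub> x" using R.m_comm[OF r ai] by simp
  also have "\<dots> = r \<odot>\<^bsub>M\<^esub> ((a [^]\<^bsub>R\<^esub> i) \<odot>\<^bsub>M\<^esub> x)" using r x ai by (simp add: M.smult_assoc1)
  finally have "(a [^]\<^bsub>R\<^esub> i) \<odot>\<^bsub>M\<^esub> (r \<odot>\<^bsub>M\<^esub> x) = r \<odot>\<^bsub>M\<^esub> ((a [^]\<^bsub>R\<^esub> i) \<odot>\<^bsub>M\<^esub> x)" .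
  then show ?thesis using x r by (auto simp: Tor_def)
qed

lemma Tor_neg: "x \<in> Tor \<Longrightarrow> \<ominus>\<^bsub>M\<^esub> x \<in> Tor"
proof -
  assume x: "x \<in> Tor"
  then have xc: "x \<in> carrier M" by (simp add: Tor_def)
  have "(\<ominus>\<^bsub>R\<^esub> \<one>\<^bsub>R\<^esub>) \<odot>\<^bsub>M\<^esub> x = \<ominus>\<^bsub>M\<^esub> x" using xc by (simp add: M.smult_l_minus)
  then show ?thesis using Tor_smult[OF _ x, of "\<ominus>\<^bsub>R\<^esub> \<one>\<^bsub>R\<^esub>"] by simp
qed

lemma Tor_minus: "x \<in> Tor \<Longrightarrow> y \<in> Tor \<Longrightarrow> x \<ominus>\<^bsub>M\<^esub> y \<in> Tor"
  by (simp add: M.minus_eq Tor_add Tor_neg)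

lemma Tor_sat: "m \<in> carrier M \<Longrightarrow> (a [^]\<^bsub>R\<^esub> (k::nat)) \<odot>\<^bsub>M\<^esub> m \<in> Tor \<Longrightarrow> m \<in> Tor"
proof -
  assume m: "m \<in> carrier M" and "(a [^]\<^bsub>R\<^esub> k) \<odot>\<^bsub>M\<^esub> m \<in> Tor"
  then obtain i :: nat where "(a [^]\<^bsub>R\<^esub> i) \<odot>\<^bsub>M\<^esub> ((a [^]\<^bsub>R\<^esub> k) \<odot>\<^bsub>M\<^esub> m) = \<zero>\<^bsub>M\<^esub>" by (auto simp: Tor_def)
  then have "(a [^]\<^bsub>R\<^esub> (i + k)) \<odot>\<^bsub>M\<^esub> m = \<zero>\<^bsub>M\<^esub>" using apow_mult[OF m] by simp
  then show ?thesis using m by (auto simp: Tor_def)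
qed

lemma val_closed: "cv w \<Longrightarrow> val w \<in> carrier T"
  unfolding val_def cv_def using S by (auto intro!: T.finsum_closed)

lemma crd: "t \<in> carrier T \<Longrightarrow> cv (crd t) \<and> t = val (crd t)"
proof -
  assume t: "t \<in> carrier T"
  obtain c where "c \<in> S \<rightarrow> carrier R" "t = finsum T (\<lambda>s. f (c s) \<otimes>\<^bsub>T\<^esub> s) S" using gen[OF t] by blast
  then have "\<exists>w. cv w \<and> t = val w" by (auto simp: cv_def val_def)
  then show ?thesis unfolding crd_def by (rule someI_ex)
qed

lemma val_minus: "cv u \<Longrightarrow> cv v \<Longrightarrow> val (\<lambda>s. u s \<ominus>\<^bsub>R\<^esub> v s) = val u \<ominus>\<^bsub>T\<^esub> val v"
proof -
  assume u: "cv u" and v: "cv v"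
  have uc: "(\<lambda>s. f (u s) \<otimes>\<^bsub>T\<^esub> s) \<in> S \<rightarrow> carrier T" and vc: "(\<lambda>s. \<ominus>\<^bsub>T\<^esub> (f (v s) \<otimes>\<^bsub>T\<^esub> s)) \<in> S \<rightarrow> carrier T"
    using u v S unfolding cv_def by auto
  have "val (\<lambda>s. u s \<ominus>\<^bsub>R\<^esub> v s) = finsum T (\<lambda>s. f (u s) \<otimes>\<^bsub>T\<^esub> s \<oplus>\<^bsub>T\<^esub> \<ominus>\<^bsub>T\<^esub> (f (v s) \<otimes>\<^bsub>T\<^esub> s)) S"
    unfolding val_def
    by (rule T.finsum_cong'[OF refl]) (use u v S in \<open>auto simp: cv_def R.minus_eq T.l_distr T.l_minus\<close>)
  also have "\<dots> = val u \<oplus>\<^bsub>T\<^esub> finsum T (\<lambda>s. \<ominus>\<^bsub>T\<^esub> (f (v s) \<otimes>\<^bsub>T\<^esub> s)) S"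
    unfolding val_def by (rule T.finsum_addf[OF uc vc])
  also have "finsum T (\<lambda>s. \<ominus>\<^bsub>T\<^esub> (f (v s) \<otimes>\<^bsub>T\<^esub> s)) S = \<ominus>\<^bsub>T\<^esub> val v"
    unfolding val_def by (rule T.finsum_neg[OF S(1)]) (use v S in \<open>auto simp: cv_def\<close>)
  finally show ?thesis by (simp add: T.minus_eq)
qed

lemma val_add: "cv u \<Longrightarrow> cv v \<Longrightarrow> val (\<lambda>s. u s \<oplus>\<^bsub>R\<^esub> v s) = val u \<oplus>\<^bsub>T\<^esub> val v"
proof -
  assume u: "cv u" and v: "cv v"
  have uc: "(\<lambda>s. f (u s) \<otimes>\<^bsub>T\<^esub> s) \<in> S \<rightarrow> carrier T" and vc: "(\<lambda>s. f (v s) \<otimes>\<^bsub>T\<^esub> s) \<in> S \<rightarrow> carrier T"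
    using u v S unfolding cv_def by auto
  have "val (\<lambda>s. u s \<oplus>\<^bsub>R\<^esub> v s) = finsum T (\<lambda>s. f (u s) \<otimes>\<^bsub>T\<^esub> s \<oplus>\<^bsub>T\<^esub> f (v s) \<otimes>\<^bsub>T\<^esub> s) S"
    unfolding val_def
    by (rule T.finsum_cong'[OF refl]) (use u v S in \<open>auto simp: cv_def T.l_distr\<close>)
  also have "\<dots> = val u \<oplus>\<^bsub>T\<^esub> val v" unfolding val_def by (rule T.finsum_addf[OF uc vc])
  finally show ?thesis .
qed

lemma val_scale: "r \<in> carrier R \<Longrightarrow> cv u \<Longrightarrow> val (\<lambda>s. r \<otimes>\<^bsub>R\<^esub> u s) = f r \<otimes>\<^bsub>T\<^esub> val u"
proof -
  assume r: "r \<in> carrier R" and u: "cv u"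
  have uc: "(\<lambda>s. f (u s) \<otimes>\<^bsub>T\<^esub> s) \<in> S \<rightarrow> carrier T" using u S unfolding cv_def by auto
  have "val (\<lambda>s. r \<otimes>\<^bsub>R\<^esub> u s) = finsum T (\<lambda>s. f r \<otimes>\<^bsub>T\<^esub> (f (u s) \<otimes>\<^bsub>T\<^esub> s)) S"
    unfolding val_def
    by (rule T.finsum_cong'[OF refl]) (use u S r in \<open>auto simp: cv_def T.m_assoc\<close>)
  also have "\<dots> = f r \<otimes>\<^bsub>T\<^esub> val u" unfolding val_def by (rule T.finsum_rdistr[symmetric]) (use S r uc in auto)
  finally show ?thesis .
qed

lemma rel_diff: "cv u \<Longrightarrow> cv v \<Longrightarrow> val u = val v \<Longrightarrow> (\<lambda>s. u s \<ominus>\<^bsub>R\<^esub> v s) \<in> Rel"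
  unfolding Rel_def using val_minus val_closed by (auto simp: cv_def T.r_neg T.minus_eq)

lemma minors_zero:
  assumes len: "length vs = length cs" and d: "distinct cs" and scs: "set cs = S" and vs: "set vs \<subseteq> Rel"
  shows "dt R vs cs = \<zero>\<^bsub>R\<^esub>"
proof -
  have okR: "okr R vs cs" using vs scs by (auto simp: okr_def Rel_def cv_def)
  let ?ws = "map (\<lambda>w l. f (w l)) vs"
  have hom: "f (dt R vs cs) = dt T ?ws cs" by (rule h.dt_hom[OF okR])
  have okT: "okr T ?ws cs" using okR by (auto simp: okr_def)
  have cr: "\<And>l. l \<in> S \<Longrightarrow> l \<otimes>\<^bsub>T\<^esub> dt T ?ws cs = \<zero>\<^bsub>T\<^esub>"
  proof (rule T.dt_cramer[OF _ d _ okT])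
    show "length ?ws = length cs" using len by simp
    fix l assume "l \<in> S" then show "l \<in> set cs" using scs by simp
  next
    fix s assume "s \<in> set cs" then show "s \<in> carrier T" using scs S by auto
  next
    fix w' assume "w' \<in> set ?ws"
    then obtain w where w: "w \<in> set vs" "w' = (\<lambda>l. f (w l))" by auto
    then have wR: "w \<in> Rel" using vs by auto
    have "finsum T (\<lambda>s. s \<otimes>\<^bsub>T\<^esub> w' s) (set cs) = val w"
      unfolding val_def scs using wR S w(2) by (intro T.finsum_cong') (auto simp: Rel_def cv_def T.m_comm)
    then show "finsum T (\<lambda>s. s \<otimes>\<^bsub>T\<^esub> w' s) (set cs) = \<zero>\<^bsub>T\<^esub>" using wR by (simp add: Rel_def)
  qed
  have Dc: "dt T ?ws cs \<in> carrier T" by (rule T.dt_closed[OF okT])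
  obtain c where c: "c \<in> S \<rightarrow> carrier R" "\<one>\<^bsub>T\<^esub> = finsum T (\<lambda>s. f (c s) \<otimes>\<^bsub>T\<^esub> s) S" using gen[OF T.one_closed] by blast
  have "dt T ?ws cs = finsum T (\<lambda>s. f (c s) \<otimes>\<^bsub>T\<^esub> s) S \<otimes>\<^bsub>T\<^esub> dt T ?ws cs" using c(2)[symmetric] Dc by simp
  also have "\<dots> = finsum T (\<lambda>s. f (c s) \<otimes>\<^bsub>T\<^esub> s \<otimes>\<^bsub>T\<^esub> dt T ?ws cs) S"
    by (rule T.finsum_ldistr) (use S c Dc in auto)
  also have "\<dots> = finsum T (\<lambda>s. \<zero>\<^bsub>T\<^esub>) S"
  proof (rule T.finsum_cong'[OF refl])
    show "(\<lambda>s. \<zero>\<^bsub>T\<^esub>) \<in> S \<rightarrow> carrier T" by simp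
    fix s assume s: "s \<in> S"
    have fc: "f (c s) \<in> carrier T" using c(1) s by auto
    have sc: "s \<in> carrier T" using S s by auto
    show "f (c s) \<otimes>\<^bsub>T\<^esub> s \<otimes>\<^bsub>T\<^esub> dt T ?ws cs = \<zero>\<^bsub>T\<^esub>"
      using fc sc Dc cr[OF s] by (simp add: T.m_assoc)
  qed
  also have "\<dots> = \<zero>\<^bsub>T\<^esub>" by simp
  finally have "f (dt R vs cs) = f \<zero>\<^bsub>R\<^esub>" using hom by simp
  then show ?thesis using inj_onD[OF inj _ R.dt_closed[OF okR] R.zero_closed] by blast
qed

context
  fixes c :: 'r and vs :: "('t \<Rightarrow> 'r) list" and cs :: "'t list" and j :: 't
  assumes c: "c \<in> carrier R" and vsR: "set vs \<subseteq> Rel" and len: "length vs = length cs"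
    and dcs: "distinct cs" and scs: "set cs \<subseteq> S" and j: "j \<in> S" and jn: "j \<notin> set cs"
    and Pk: "\<And>w. w \<in> Rel \<Longrightarrow> Null (dt R (w # vs) (j # cs) \<otimes>\<^bsub>R\<^esub> c)"
    and Htens: "\<And>m t. m \<in> carrier M \<Longrightarrow> t \<in> carrier T \<Longrightarrow>
        \<exists>k::nat. delta (m, f (a [^]\<^bsub>R\<^esub> k) \<otimes>\<^bsub>T\<^esub> t) \<in> TK R M (restrict_scalars f T)"
begin

definition "idx s = (SOME p. p < length (j # cs) \<and> (j # cs) ! p = s)"
definition "cof s = (if s \<in> set (j # cs) then sg R (idx s) (dt R vs (rmn (idx s) (j # cs))) else \<zero>\<^bsub>R\<^esub>)"
definition "LL w = finsum R (\<lambda>s. w s \<otimes>\<^bsub>R\<^esub> cof s) S"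
definition "bt z = (LL (crd (snd z)) \<otimes>\<^bsub>R\<^esub> c) \<odot>\<^bsub>M\<^esub> fst z"

lemma dcs': "distinct (j # cs)" using dcs jn by simp

lemma idx_nth: "p < length (j # cs) \<Longrightarrow> idx ((j # cs) ! p) = p"
proof -
  assume p: "p < length (j # cs)"
  have "\<exists>q. q < length (j # cs) \<and> (j # cs) ! q = (j # cs) ! p" using p by blast
  then have q: "idx ((j # cs) ! p) < length (j # cs) \<and> (j # cs) ! idx ((j # cs) ! p) = (j # cs) ! p"
    unfolding idx_def by (rule someI_ex)
  then show ?thesis using nth_eq_iff_index_eq[OF dcs' _ p] by blast
qed

lemma okvs: "okr R vs (j # cs)"
  using vsR scs j by (auto simp: okr_def Rel_def cv_def)

lemma cof_closed: "cof s \<in> carrier R"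
  unfolding cof_def using R.dt_closed[OF okr_rmn[OF okvs]] by simp

lemma cof_j: "cof j = dt R vs cs"
  using idx_nth[of 0] by (simp add: cof_def rmn_def)

lemma L_closed: "cv w \<Longrightarrow> LL w \<in> carrier R"
  unfolding LL_def cv_def using cof_closed by (auto intro!: R.finsum_closed)

lemma expand: "cv w \<Longrightarrow> dt R (w # vs) (j # cs) = LL w"
proof -
  assume w: "cv w"
  let ?cs = "j # cs"
  have wc: "\<And>s. s \<in> S \<Longrightarrow> w s \<in> carrier R" using w by (simp add: cv_def)
  have sub: "set ?cs \<subseteq> S" using scs j by auto
  have nthS: "\<And>p. p < length ?cs \<Longrightarrow> ?cs ! p \<in> S" using sub by (metis nth_mem subsetD)
  have "dt R (w # vs) ?cs = finsum R (\<lambda>p. sg R p (w (?cs ! p) \<otimes>\<^bsub>R\<^esub> dt R vs (rmn p ?cs))) {..<length ?cs}"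
    by (simp only: dt.simps)
  also have "\<dots> = finsum R (\<lambda>p. w (?cs ! p) \<otimes>\<^bsub>R\<^esub> cof (?cs ! p)) {..<length ?cs}"
  proof (rule R.finsum_cong'[OF refl])
    show "(\<lambda>p. w (?cs ! p) \<otimes>\<^bsub>R\<^esub> cof (?cs ! p)) \<in> {..<length ?cs} \<rightarrow> carrier R"
      using wc nthS cof_closed by (auto simp del: length_Cons)
    fix p assume p: "p \<in> {..<length ?cs}"
    have inS: "?cs ! p \<in> S" using nthS p by (auto simp del: length_Cons)
    have inset: "?cs ! p \<in> set ?cs" using p by (intro nth_mem) (auto simp del: length_Cons)
    show "sg R p (w (?cs ! p) \<otimes>\<^bsub>R\<^esub> dt R vs (rmn p ?cs)) = w (?cs ! p) \<otimes>\<^bsub>R\<^esub> cof (?cs ! p)"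
      using p idx_nth[of p] wc[OF inS] R.dt_closed[OF okr_rmn[OF okvs]] inset
      by (auto simp: cof_def R.sg_mult simp del: length_Cons)
  qed
  also have "\<dots> = finsum R (\<lambda>s. w s \<otimes>\<^bsub>R\<^esub> cof s) ((!) ?cs ` {..<length ?cs})"
    by (rule R.add.finprod_reindex[symmetric])
       (use wc nthS cof_closed dcs' in \<open>auto simp: inj_on_def nth_eq_iff_index_eq simp del: length_Cons\<close>)
  also have "(!) ?cs ` {..<length ?cs} = set ?cs"
    using nth_image[of "length ?cs" ?cs] by (simp only: atLeast0LessThan take_all order_refl)
  also have "finsum R (\<lambda>s. w s \<otimes>\<^bsub>R\<^esub> cof s) (set ?cs) = LL w"
    unfolding LL_def
    by (rule R.add.finprod_mono_neutral_cong_left) (use S sub wc cof_closed in \<open>auto simp: cof_def\<close>)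
  finally show ?thesis .
qed

lemma L_minus: "cv u \<Longrightarrow> cv v \<Longrightarrow> LL (\<lambda>s. u s \<ominus>\<^bsub>R\<^esub> v s) = LL u \<ominus>\<^bsub>R\<^esub> LL v"
proof -
  assume u: "cv u" and v: "cv v"
  have uc: "(\<lambda>s. u s \<otimes>\<^bsub>R\<^esub> cof s) \<in> S \<rightarrow> carrier R" and vc: "(\<lambda>s. \<ominus>\<^bsub>R\<^esub> (v s \<otimes>\<^bsub>R\<^esub> cof s)) \<in> S \<rightarrow> carrier R"
    using u v cof_closed unfolding cv_def by auto
  have "LL (\<lambda>s. u s \<ominus>\<^bsub>R\<^esub> v s) = finsum R (\<lambda>s. u s \<otimes>\<^bsub>R\<^esub> cof s \<oplus>\<^bsub>R\<^esub> \<ominus>\<^bsub>R\<^esub> (v s \<otimes>\<^bsub>R\<^esub> cof s)) S"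
    unfolding LL_def
    by (rule R.finsum_cong'[OF refl]) (use u v cof_closed in \<open>auto simp: cv_def R.minus_eq R.l_distr R.l_minus\<close>)
  also have "\<dots> = LL u \<oplus>\<^bsub>R\<^esub> finsum R (\<lambda>s. \<ominus>\<^bsub>R\<^esub> (v s \<otimes>\<^bsub>R\<^esub> cof s)) S"
    unfolding LL_def by (rule R.finsum_addf[OF uc vc])
  also have "finsum R (\<lambda>s. \<ominus>\<^bsub>R\<^esub> (v s \<otimes>\<^bsub>R\<^esub> cof s)) S = \<ominus>\<^bsub>R\<^esub> LL v"
    unfolding LL_def by (rule R.finsum_neg[OF S(1)]) (use v cof_closed in \<open>auto simp: cv_def\<close>)
  finally show ?thesis by (simp add: R.minus_eq)
qed

lemma L_add: "cv u \<Longrightarrow> cv v \<Longrightarrow> LL (\<lambda>s. u s \<oplus>\<^bsub>R\<^esub> v s) = LL u \<oplus>\<^bsub>R\<^esub> LL v"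
proof -
  assume u: "cv u" and v: "cv v"
  have uc: "(\<lambda>s. u s \<otimes>\<^bsub>R\<^esub> cof s) \<in> S \<rightarrow> carrier R" and vc: "(\<lambda>s. v s \<otimes>\<^bsub>R\<^esub> cof s) \<in> S \<rightarrow> carrier R"
    using u v cof_closed unfolding cv_def by auto
  have "LL (\<lambda>s. u s \<oplus>\<^bsub>R\<^esub> v s) = finsum R (\<lambda>s. u s \<otimes>\<^bsub>R\<^esub> cof s \<oplus>\<^bsub>R\<^esub> v s \<otimes>\<^bsub>R\<^esub> cof s) S"
    unfolding LL_def
    by (rule R.finsum_cong'[OF refl]) (use u v cof_closed in \<open>auto simp: cv_def R.l_distr\<close>)
  also have "\<dots> = LL u \<oplus>\<^bsub>R\<^esub> LL v" unfolding LL_def by (rule R.finsum_addf[OF uc vc])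
  finally show ?thesis .
qed

lemma L_scale: "r \<in> carrier R \<Longrightarrow> cv u \<Longrightarrow> LL (\<lambda>s. r \<otimes>\<^bsub>R\<^esub> u s) = r \<otimes>\<^bsub>R\<^esub> LL u"
proof -
  assume r: "r \<in> carrier R" and u: "cv u"
  have uc: "(\<lambda>s. u s \<otimes>\<^bsub>R\<^esub> cof s) \<in> S \<rightarrow> carrier R" using u cof_closed unfolding cv_def by auto
  have "LL (\<lambda>s. r \<otimes>\<^bsub>R\<^esub> u s) = finsum R (\<lambda>s. r \<otimes>\<^bsub>R\<^esub> (u s \<otimes>\<^bsub>R\<^esub> cof s)) S"
    unfolding LL_def
    by (rule R.finsum_cong'[OF refl]) (use u r cof_closed in \<open>auto simp: cv_def R.m_assoc\<close>)
  also have "\<dots> = r \<otimes>\<^bsub>R\<^esub> LL u" unfolding LL_def by (rule R.finsum_rdistr[symmetric]) (use S r uc in auto)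
  finally show ?thesis .
qed

lemma cv_minus: "cv u \<Longrightarrow> cv v \<Longrightarrow> cv (\<lambda>s. u s \<ominus>\<^bsub>R\<^esub> v s)" by (simp add: cv_def)
lemma cv_add: "cv u \<Longrightarrow> cv v \<Longrightarrow> cv (\<lambda>s. u s \<oplus>\<^bsub>R\<^esub> v s)" by (simp add: cv_def)
lemma cv_scale: "r \<in> carrier R \<Longrightarrow> cv u \<Longrightarrow> cv (\<lambda>s. r \<otimes>\<^bsub>R\<^esub> u s)" by (simp add: cv_def)

lemma KEY:
  assumes u: "cv u" and v: "cv v" and uv: "val u = val v" and m: "m \<in> carrier M"
  shows "((LL u \<ominus>\<^bsub>R\<^esub> LL v) \<otimes>\<^bsub>R\<^esub> c) \<odot>\<^bsub>M\<^esub> m \<in> Tor"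
proof -
  have w: "(\<lambda>s. u s \<ominus>\<^bsub>R\<^esub> v s) \<in> Rel" by (rule rel_diff[OF u v uv])
  have "dt R ((\<lambda>s. u s \<ominus>\<^bsub>R\<^esub> v s) # vs) (j # cs) = LL u \<ominus>\<^bsub>R\<^esub> LL v"
    using expand[OF cv_minus[OF u v]] L_minus[OF u v] by simp
  then show ?thesis using Pk[OF w] m by (simp add: Null_def)
qed

lemma bt_closed: "z \<in> carrier M \<times> carrier T \<Longrightarrow> bt z \<in> carrier M"
  unfolding bt_def using L_closed crd c by auto

lemma bt_Tor: "m \<in> carrier M \<Longrightarrow> t \<in> carrier T \<Longrightarrow> delta (m, t) \<in> TK R M (restrict_scalars f T) \<Longrightarrow> bt (m, t) \<in> Tor"
proof (rule ev_K_delta[OF M rs_module[OF R T f] MAG[OF R T f M]])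
  show "\<And>z. z \<in> carrier M \<times> carrier (restrict_scalars f T) \<Longrightarrow> bt z \<in> carrier M"
    using bt_closed by (simp add: rs_carrier)
  show "Tor \<subseteq> carrier M" by (rule Tor_sub)
  show "\<zero>\<^bsub>M\<^esub> \<in> Tor" by (rule Tor_zero)
  show "\<And>x y. x \<in> Tor \<Longrightarrow> y \<in> Tor \<Longrightarrow> x \<oplus>\<^bsub>M\<^esub> y \<in> Tor" by (rule Tor_add)
  show "\<And>x y. x \<in> Tor \<Longrightarrow> y \<in> Tor \<Longrightarrow> x \<ominus>\<^bsub>M\<^esub> y \<in> Tor" by (rule Tor_minus)
next
  fix m m' t assume mm: "m \<in> carrier M" "m' \<in> carrier M" "t \<in> carrier (restrict_scalars f T)"
  then have t: "t \<in> carrier T" by (simp add: rs_carrier)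
  have X: "LL (crd t) \<otimes>\<^bsub>R\<^esub> c \<in> carrier R" using L_closed crd[OF t] c by auto
  show "bt (m \<oplus>\<^bsub>M\<^esub> m', t) \<ominus>\<^bsub>M\<^esub> bt (m, t) \<ominus>\<^bsub>M\<^esub> bt (m', t) \<in> Tor"
    using X mm Tor_zero by (simp add: bt_def M.smult_r_distr M.minus_eq M.ag_cancel2)
next
  fix m t t' assume mm: "m \<in> carrier M" "t \<in> carrier (restrict_scalars f T)" "t' \<in> carrier (restrict_scalars f T)"
  then have t: "t \<in> carrier T" "t' \<in> carrier T" by (auto simp: rs_carrier)
  let ?u = "crd (t \<oplus>\<^bsub>T\<^esub> t')" and ?v = "\<lambda>s. crd t s \<oplus>\<^bsub>R\<^esub> crd t' s"
  have cu: "cv ?u" and ct: "cv (crd t)" and ct': "cv (crd t')" using crd t by auto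
  have vv: "val ?u = val ?v" using crd[of "t \<oplus>\<^bsub>T\<^esub> t'"] crd[OF t(1)] crd[OF t(2)] t val_add[OF ct ct'] by auto
  have K: "((LL ?u \<ominus>\<^bsub>R\<^esub> LL ?v) \<otimes>\<^bsub>R\<^esub> c) \<odot>\<^bsub>M\<^esub> m \<in> Tor" by (rule KEY[OF cu cv_add[OF ct ct'] vv mm(1)])
  have "bt (m, t \<oplus>\<^bsub>restrict_scalars f T\<^esub> t') \<ominus>\<^bsub>M\<^esub> bt (m, t) \<ominus>\<^bsub>M\<^esub> bt (m, t') =
      ((LL ?u \<ominus>\<^bsub>R\<^esub> (LL (crd t) \<oplus>\<^bsub>R\<^esub> LL (crd t'))) \<otimes>\<^bsub>R\<^esub> c) \<odot>\<^bsub>M\<^esub> m"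
    unfolding bt_def using M.mid1[OF L_closed[OF cu] L_closed[OF ct] L_closed[OF ct'] c mm(1)] by simp
  also have "\<dots> = ((LL ?u \<ominus>\<^bsub>R\<^esub> LL ?v) \<otimes>\<^bsub>R\<^esub> c) \<odot>\<^bsub>M\<^esub> m" using L_add[OF ct ct'] by simp
  finally show "bt (m, t \<oplus>\<^bsub>restrict_scalars f T\<^esub> t') \<ominus>\<^bsub>M\<^esub> bt (m, t) \<ominus>\<^bsub>M\<^esub> bt (m, t') \<in> Tor" using K by simp
next
  fix r m t assume mm: "r \<in> carrier R" "m \<in> carrier M" "t \<in> carrier (restrict_scalars f T)"
  then have t: "t \<in> carrier T" by (simp add: rs_carrier)
  let ?u = "\<lambda>s. r \<otimes>\<^bsub>R\<^esub> crd t s" and ?v = "crd (f r \<otimes>\<^bsub>T\<^esub> t)"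
  have ct: "cv (crd t)" using crd t by auto
  have frt: "f r \<otimes>\<^bsub>T\<^esub> t \<in> carrier T" using mm t by simp
  have cv': "cv ?v" using crd[OF frt] by auto
  have vv: "val ?u = val ?v" using val_scale[OF mm(1) ct] crd[OF t] crd[OF frt] by auto
  have K: "((LL ?u \<ominus>\<^bsub>R\<^esub> LL ?v) \<otimes>\<^bsub>R\<^esub> c) \<odot>\<^bsub>M\<^esub> m \<in> Tor" by (rule KEY[OF cv_scale[OF mm(1) ct] cv' vv mm(2)])
  have Lu: "LL ?u = r \<otimes>\<^bsub>R\<^esub> LL (crd t)" by (rule L_scale[OF mm(1) ct])
  have e1: "bt (r \<odot>\<^bsub>M\<^esub> m, t) = (LL ?u \<otimes>\<^bsub>R\<^esub> c) \<odot>\<^bsub>M\<^esub> m"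
    unfolding bt_def using Lu mm L_closed[OF ct] c
    by (simp add: M.smult_assoc1[symmetric] R.m_assoc R.m_lcomm R.m_comm)
  have e2: "bt (m, r \<odot>\<^bsub>restrict_scalars f T\<^esub> t) = (LL ?v \<otimes>\<^bsub>R\<^esub> c) \<odot>\<^bsub>M\<^esub> m"
    unfolding bt_def by simp
  show "bt (r \<odot>\<^bsub>M\<^esub> m, t) \<ominus>\<^bsub>M\<^esub> bt (m, r \<odot>\<^bsub>restrict_scalars f T\<^esub> t) \<in> Tor"
    using K M.mid2[OF L_closed[OF cv_scale[OF mm(1) ct]] L_closed[OF cv'] c mm(2)] e1 e2 by simp
qed (auto simp: rs_carrier)

lemma null_minor: "Null (dt R vs cs \<otimes>\<^bsub>R\<^esub> c)"
  unfolding Null_def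
proof
  fix m assume m: "m \<in> carrier M"
  obtain k :: nat where k: "delta (m, f (a [^]\<^bsub>R\<^esub> k) \<otimes>\<^bsub>T\<^esub> j) \<in> TK R M (restrict_scalars f T)"
    using Htens[OF m] j S by blast
  have ak: "a [^]\<^bsub>R\<^esub> k \<in> carrier R" using a by simp
  have jT: "j \<in> carrier T" using j S by auto
  let ?t = "f (a [^]\<^bsub>R\<^esub> k) \<otimes>\<^bsub>T\<^esub> j"
  have tT: "?t \<in> carrier T" using ak jT by simp
  have B: "bt (m, ?t) \<in> Tor" by (rule bt_Tor[OF m tT k])
  let ?e = "\<lambda>s. if j = s then a [^]\<^bsub>R\<^esub> k else \<zero>\<^bsub>R\<^esub>"
  have ce: "cv ?e" using ak by (simp add: cv_def)
  have ve: "val ?e = ?t"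
  proof -
    have "val ?e = finsum T (\<lambda>s. if j = s then f (a [^]\<^bsub>R\<^esub> k) \<otimes>\<^bsub>T\<^esub> s else \<zero>\<^bsub>T\<^esub>) S"
      unfolding val_def by (rule T.finsum_cong'[OF refl]) (use S ak in auto)
    also have "\<dots> = ?t" by (rule T.finsum_singleton[OF j S(1)]) (use S ak in auto)
    finally show ?thesis .
  qed
  have Le: "LL ?e = a [^]\<^bsub>R\<^esub> k \<otimes>\<^bsub>R\<^esub> cof j"
  proof -
    have "LL ?e = finsum R (\<lambda>s. if j = s then a [^]\<^bsub>R\<^esub> k \<otimes>\<^bsub>R\<^esub> cof s else \<zero>\<^bsub>R\<^esub>) S"
      unfolding LL_def by (rule R.finsum_cong'[OF refl]) (use ak cof_closed in auto)
    also have "\<dots> = a [^]\<^bsub>R\<^esub> k \<otimes>\<^bsub>R\<^esub> cof j" by (rule R.finsum_singleton[OF j S(1)]) (use ak cof_closed in auto)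
    finally show ?thesis .
  qed
  have cc: "cv (crd ?t)" and vc: "val (crd ?t) = val ?e" using crd[OF tT] ve by auto
  have K: "((LL (crd ?t) \<ominus>\<^bsub>R\<^esub> LL ?e) \<otimes>\<^bsub>R\<^esub> c) \<odot>\<^bsub>M\<^esub> m \<in> Tor" by (rule KEY[OF cc ce vc m])
  have "(LL ?e \<otimes>\<^bsub>R\<^esub> c) \<odot>\<^bsub>M\<^esub> m = bt (m, ?t) \<ominus>\<^bsub>M\<^esub> ((LL (crd ?t) \<ominus>\<^bsub>R\<^esub> LL ?e) \<otimes>\<^bsub>R\<^esub> c) \<odot>\<^bsub>M\<^esub> m"
    unfolding bt_def using M.mid3[OF L_closed[OF cc] L_closed[OF ce] c m] by simp
  then have "(LL ?e \<otimes>\<^bsub>R\<^esub> c) \<odot>\<^bsub>M\<^esub> m \<in> Tor" using Tor_minus[OF B K] by simp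
  moreover have "(LL ?e \<otimes>\<^bsub>R\<^esub> c) \<odot>\<^bsub>M\<^esub> m = (a [^]\<^bsub>R\<^esub> k) \<odot>\<^bsub>M\<^esub> ((cof j \<otimes>\<^bsub>R\<^esub> c) \<odot>\<^bsub>M\<^esub> m)"
    using Le ak cof_closed c m by (simp add: R.m_assoc M.smult_assoc1)
  ultimately have "(cof j \<otimes>\<^bsub>R\<^esub> c) \<odot>\<^bsub>M\<^esub> m \<in> Tor" using Tor_sat cof_closed c m by auto
  then show "(dt R vs cs \<otimes>\<^bsub>R\<^esub> c) \<odot>\<^bsub>M\<^esub> m \<in> Tor" using cof_j by simp
qed

end

lemma fin_main:
  assumes Htens: "\<And>m t. m \<in> carrier M \<Longrightarrow> t \<in> carrier T \<Longrightarrow>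
        \<exists>k::nat. delta (m, f (a [^]\<^bsub>R\<^esub> k) \<otimes>\<^bsub>T\<^esub> t) \<in> TK R M (restrict_scalars f T)"
    and x: "x \<in> carrier M"
  shows "\<exists>k::nat. (a [^]\<^bsub>R\<^esub> k) \<odot>\<^bsub>M\<^esub> x = \<zero>\<^bsub>M\<^esub>"
proof (rule ccontr)
  assume nx: "\<not> (\<exists>k::nat. (a [^]\<^bsub>R\<^esub> k) \<odot>\<^bsub>M\<^esub> x = \<zero>\<^bsub>M\<^esub>)"
  then have xT: "x \<notin> Tor" by (simp add: Tor_def)
  obtain cs0 where cs0: "set cs0 = S" "distinct cs0" using finite_distinct_list[OF S(1)] by blast
  let ?n = "length cs0"
  have cardS: "card S = ?n" using cs0 distinct_card by fastforce
  define P where "P k \<longleftrightarrow> (\<exists>c\<in>carrier R. \<not> Null c \<and> (\<forall>vs cs. length vs = k \<and> set vs \<subseteq> Rel \<and> length cs = k \<and> distinct cs \<and> set cs \<subseteq> S \<longrightarrow> Null (dt R vs cs \<otimes>\<^bsub>R\<^esub> c)))" for k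
  have Pn: "P ?n"
    unfolding P_def
  proof (intro bexI[of _ "\<one>\<^bsub>R\<^esub>"] conjI allI impI)
    show "\<not> Null \<one>\<^bsub>R\<^esub>" using xT x by (auto simp: Null_def)
    fix vs cs assume H: "length vs = ?n \<and> set vs \<subseteq> Rel \<and> length cs = ?n \<and> distinct cs \<and> set cs \<subseteq> S"
    then have "card (set cs) = card S" using cardS distinct_card by metis
    then have "set cs = S" using H card_subset_eq[OF S(1)] by blast
    then have "dt R vs cs = \<zero>\<^bsub>R\<^esub>" using minors_zero H by auto
    then show "Null (dt R vs cs \<otimes>\<^bsub>R\<^esub> \<one>\<^bsub>R\<^esub>)" using Tor_zero by (simp add: Null_def)
  qed simp
  have P0: "\<not> P 0"
    unfolding P_def by (auto dest: spec[of _ "[]"])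
  let ?k = "LEAST k. P k"
  have Pk: "P ?k" using LeastI[of P, OF Pn] .
  have kn: "?k \<le> ?n" using Least_le[of P, OF Pn] .
  have k0: "?k \<noteq> 0"
  proof
    assume "?k = 0" then show False using Pk P0 by simp
  qed
  have nPr: "\<not> P (?k - 1)" using not_less_Least[of "?k - 1" P] k0 by auto
  from Pk obtain c where c: "c \<in> carrier R" "\<not> Null c"
    and cP: "\<And>vs cs. length vs = ?k \<Longrightarrow> set vs \<subseteq> Rel \<Longrightarrow> length cs = ?k \<Longrightarrow> distinct cs \<Longrightarrow> set cs \<subseteq> S \<Longrightarrow> Null (dt R vs cs \<otimes>\<^bsub>R\<^esub> c)"
    unfolding P_def by blast
  from nPr c obtain vs cs where vs: "length vs = ?k - 1" "set vs \<subseteq> Rel" "length cs = ?k - 1" "distinct cs" "set cs \<subseteq> S"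
    and nn: "\<not> Null (dt R vs cs \<otimes>\<^bsub>R\<^esub> c)"
    unfolding P_def by blast
  have cc: "card (set cs) = ?k - 1" using distinct_card[OF vs(4)] vs(3) by simp
  have lt: "?k - 1 < ?n" using kn k0 by arith
  have "\<not> S \<subseteq> set cs"
  proof
    assume "S \<subseteq> set cs"
    then have "card S \<le> card (set cs)" by (rule card_mono[OF finite_set])
    then show False using cc lt cardS by simp
  qed
  then obtain j where j: "j \<in> S" "j \<notin> set cs" by blast
  have "Null (dt R vs cs \<otimes>\<^bsub>R\<^esub> c)"
  proof (rule null_minor[OF c(1) vs(2) _ vs(4) vs(5) j(1) j(2) _ Htens])
    show "length vs = length cs" using vs by simp
    fix w assume w: "w \<in> Rel"
    show "Null (dt R (w # vs) (j # cs) \<otimes>\<^bsub>R\<^esub> c)"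
      by (rule cP) (use vs w j k0 in auto)
  qed
  then show False using nn by simp
qed

end

lemma finite_case:
  fixes R :: "'r ring" and T :: "'t ring" and f :: "'r \<Rightarrow> 't" and M :: "('r,'m) module"
  assumes R: "cring R" and T: "cring T" and f: "f \<in> ring_hom R T" and M: "module R M"
    and fin: "finite_ext R T f" and inj: "inj_on f (carrier R)"
    and a: "a \<in> carrier R"
    and H: "\<And>m t. m \<in> carrier M \<Longrightarrow> t \<in> carrier T \<Longrightarrow>
        \<exists>k::nat. delta (m, f (a [^]\<^bsub>R\<^esub> k) \<otimes>\<^bsub>T\<^esub> t) \<in> TK R M (restrict_scalars f T)"
    and x: "x \<in> carrier M"
  shows "\<exists>k::nat. (a [^]\<^bsub>R\<^esub> k) \<odot>\<^bsub>M\<^esub> x = \<zero>\<^bsub>M\<^esub>"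
proof -
  obtain S where S: "finite S" "S \<subseteq> carrier T"
    and gen: "\<And>t. t \<in> carrier T \<Longrightarrow> \<exists>c. c \<in> S \<rightarrow> carrier R \<and> t = finsum T (\<lambda>s. f (c s) \<otimes>\<^bsub>T\<^esub> s) S"
    using fin unfolding finite_ext_def by blast
  show ?thesis by (rule fin_main[OF R T f M a S gen inj H x])
qed


theorem proposition3p1:
  fixes R :: "'r ring" and T :: "'t ring" and f :: "'r \<Rightarrow> 't" and M :: "('r,'m) module"
  assumes "cring R" and "cring T" and "f \<in> ring_hom R T" and "module R M"
  shows "Ann_loc R M \<subseteq> {a \<in> carrier R. f a \<in> Ann_loc T (base_change R T f M)}
    \<and> (inj_on f (carrier R) \<and>
         (flat TYPE('t) R M \<or> pure_ext TYPE('m) R T f \<or> finite_ext R T f) \<longrightarrow>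
       Ann_loc R M = {a \<in> carrier R. f a \<in> Ann_loc T (base_change R T f M)})"
proof -
  note R = assms(1) and T = assms(2) and f = assms(3) and M = assms(4)
  interpret R: cring R by (rule R)
  interpret T: cring T by (rule T)
  interpret M: module R M by (rule M)
  interpret h: ring_hom_cring R T f by (intro ring_hom_cringI R T f)
  have sub: "Ann_loc R M \<subseteq> {a \<in> carrier R. f a \<in> Ann_loc T (base_change R T f M)}"
  proof
    fix a assume aA: "a \<in> Ann_loc R M"
    then have a: "a \<in> carrier R" by (simp add: Ann_loc_def)
    have "\<forall>x\<in>carrier M. \<exists>k::nat. (a [^]\<^bsub>R\<^esub> k) \<odot>\<^bsub>M\<^esub> x = \<zero>\<^bsub>M\<^esub>"
      using Ann_loc_iff[OF M a] aA by simp
    then have "\<forall>U\<in>carrier (base_change R T f M). \<exists>k::nat. (f a [^]\<^bsub>T\<^esub> k) \<odot>\<^bsub>base_change R T f M\<^esub> U = \<zero>\<^bsub>base_change R T f M\<^esub>"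
      by (rule part1[OF R T f M a])
    then have "f a \<in> Ann_loc T (base_change R T f M)"
      using Ann_loc_iff[OF N_module[OF R T f M]] a by simp
    then show "a \<in> {a \<in> carrier R. f a \<in> Ann_loc T (base_change R T f M)}" using a by simp
  qed
  moreover have "Ann_loc R M = {a \<in> carrier R. f a \<in> Ann_loc T (base_change R T f M)}"
    if inj: "inj_on f (carrier R)" and cases: "flat TYPE('t) R M \<or> pure_ext TYPE('m) R T f \<or> finite_ext R T f"
  proof
    show "Ann_loc R M \<subseteq> {a \<in> carrier R. f a \<in> Ann_loc T (base_change R T f M)}" by (rule sub)
    show "{a \<in> carrier R. f a \<in> Ann_loc T (base_change R T f M)} \<subseteq> Ann_loc R M"
    proof
      fix a assume "a \<in> {a \<in> carrier R. f a \<in> Ann_loc T (base_change R T f M)}"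
      then have a: "a \<in> carrier R" and fa: "f a \<in> Ann_loc T (base_change R T f M)" by auto
      have H: "\<And>m t. m \<in> carrier M \<Longrightarrow> t \<in> carrier T \<Longrightarrow>
        \<exists>k::nat. delta (m, f (a [^]\<^bsub>R\<^esub> k) \<otimes>\<^bsub>T\<^esub> t) \<in> TK R M (restrict_scalars f T)"
        by (rule red[OF R T f M a fa])
      have "\<forall>x\<in>carrier M. \<exists>k::nat. (a [^]\<^bsub>R\<^esub> k) \<odot>\<^bsub>M\<^esub> x = \<zero>\<^bsub>M\<^esub>"
      proof
        fix x assume x: "x \<in> carrier M"
        obtain k :: nat where k: "delta (x, f (a [^]\<^bsub>R\<^esub> k) \<otimes>\<^bsub>T\<^esub> \<one>\<^bsub>T\<^esub>) \<in> TK R M (restrict_scalars f T)"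
          using H[OF x T.one_closed] by blast
        have ak: "a [^]\<^bsub>R\<^esub> k \<in> carrier R" using a by simp
        have k': "delta (x, f (a [^]\<^bsub>R\<^esub> k)) \<in> TK R M (restrict_scalars f T)"
          using k ak by simp
        from cases show "\<exists>k::nat. (a [^]\<^bsub>R\<^esub> k) \<odot>\<^bsub>M\<^esub> x = \<zero>\<^bsub>M\<^esub>"
        proof (elim disjE)
          assume F: "flat TYPE('t) R M"
          show ?thesis using flat_case[OF R T f M F inj x ak k'] by blast
        next
          assume P: "pure_ext TYPE('m) R T f"
          show ?thesis using pure_case[OF R T f M P x ak k'] by blast
        next
          assume Fi: "finite_ext R T f"
          show ?thesis by (rule finite_case[OF R T f M Fi inj a H x])
        qed
      qed
      then show "a \<in> Ann_loc R M" using Ann_loc_iff[OF M a] by simp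
    qed
  qed
  ultimately show ?thesis by blast
qed


end
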